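(* In a finite dynamic game as described in the context, suppose $K^i$ is unilaterally sufficient information for player $i$. Let $g$ be the strategy part of a sequential equilibrium $(g,Q)$. Then there exists a $K^i$-based strategy $\rho^i$ such that $(\rho^i,g^{-i})$ is the strategy part of a sequential equilibrium and $J^j(\rho^i,g^{-i})=J^j(g)$ for all $j\in\mathcal{I}$.
   Context: Game model: finite set of players $\mathcal{I}$, times $\mathcal{T}=\{1,\dots,T\}$. At time $t$ each player $i$ takes action $U_t^i\in\mathcal{U}_t^i$, obtains reward $R_t^i\in[-1,1]$ and learns new information $Z_t^i\in\mathcal{Z}_t^i$. There is a state $X_t\in\mathcal{X}_t$ with $(X_{t+1},Z_t,R_t)=f_t(X_t,U_t,W_t)$ for fixed functions $f_t$. Primitive random variables $(X_1,H_1)$ and $W_1,\dots,W_T$ are mutually independent with commonly known distributions. All sets are finite. Perfect recall: $H_t^i=(H_1^i,Z_{1:t-1}^i)\in\mathcal{H}_t^i$, and $U_t^i$ is a component of $Z_t^i$. Behavioral strategy $g_t^i:\mathcal{H}_t^i\to\Delta(\mathcal{U}_t^i)$; payoff $J^j(g)=\mathbb{E}^g[\sum_t R_t^j]$. A realization is admissible under $g$ if it has positive probability under $g$. Sequential equilibrium (SE): for a profile $g$ and functions $Q_t^i:\mathcal{H}_t^i\times\mathcal{U}_t^i\to\mathbb{R}$: $g$ is sequentially rational under $Q$ if $\mathrm{supp}(g_t^i(h_t^i))\subseteq\arg\max_u Q_t^i(h_t^i,u)$ for all $i,t,h_t^i$; $Q$ is fully consistent with $g$ if there is a sequence $(g^{(n)},Q^{(n)})\to(g,Q)$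 with each $g^{(n)}$ fully mixed and $Q_\tau^{(n),i}(h_\tau^i,u_\tau^i)=\mathbb{E}^{g^{(n)}}[\sum_{t=\tau}^T R_t^i\mid h_\tau^i,u_\tau^i]$ for all $i,\tau,h_\tau^i,u_\tau^i$; $(g,Q)$ is an SE if both hold; $g$ is then called the strategy part of the SE. Compression: $K_1^i=\iota_1^i(H_1^i)$, $K_t^i=\iota_t^i(K_{t-1}^i,Z_{t-1}^i)$ for fixed maps, finite value sets $\mathcal{K}_t^i$; $k_t^i$ is the compression of $h_t^i$; a $K^i$-based strategy has $\rho_t^i:\mathcal{K}_t^i\to\Delta(\mathcal{U}_t^i)$. Unilaterally sufficient information (USI): $K^i$ is USI for player $i$ if there exist $F_t^{i,g^i}:\mathcal{K}_t^i\to\Delta(\mathcal{H}_t^i)$ depending only on $g^i$ and $\Phi_t^{i,g^{-i}}:\mathcal{K}_t^i\to\Delta(\mathcal{X}_t\times\mathcal{H}_t^{-i})$ depending only on $g^{-i}$ with $\Pr^g(x_t,h_t\mid k_t^i)=F_t^{i,g^i}(h_t^i\mid k_t^i)\Phi_t^{i,g^{-i}}(x_t,h_t^{-i}\mid k_t^i)$ for all behavioral profiles $g$, all $t$, all $k_t^i$ admissible under $g$ (with $x_t,h_t^i,h_t^{-i}$ ranging independently; the left side is $0$ if they disagree on shared components). *)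

theory Defs
  imports "HOL-Probability.Probability"
begin

text \<open>All sets of the paper are modelled by finite types
 (players 'i, states 'x, actions 'u, observations 'z, noise 'w, initial
 private information 'h, compressed information 'k).  Only the action sets
 U_t^i are kept as explicit sets, since they constrain strategies.
 Times are 1..T.  A history of player i at time t is (H_1^i, [Z_1^i,...,Z_{t-1}^i]).\<close>

type_synonym ('h,'z) hist = "'h \<times> 'z list"

record ('i,'x,'u,'z,'w,'h) game =
  gm_T    :: nat
  gm_init :: "('x \<times> ('i \<Rightarrow> 'h)) pmf"
  gm_W    :: "nat \<Rightarrow> 'w pmf"
  gm_f    :: "nat \<Rightarrow> 'x \<Rightarrow> ('i \<Rightarrow> 'u) \<Rightarrow> 'w \<Rightarrow> 'x \<times> ('i \<Rightarrow> 'z) \<times> ('i \<Rightarrow> real)"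
                                                                  \<comment> \<open>(X_{t+1},Z_t,R_t) = f_t(X_t,U_t,W_t)\<close>
  gm_U    :: "nat \<Rightarrow> 'i \<Rightarrow> 'u set"
  gm_act  :: "nat \<Rightarrow> 'i \<Rightarrow> 'z \<Rightarrow> 'u"                               \<comment> \<open>U_t^i is a component of Z_t^i\<close>

definition wf_game :: "('i,'x,'u,'z,'w,'h,'m) game_scheme \<Rightarrow> bool" where
  "wf_game G \<longleftrightarrow>
     (\<forall>t\<in>{1..gm_T G}. \<forall>i. gm_U G t i \<noteq> {}) \<and>
     (\<forall>t\<in>{1..gm_T G}. \<forall>x u w. (\<forall>j. u j \<in> gm_U G t j) \<longrightarrow>
        (case gm_f G t x u w of (x', z, r) \<Rightarrow>
           (\<forall>j. gm_act G t j (z j) = u j \<and> -1 \<le> r j \<and> r j \<le> 1)))"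

type_synonym ('i,'h,'z,'u) profile = "'i \<Rightarrow> nat \<Rightarrow> ('h,'z) hist \<Rightarrow> 'u pmf"

text \<open>trace entry at time t: (X_t, (H_t^j)_j, (U_t^j)_j, (R_t^j)_j)\<close>
type_synonym ('i,'x,'u,'z,'h) entry = "'x \<times> ('i \<Rightarrow> ('h,'z) hist) \<times> ('i \<Rightarrow> 'u) \<times> ('i \<Rightarrow> real)"

primrec gen :: "('i::finite,'x,'u,'z,'w,'h,'m) game_scheme \<Rightarrow> ('i,'h,'z,'u) profile \<Rightarrow> nat \<Rightarrow> nat
                 \<Rightarrow> 'x \<Rightarrow> ('i \<Rightarrow> ('h,'z) hist) \<Rightarrow> ('i,'x,'u,'z,'h) entry list pmf" where
  "gen G g 0 t x hs = return_pmf []"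
| "gen G g (Suc n) t x hs =
     bind_pmf (Pi_pmf UNIV undefined (\<lambda>j. g j t (hs j))) (\<lambda>u.
     bind_pmf (gm_W G t) (\<lambda>w.
       (case gm_f G t x u w of (x', z, r) \<Rightarrow>
          map_pmf (\<lambda>rest. (x, hs, u, r) # rest)
            (gen G g n (Suc t) x' (\<lambda>j. (fst (hs j), snd (hs j) @ [z j]))))))"

definition run :: "('i::finite,'x,'u,'z,'w,'h,'m) game_scheme \<Rightarrow> ('i,'h,'z,'u) profile
                   \<Rightarrow> ('i,'x,'u,'z,'h) entry list pmf" where
  "run G g = bind_pmf (gm_init G) (\<lambda>(x, h1). gen G g (gm_T G) 1 x (\<lambda>j. (h1 j, [])))"

definition rvX :: "('i,'x,'u,'z,'h) entry list \<Rightarrow> nat \<Rightarrow> 'x" where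
  "rvX tr t = fst (tr ! (t - 1))"
definition rvH :: "('i,'x,'u,'z,'h) entry list \<Rightarrow> nat \<Rightarrow> 'i \<Rightarrow> ('h,'z) hist" where
  "rvH tr t = fst (snd (tr ! (t - 1)))"
definition rvU :: "('i,'x,'u,'z,'h) entry list \<Rightarrow> nat \<Rightarrow> 'i \<Rightarrow> 'u" where
  "rvU tr t = fst (snd (snd (tr ! (t - 1))))"
definition rvR :: "('i,'x,'u,'z,'h) entry list \<Rightarrow> nat \<Rightarrow> 'i \<Rightarrow> real" where
  "rvR tr t = snd (snd (snd (tr ! (t - 1))))"

definition Pr :: "('i::finite,'x,'u,'z,'w,'h,'m) game_scheme \<Rightarrow> ('i,'h,'z,'u) profile
                  \<Rightarrow> ('i,'x,'u,'z,'h) entry list set \<Rightarrow> real" where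
  "Pr G g A = measure_pmf.prob (run G g) A"

definition cond_Pr where
  "cond_Pr G g A B = Pr G g (A \<inter> B) / Pr G g B"

definition cond_E where
  "cond_E G g Y B = measure_pmf.expectation (run G g) (\<lambda>tr. indicator B tr * Y tr) / Pr G g B"

definition J where
  "J G g j = measure_pmf.expectation (run G g) (\<lambda>tr. \<Sum>t\<in>{1..gm_T G}. rvR tr t j)"

definition wf_hist :: "nat \<Rightarrow> ('h,'z) hist \<Rightarrow> bool" where
  "wf_hist t h \<longleftrightarrow> length (snd h) = t - 1"

definition valid_profile where
  "valid_profile G g \<longleftrightarrow>
     (\<forall>j. \<forall>t\<in>{1..gm_T G}. \<forall>h. wf_hist t h \<longrightarrow> set_pmf (g j t h) \<subseteq> gm_U G t j)"

definition fully_mixed where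
  "fully_mixed G g \<longleftrightarrow>
     (\<forall>j. \<forall>t\<in>{1..gm_T G}. \<forall>h. wf_hist t h \<longrightarrow> set_pmf (g j t h) = gm_U G t j)"

definition Q_of where
  "Q_of G g Q \<longleftrightarrow>
     (\<forall>j. \<forall>\<tau>\<in>{1..gm_T G}. \<forall>h u.
        Pr G g {tr. rvH tr \<tau> j = h \<and> rvU tr \<tau> j = u} > 0 \<longrightarrow>
        Q j \<tau> h u = cond_E G g (\<lambda>tr. \<Sum>t\<in>{\<tau>..gm_T G}. rvR tr t j)
                               {tr. rvH tr \<tau> j = h \<and> rvU tr \<tau> j = u})"

definition seq_rational where
  "seq_rational G g (Q :: 'i::finite \<Rightarrow> nat \<Rightarrow> ('h,'z) hist \<Rightarrow> 'u \<Rightarrow> real) \<longleftrightarrow>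
     (\<forall>j. \<forall>t\<in>{1..gm_T G}. \<forall>h. wf_hist t h \<longrightarrow>
        set_pmf (g j t h) \<subseteq> {u \<in> gm_U G t j. \<forall>u'\<in>gm_U G t j. Q j t h u' \<le> Q j t h u})"

definition fully_consistent where
  "fully_consistent G g (Q :: 'i::finite \<Rightarrow> nat \<Rightarrow> ('h,'z) hist \<Rightarrow> 'u \<Rightarrow> real) \<longleftrightarrow>
     (\<exists>gs Qs. (\<forall>n. fully_mixed G (gs n) \<and> Q_of G (gs n) (Qs n)) \<and>
        (\<forall>j. \<forall>t\<in>{1..gm_T G}. \<forall>h u. wf_hist t h \<longrightarrow>
           (\<lambda>n. pmf (gs n j t h) u) \<longlonglongrightarrow> pmf (g j t h) u \<and>
           (u \<in> gm_U G t j \<longrightarrow> (\<lambda>n. Qs n j t h u) \<longlonglongrightarrow> Q j t h u)))"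

definition is_SE where
  "is_SE G g Q \<longleftrightarrow> seq_rational G g Q \<and> fully_consistent G g Q"

text \<open>Compression: K_1 = iota1(H_1), K_t = iota_t(K_{t-1}, Z_{t-1}).\<close>
definition compress :: "('i \<Rightarrow> 'h \<Rightarrow> 'k) \<Rightarrow> (nat \<Rightarrow> 'i \<Rightarrow> 'k \<Rightarrow> 'z \<Rightarrow> 'k) \<Rightarrow> 'i
                        \<Rightarrow> ('h,'z) hist \<Rightarrow> 'k" where
  "compress \<iota>1 \<iota> j h =
     foldl (\<lambda>k (s, z). \<iota> s j k z) (\<iota>1 j (fst h)) (zip [2..<length (snd h) + 2] (snd h))"

definition Kbased where
  "Kbased \<iota>1 \<iota> j (\<rho> :: nat \<Rightarrow> 'k \<Rightarrow> 'u pmf) = (\<lambda>t h. \<rho> t (compress \<iota>1 \<iota> j h))"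

definition others :: "'i \<Rightarrow> ('i \<Rightarrow> 'a) \<Rightarrow> ('i \<Rightarrow> 'a)" where
  "others i f = f(i := undefined)"

text \<open>Unilaterally sufficient information.  F depends only on g^i (it is applied to g i),
 Phi only on g^{-i} (it is applied to others i g).\<close>
definition USI where
  "USI G (\<iota>1 :: 'i::finite \<Rightarrow> 'h \<Rightarrow> 'k) \<iota> i \<longleftrightarrow>
     (\<exists>(F :: (nat \<Rightarrow> ('h,'z) hist \<Rightarrow> 'u pmf) \<Rightarrow> nat \<Rightarrow> 'k \<Rightarrow> ('h,'z) hist pmf)
       (\<Phi> :: ('i,'h,'z,'u) profile \<Rightarrow> nat \<Rightarrow> 'k \<Rightarrow> ('x \<times> ('i \<Rightarrow> ('h,'z) hist)) pmf).
       \<forall>g. valid_profile G g \<longrightarrow>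
       (\<forall>t\<in>{1..gm_T G}. \<forall>k.
          Pr G g {tr. compress \<iota>1 \<iota> i (rvH tr t i) = k} > 0 \<longrightarrow>
          (\<forall>x hs. cond_Pr G g {tr. rvX tr t = x \<and> rvH tr t = hs}
                               {tr. compress \<iota>1 \<iota> i (rvH tr t i) = k}
                 = pmf (F (g i) t k) (hs i) * pmf (\<Phi> (others i g) t k) (x, others i hs))))"

end

theory Submission
  imports Defs
begin

definition stepS :: "('i::finite,'x,'u,'z,'w,'h,'m) game_scheme \<Rightarrow> ('i,'h,'z,'u) profile \<Rightarrow> nat
   \<Rightarrow> ('x \<times> ('i \<Rightarrow> ('h,'z) hist)) \<Rightarrow> ('x \<times> ('i \<Rightarrow> ('h,'z) hist)) pmf" where
  "stepS G g t s = bind_pmf (Pi_pmf UNIV undefined (\<lambda>j. g j t (snd s j))) (\<lambda>u.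
     bind_pmf (gm_W G t) (\<lambda>w. case gm_f G t (fst s) u w of (x', z, r) \<Rightarrow>
        return_pmf (x', \<lambda>j. (fst (snd s j), snd (snd s j) @ [z j]))))"

definition ent :: "('i::finite,'x,'u,'z,'w,'h,'m) game_scheme \<Rightarrow> ('i,'h,'z,'u) profile \<Rightarrow> nat
   \<Rightarrow> ('x \<times> ('i \<Rightarrow> ('h,'z) hist)) \<Rightarrow> ('i,'x,'u,'z,'h) entry pmf" where
  "ent G g t s = bind_pmf (Pi_pmf UNIV undefined (\<lambda>j. g j t (snd s j))) (\<lambda>u.
     bind_pmf (gm_W G t) (\<lambda>w. case gm_f G t (fst s) u w of (x', z, r) \<Rightarrow>
        return_pmf (fst s, snd s, u, r)))"

definition en2 where
  "en2 G g t s = bind_pmf (Pi_pmf UNIV undefined (\<lambda>j. g j t (snd s j))) (\<lambda>u.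
     bind_pmf (gm_W G t) (\<lambda>w. case gm_f G t (fst s) u w of (x', z, r) \<Rightarrow>
        return_pmf ((fst s, snd s, u, r), (x', \<lambda>j. (fst (snd s j), snd (snd s j) @ [z j])))))"

lemma map_fst_en2: "map_pmf fst (en2 G g t s) = ent G g t s"
  unfolding en2_def ent_def map_bind_pmf
  by (intro bind_pmf_cong refl) (auto split: prod.splits)

lemma map_snd_en2: "map_pmf snd (en2 G g t s) = stepS G g t s"
  unfolding en2_def stepS_def map_bind_pmf
  by (intro bind_pmf_cong refl) (auto split: prod.splits)

lemma gen_Suc': "gen G g (Suc n) t x hs =
   bind_pmf (en2 G g t (x,hs)) (\<lambda>p. map_pmf ((#) (fst p)) (gen G g n (Suc t) (fst (snd p)) (snd (snd p))))"
  unfolding en2_def gen.simps bind_assoc_pmf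
  by (intro bind_pmf_cong refl) (auto split: prod.splits simp: bind_return_pmf)

primrec iterS where
  "iterS G g 0 t s = return_pmf s"
| "iterS G g (Suc m) t s = bind_pmf (stepS G g t s) (\<lambda>s'. iterS G g m (Suc t) s')"

lemma iterS_Suc': "iterS G g (Suc m) t s = bind_pmf (iterS G g m t s) (stepS G g (t+m))"
proof (induction m arbitrary: t s)
  case 0 then show ?case by (simp add: bind_return_pmf bind_return_pmf')
next
  case (Suc m)
  have "iterS G g (Suc (Suc m)) t s = bind_pmf (stepS G g t s) (\<lambda>s'. iterS G g (Suc m) (Suc t) s')"
    by simp
  also have "\<dots> = bind_pmf (stepS G g t s) (\<lambda>s'. bind_pmf (iterS G g m (Suc t) s') (stepS G g (Suc t + m)))"
    using Suc by simp
  also have "\<dots> = bind_pmf (iterS G g (Suc m) t s) (stepS G g (t + Suc m))"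
    by (simp add: bind_assoc_pmf)
  finally show ?case .
qed

lemma iterS_fun: "iterS G g (Suc m) t = (\<lambda>s. bind_pmf (iterS G g m t s) (stepS G g (t+m)))"
  by (rule ext, rule iterS_Suc')

lemma iterS_0_fun: "iterS G g 0 t = return_pmf"
  by (rule ext) simp

lemma nth_gen:
  "m < n \<Longrightarrow> map_pmf (\<lambda>tr. tr ! m) (gen G g n t (fst s) (snd s)) = bind_pmf (iterS G g m t s) (ent G g (t+m))"
proof (induction m arbitrary: n t s)
  case 0
  then obtain n' where n: "n = Suc n'" by (cases n) auto
  have "map_pmf (\<lambda>tr. tr ! 0) (gen G g n t (fst s) (snd s)) = map_pmf fst (en2 G g t s)"
    unfolding n gen_Suc' map_bind_pmf
    by (simp add: pmf.map_comp o_def map_pmf_const map_pmf_def[of fst])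
  then show ?case by (simp add: map_fst_en2 bind_return_pmf)
next
  case (Suc m)
  then obtain n' where n: "n = Suc n'" and mn: "m < n'" by (cases n) auto
  have "map_pmf (\<lambda>tr. tr ! Suc m) (gen G g n t (fst s) (snd s)) =
     bind_pmf (en2 G g t s) (\<lambda>p. map_pmf (\<lambda>tr. tr ! m) (gen G g n' (Suc t) (fst (snd p)) (snd (snd p))))"
    unfolding n gen_Suc' map_bind_pmf by (simp add: pmf.map_comp o_def)
  also have "\<dots> = bind_pmf (en2 G g t s) (\<lambda>p. bind_pmf (iterS G g m (Suc t) (snd p)) (ent G g (Suc t + m)))"
    using Suc.IH[OF mn] by simp
  also have "\<dots> = bind_pmf (map_pmf snd (en2 G g t s)) (\<lambda>s'. bind_pmf (iterS G g m (Suc t) s') (ent G g (Suc t + m)))"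
    by (simp add: bind_map_pmf)
  also have "\<dots> = bind_pmf (iterS G g (Suc m) t s) (ent G g (t + Suc m))"
    by (simp add: map_snd_en2 bind_assoc_pmf)
  finally show ?case .
qed

definition Sinit where
  "Sinit G = map_pmf (\<lambda>(x,h1). (x, \<lambda>j. (h1 j, []))) (gm_init G)"

definition S where
  "S G g t = bind_pmf (Sinit G) (iterS G g (t - 1) 1)"

lemma S_Suc: "t \<ge> 1 \<Longrightarrow> S G g (Suc t) = bind_pmf (S G g t) (stepS G g t)"
  unfolding S_def
  by (cases t) (auto simp: iterS_fun bind_assoc_pmf simp del: iterS.simps)

lemma S_1: "S G g 1 = Sinit G"
  unfolding S_def by (simp add: iterS_0_fun bind_return_pmf')

lemma run_alt: "run G g = bind_pmf (Sinit G) (\<lambda>s. gen G g (gm_T G) 1 (fst s) (snd s))"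
  unfolding run_def Sinit_def by (simp add: bind_map_pmf case_prod_unfold)

lemma snapshot:
  assumes "1 \<le> t" "t \<le> gm_T G"
  shows "map_pmf (\<lambda>tr. tr ! (t - 1)) (run G g) = bind_pmf (S G g t) (ent G g t)"
proof -
  have "map_pmf (\<lambda>tr. tr ! (t - 1)) (run G g) =
     bind_pmf (Sinit G) (\<lambda>s. bind_pmf (iterS G g (t-1) 1 s) (ent G g (1 + (t - 1))))"
    unfolding run_alt map_bind_pmf using assms by (subst nth_gen) auto
  then show ?thesis using assms unfolding S_def by (simp add: bind_assoc_pmf)
qed

lemma ent_fst: "map_pmf (\<lambda>e. (fst e, fst (snd e))) (ent G g t s) = return_pmf s"
  unfolding ent_def map_bind_pmf
  by (simp add: case_prod_unfold bind_return_pmf)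

lemma snapshot_state:
  assumes "1 \<le> t" "t \<le> gm_T G"
  shows "map_pmf (\<lambda>tr. (rvX tr t, rvH tr t)) (run G g) = S G g t"
proof -
  have "map_pmf (\<lambda>tr. (rvX tr t, rvH tr t)) (run G g) =
     map_pmf (\<lambda>e. (fst e, fst (snd e))) (map_pmf (\<lambda>tr. tr ! (t - 1)) (run G g))"
    by (simp add: pmf.map_comp o_def rvX_def rvH_def)
  also have "\<dots> = S G g t" using assms
    by (simp only: snapshot[OF assms] map_bind_pmf ent_fst bind_return_pmf')
  finally show ?thesis .
qed

lemma set_Pi_UNIV: "set_pmf (Pi_pmf (UNIV::'a::finite set) d p) = {f. \<forall>x. f x \<in> set_pmf (p x)}"
  by (simp add: set_Pi_pmf PiE_dflt_def)

definition consec where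
  "consec G t e e' \<longleftrightarrow> (\<exists>z. (\<forall>j. gm_act G t j (z j) = fst (snd (snd e)) j) \<and>
      fst (snd e') = (\<lambda>j. (fst (fst (snd e) j), snd (fst (snd e) j) @ [z j])))"

lemma gen_support:
  assumes wf: "wf_game G" and vp: "valid_profile G g"
  shows "tr \<in> set_pmf (gen G g n t x hs) \<Longrightarrow> 1 \<le> t \<Longrightarrow> t + n \<le> gm_T G + 1 \<Longrightarrow> (\<forall>j. wf_hist t (hs j)) \<Longrightarrow>
    length tr = n \<and> (n > 0 \<longrightarrow> fst (tr!0) = x \<and> fst (snd (tr!0)) = hs) \<and>
    (\<forall>m<n. \<forall>j. wf_hist (t+m) (fst (snd (tr!m)) j)) \<and>
    (\<forall>m. Suc m < n \<longrightarrow> consec G (t+m) (tr!m) (tr!Suc m))"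
proof (induction n arbitrary: tr t x hs)
  case 0 then show ?case by simp
next
  case (Suc n)
  from Suc.prems(1) obtain u w where
    u: "u \<in> set_pmf (Pi_pmf UNIV undefined (\<lambda>j. g j t (hs j)))" and
    w: "w \<in> set_pmf (gm_W G t)" and
    trin: "tr \<in> set_pmf (case gm_f G t x u w of (x', z, r) \<Rightarrow> map_pmf (\<lambda>rest. (x, hs, u, r) # rest)
            (gen G g n (Suc t) x' (\<lambda>j. (fst (hs j), snd (hs j) @ [z j]))))"
    by (simp only: gen.simps set_bind_pmf) blast
  obtain x' z r where f: "gm_f G t x u w = (x', z, r)" by (cases "gm_f G t x u w") auto
  from trin f obtain rest where
    rest: "rest \<in> set_pmf (gen G g n (Suc t) x' (\<lambda>j. (fst (hs j), snd (hs j) @ [z j])))" and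
    tr: "tr = (x, hs, u, r) # rest" by auto
  have tT: "t \<in> {1..gm_T G}" using Suc.prems by auto
  have uU: "\<forall>j. u j \<in> gm_U G t j"
    using u vp tT Suc.prems(4) unfolding valid_profile_def set_Pi_UNIV by blast
  have act: "\<forall>j. gm_act G t j (z j) = u j"
    using wf uU tT f unfolding wf_game_def by (metis (mono_tags, lifting) case_prod_conv)
  have wf': "\<forall>j. wf_hist (Suc t) (fst (hs j), snd (hs j) @ [z j])"
    using Suc.prems(4) Suc.prems(2) by (auto simp: wf_hist_def)
  have IH: "length rest = n \<and> (n > 0 \<longrightarrow> fst (rest!0) = x' \<and> fst (snd (rest!0)) = (\<lambda>j. (fst (hs j), snd (hs j) @ [z j]))) \<and>
    (\<forall>m<n. \<forall>j. wf_hist (Suc t+m) (fst (snd (rest!m)) j)) \<and>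
    (\<forall>m. Suc m < n \<longrightarrow> consec G (Suc t+m) (rest!m) (rest!Suc m))"
    using Suc.IH[OF rest] Suc.prems wf' by auto
  show ?case
  proof (intro conjI allI impI)
    show "length tr = Suc n" using IH tr by simp
    show "fst (tr ! 0) = x" "fst (snd (tr ! 0)) = hs" using tr by auto
  next
    fix m j assume "m < Suc n"
    then show "wf_hist (t + m) (fst (snd (tr ! m)) j)"
      using IH Suc.prems(4) tr by (cases m) auto
  next
    fix m assume m: "Suc m < Suc n"
    show "consec G (t + m) (tr ! m) (tr ! Suc m)"
    proof (cases m)
      case 0
      then show ?thesis using IH m tr act unfolding consec_def by (intro exI[of _ z]) auto
    next
      case (Suc m')
      then show ?thesis using IH m tr by auto
    qed
  qed
qed

lemma run_support:
  assumes wf: "wf_game G" and vp: "valid_profile G g" and tr: "tr \<in> set_pmf (run G g)"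
  shows "length tr = gm_T G \<and> (\<forall>t\<in>{1..gm_T G}. \<forall>j. wf_hist t (rvH tr t j)) \<and>
    (\<forall>t. 1 \<le> t \<longrightarrow> t < gm_T G \<longrightarrow> consec G t (tr!(t-1)) (tr!t))"
proof -
  from tr obtain x h1 where tr': "tr \<in> set_pmf (gen G g (gm_T G) 1 x (\<lambda>j. (h1 j, [])))"
    unfolding run_def by auto
  have "length tr = gm_T G \<and> (gm_T G > 0 \<longrightarrow> fst (tr!0) = x \<and> fst (snd (tr!0)) = (\<lambda>j. (h1 j, []))) \<and>
    (\<forall>m<gm_T G. \<forall>j. wf_hist (1+m) (fst (snd (tr!m)) j)) \<and>
    (\<forall>m. Suc m < gm_T G \<longrightarrow> consec G (1+m) (tr!m) (tr!Suc m))"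
    by (rule gen_support[OF wf vp tr']) (auto simp: wf_hist_def)
  then have A: "length tr = gm_T G" and B: "\<forall>m<gm_T G. \<forall>j. wf_hist (1+m) (fst (snd (tr!m)) j)"
    and C: "\<forall>m. Suc m < gm_T G \<longrightarrow> consec G (1+m) (tr!m) (tr!Suc m)" by auto
  show ?thesis
  proof (intro conjI ballI allI impI)
    fix t j assume t: "t \<in> {1..gm_T G}"
    then have "t - 1 < gm_T G" "1 + (t - 1) = t" by auto
    then show "wf_hist t (rvH tr t j)" using B unfolding rvH_def by metis
  next
    fix t assume t: "1 \<le> t" "t < gm_T G"
    then have "Suc (t - 1) < gm_T G" "1 + (t - 1) = t" "Suc (t - 1) = t" by auto
    then show "consec G t (tr ! (t - 1)) (tr ! t)" using C by metis
  qed (rule A)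
qed

lemma finite_set_pmf_finite_type: "finite (set_pmf (M :: 'a::finite pmf))"
  by (rule finite_subset[OF subset_UNIV]) simp

lemma finite_gen:
  fixes G :: "('i::finite,'x::finite,'u::finite,'z::finite,'w::finite,'h::finite,'m) game_scheme"
  shows "finite (set_pmf (gen G g n t x hs))"
proof (induction n arbitrary: t x hs)
  case 0 then show ?case by simp
next
  case (Suc n)
  have "finite (set_pmf (case gm_f G t x u w of (x', z, r) \<Rightarrow> map_pmf (\<lambda>rest. (x, hs, u, r) # rest)
            (gen G g n (Suc t) x' (\<lambda>j. (fst (hs j), snd (hs j) @ [z j])))))" for u w
    by (simp split: prod.split add: Suc)
  then show ?case
    by (simp only: gen.simps set_bind_pmf) (intro finite_UN_I finite_set_pmf_finite_type)
qed

lemma finite_run: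
  fixes G :: "('i::finite,'x::finite,'u::finite,'z::finite,'w::finite,'h::finite,'m) game_scheme"
  shows "finite (set_pmf (run G g))"
  unfolding run_def set_bind_pmf
  by (intro finite_UN_I finite_set_pmf_finite_type) (auto intro: finite_gen)

lemma finite_stepS:
  fixes G :: "('i::finite,'x::finite,'u::finite,'z::finite,'w::finite,'h::finite,'m) game_scheme"
  shows "finite (set_pmf (stepS G g t s))"
  unfolding stepS_def set_bind_pmf
  by (intro finite_UN_I finite_set_pmf_finite_type) (auto split: prod.splits)

lemma finite_ent:
  fixes G :: "('i::finite,'x::finite,'u::finite,'z::finite,'w::finite,'h::finite,'m) game_scheme"
  shows "finite (set_pmf (ent G g t s))"
  unfolding ent_def set_bind_pmf
  by (intro finite_UN_I finite_set_pmf_finite_type) (auto split: prod.splits)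

lemma finite_iterS:
  fixes G :: "('i::finite,'x::finite,'u::finite,'z::finite,'w::finite,'h::finite,'m) game_scheme"
  shows "finite (set_pmf (iterS G g m t s))"
proof (induction m arbitrary: t s)
  case 0 then show ?case by simp
next
  case (Suc m) then show ?case
    by (simp only: iterS.simps set_bind_pmf) (intro finite_UN_I finite_stepS, auto)
qed

lemma finite_Sinit:
  fixes G :: "('i::finite,'x::finite,'u::finite,'z::finite,'w::finite,'h::finite,'m) game_scheme"
  shows "finite (set_pmf (Sinit G))"
  unfolding Sinit_def by (simp add: finite_set_pmf_finite_type)

lemma finite_S:
  fixes G :: "('i::finite,'x::finite,'u::finite,'z::finite,'w::finite,'h::finite,'m) game_scheme"
  shows "finite (set_pmf (S G g t))"
  unfolding S_def set_bind_pmf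
  by (intro finite_UN_I finite_Sinit finite_iterS)

lemma integral_bind_pmf_fin:
  fixes f :: "'b \<Rightarrow> real"
  assumes M: "finite (set_pmf M)" and N: "\<And>x. x \<in> set_pmf M \<Longrightarrow> finite (set_pmf (N x))"
  shows "measure_pmf.expectation (bind_pmf M N) f = measure_pmf.expectation M (\<lambda>x. measure_pmf.expectation (N x) f)"
proof -
  define A where "A = (\<Union>x\<in>set_pmf M. set_pmf (N x))"
  have A: "finite A" using M N unfolding A_def by auto
  have "measure_pmf.expectation (bind_pmf M N) f = (\<Sum>a\<in>A. f a * pmf (bind_pmf M N) a)"
    by (rule integral_measure_pmf_real[OF A]) (auto simp: A_def)
  also have "\<dots> = (\<Sum>a\<in>A. f a * (\<Sum>x\<in>set_pmf M. pmf (N x) a * pmf M x))"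
    unfolding pmf_bind by (intro sum.cong refl arg_cong2[where f="(*)"] integral_measure_pmf_real M) auto
  also have "\<dots> = (\<Sum>x\<in>set_pmf M. (\<Sum>a\<in>A. f a * pmf (N x) a) * pmf M x)"
  proof -
    have "(\<Sum>a\<in>A. f a * (\<Sum>x\<in>set_pmf M. pmf (N x) a * pmf M x)) = (\<Sum>a\<in>A. \<Sum>x\<in>set_pmf M. f a * pmf (N x) a * pmf M x)"
      by (simp add: sum_distrib_left mult_ac)
    also have "\<dots> = (\<Sum>x\<in>set_pmf M. \<Sum>a\<in>A. f a * pmf (N x) a * pmf M x)" by (rule sum.swap)
    also have "\<dots> = (\<Sum>x\<in>set_pmf M. (\<Sum>a\<in>A. f a * pmf (N x) a) * pmf M x)"
      by (simp add: sum_distrib_right)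
    finally show ?thesis .
  qed
  also have "\<dots> = (\<Sum>x\<in>set_pmf M. measure_pmf.expectation (N x) f * pmf M x)"
    by (intro sum.cong refl arg_cong2[where f="(*)"] integral_measure_pmf_real[symmetric] A)
       (auto simp: A_def)
  also have "\<dots> = measure_pmf.expectation M (\<lambda>x. measure_pmf.expectation (N x) f)"
    by (rule integral_measure_pmf_real[symmetric, OF M]) auto
  finally show ?thesis .
qed

lemma S_support_wf:
  "s \<in> set_pmf (S G g t) \<Longrightarrow> 1 \<le> t \<Longrightarrow> wf_hist t (snd s j)"
proof (induction t arbitrary: s)
  case 0 then show ?case by simp
next
  case (Suc t)
  show ?case
  proof (cases "t = 0")
    case True
    have "S G g (Suc 0) = Sinit G" using S_1[of G g] by simp
    then show ?thesis using Suc.prems True by (auto simp: Sinit_def wf_hist_def)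
  next
    case False
    then have "S G g (Suc t) = bind_pmf (S G g t) (stepS G g t)" by (simp add: S_Suc)
    with Suc.prems(1) obtain s0 where s0: "s0 \<in> set_pmf (S G g t)" and s: "s \<in> set_pmf (stepS G g t s0)"
      by auto
    have "wf_hist t (snd s0 j)" using Suc.IH[OF s0] False by simp
    from s obtain u w where "s \<in> set_pmf (case gm_f G t (fst s0) u w of (x', z, r) \<Rightarrow>
        return_pmf (x', \<lambda>j. (fst (snd s0 j), snd (snd s0 j) @ [z j])))" unfolding stepS_def by auto
    then obtain x' z r where "s = (x', \<lambda>j. (fst (snd s0 j), snd (snd s0 j) @ [z j]))"
      by (cases "gm_f G t (fst s0) u w") auto
    then show ?thesis using \<open>wf_hist t (snd s0 j)\<close> False by (auto simp: wf_hist_def)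
  qed
qed

lemma perfect_recall:
  assumes wf: "wf_game G" and vp: "valid_profile G g" and tr: "tr \<in> set_pmf (run G g)"
    and "1 \<le> \<tau>" "\<tau> \<le> t" "t \<le> gm_T G"
  shows "rvH tr \<tau> j = (fst (rvH tr t j), take (\<tau> - 1) (snd (rvH tr t j)))"
  using assms(5,6)
proof (induction t rule: dec_induct)
  case base
  have "wf_hist \<tau> (rvH tr \<tau> j)" using run_support[OF wf vp tr] assms by auto
  then show ?case by (simp add: wf_hist_def)
next
  case (step t)
  have c: "consec G t (tr!(t-1)) (tr!t)" using run_support[OF wf vp tr] step assms(4) by auto
  have w: "wf_hist t (rvH tr t j)" using run_support[OF wf vp tr] step assms(4) by auto
  from c obtain z where z: "fst (snd (tr!t)) = (\<lambda>j. (fst (fst (snd (tr!(t-1))) j), snd (fst (snd (tr!(t-1))) j) @ [z j]))"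
    unfolding consec_def by blast
  have "rvH tr (Suc t) j = (fst (rvH tr t j), snd (rvH tr t j) @ [z j])"
    using z by (simp add: rvH_def)
  then show ?case using step w by (simp add: wf_hist_def)
qed

lemma next_hist:
  assumes wf: "wf_game G" and vp: "valid_profile G g" and tr: "tr \<in> set_pmf (run G g)"
    and "1 \<le> \<tau>" "\<tau> < gm_T G"
  shows "\<exists>z. gm_act G \<tau> j z = rvU tr \<tau> j \<and> rvH tr (Suc \<tau>) j = (fst (rvH tr \<tau> j), snd (rvH tr \<tau> j) @ [z])"
proof -
  have c: "consec G \<tau> (tr!(\<tau>-1)) (tr!\<tau>)" using run_support[OF wf vp tr] assms by auto
  then show ?thesis unfolding consec_def rvH_def rvU_def by auto
qed

lemma event_split:
  assumes wf: "wf_game G" and vp: "valid_profile G g" and tr: "tr \<in> set_pmf (run G g)"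
    and "1 \<le> \<tau>" "\<tau> < gm_T G"
  shows "(rvH tr \<tau> j = h \<and> rvU tr \<tau> j = u) \<longleftrightarrow>
     (\<exists>z. gm_act G \<tau> j z = u \<and> rvH tr (Suc \<tau>) j = (fst h, snd h @ [z]))"
  using next_hist[OF assms, of j] by (auto simp: prod_eq_iff)

lemma act_recall:
  assumes wf: "wf_game G" and vp: "valid_profile G g" and tr: "tr \<in> set_pmf (run G g)"
    and "1 \<le> \<tau>" "\<tau> < t" "t \<le> gm_T G"
  shows "rvU tr \<tau> j = gm_act G \<tau> j (snd (rvH tr t j) ! (\<tau> - 1))"
proof -
  obtain z where z: "gm_act G \<tau> j z = rvU tr \<tau> j" "rvH tr (Suc \<tau>) j = (fst (rvH tr \<tau> j), snd (rvH tr \<tau> j) @ [z])"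
    using next_hist[OF wf vp tr, of \<tau> j] assms by auto
  have w: "wf_hist \<tau> (rvH tr \<tau> j)" using run_support[OF wf vp tr] assms by auto
  have "rvH tr (Suc \<tau>) j = (fst (rvH tr t j), take \<tau> (snd (rvH tr t j)))"
    using perfect_recall[OF wf vp tr, of "Suc \<tau>" t j] assms by simp
  then have "take \<tau> (snd (rvH tr t j)) = snd (rvH tr \<tau> j) @ [z]" using z by simp
  moreover have "length (snd (rvH tr \<tau> j)) = \<tau> - 1" using w by (simp add: wf_hist_def)
  moreover have "snd (rvH tr t j) ! (\<tau> - 1) = take \<tau> (snd (rvH tr t j)) ! (\<tau> - 1)"
    using assms by (simp add: nth_take)
  ultimately have "snd (rvH tr t j) ! (\<tau> - 1) = z" by (metis nth_append_length)
  then show ?thesis using z by simp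
qed

lemma ent_alt: "ent G g t s = map_pmf (\<lambda>(u,w). (fst s, snd s, u, snd (snd (gm_f G t (fst s) u w))))
    (pair_pmf (Pi_pmf UNIV undefined (\<lambda>j. g j t (snd s j))) (gm_W G t))"
  unfolding ent_def pair_pmf_def map_bind_pmf
  by (simp add: bind_return_pmf case_prod_unfold)

lemma stepS_alt: "stepS G g t s = map_pmf (\<lambda>(u,w). (fst (gm_f G t (fst s) u w),
      \<lambda>j. (fst (snd s j), snd (snd s j) @ [fst (snd (gm_f G t (fst s) u w)) j])))
    (pair_pmf (Pi_pmf UNIV undefined (\<lambda>j. g j t (snd s j))) (gm_W G t))"
  unfolding stepS_def pair_pmf_def map_bind_pmf
  by (simp add: bind_return_pmf case_prod_unfold)

lemma Pi_split:
  fixes p :: "'i::finite \<Rightarrow> 'u pmf"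
  shows "Pi_pmf UNIV d p = map_pmf (\<lambda>(a,v). v(i:=a)) (pair_pmf (p i) (Pi_pmf (UNIV - {i}) d p))"
proof -
  have "UNIV = insert i (UNIV - {i})" by auto
  then have "Pi_pmf UNIV d p = Pi_pmf (insert i (UNIV - {i})) d p" by simp
  also have "\<dots> = map_pmf (\<lambda>(a,v). v(i:=a)) (pair_pmf (p i) (Pi_pmf (UNIV - {i}) d p))"
    by (rule Pi_pmf_insert) auto
  finally show ?thesis .
qed

lemma expectation_pair_fin:
  fixes f :: "'a \<times> 'b \<Rightarrow> real"
  assumes "finite (set_pmf A)" "finite (set_pmf B)"
  shows "measure_pmf.expectation (pair_pmf A B) f = measure_pmf.expectation A (\<lambda>a. measure_pmf.expectation B (\<lambda>b. f (a,b)))"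
  unfolding pair_pmf_def using assms
  by (subst integral_bind_pmf_fin) (auto simp: integral_bind_pmf_fin)

lemma expectation_indicator_single:
  fixes c :: "'a \<Rightarrow> real"
  shows "measure_pmf.expectation M (\<lambda>a. indicator {u} a * c a) = pmf M u * c u"
  by (subst integral_measure_pmf_real[of "{u}"]) (auto simp: indicator_def)

lemma E_Pi_split:
  fixes p :: "'i::finite \<Rightarrow> 'u::finite pmf" and W :: "'w::finite pmf" and \<phi> :: "('i \<Rightarrow> 'u) \<Rightarrow> 'w \<Rightarrow> real"
  shows "measure_pmf.expectation (pair_pmf (Pi_pmf UNIV d p) W) (\<lambda>(u',w). indicator {u'. u' i = u} u' * \<phi> u' w) =
     pmf (p i) u * measure_pmf.expectation (pair_pmf (Pi_pmf (UNIV - {i}) d p) W) (\<lambda>(v,w). \<phi> (v(i:=u)) w)"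
proof -
  have eq: "pair_pmf (Pi_pmf UNIV d p) W = map_pmf (\<lambda>(a,(v,w)). (v(i:=a), w)) (pair_pmf (p i) (pair_pmf (Pi_pmf (UNIV - {i}) d p) W))"
    apply (subst Pi_split[where i=i])
    apply (simp only: pair_map_pmf1 pair_pair_pmf pmf.map_comp)
    apply (rule map_pmf_cong)
     apply (auto simp: apfst_def map_prod_def)
    done
  show ?thesis
    unfolding eq integral_map_pmf
    by (subst expectation_pair_fin) (auto simp: finite_set_pmf_finite_type case_prod_unfold
         indicator_def[of "{u'. u' i = u}"] expectation_indicator_single[of _ u, unfolded indicator_def, simplified]
         intro!: finite_set_pmf_finite_type)
qed

lemma others_apply: "j \<noteq> i \<Longrightarrow> others i f j = f j"
  by (simp add: others_def)

lemma others_upd: "others i (f(i := h)) = others i f"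
  by (simp add: others_def)

lemma others_upd_self: "o' i = undefined \<Longrightarrow> (others i (o'(i := h))) = o'"
  by (auto simp: others_def)

lemma upd_others: "(others i f)(i := f i) = f"
  by (auto simp: others_def)

lemma IND_sum:
  fixes M :: "('x \<times> ('i \<Rightarrow> 'a)) pmf" and c :: "'a \<Rightarrow> 'k" and X :: "'a \<Rightarrow> 'x \<times> ('i \<Rightarrow> 'a) \<Rightarrow> real"
  assumes fin: "finite (set_pmf M)"
    and prod: "\<And>x hs. pmf M (x,hs) * indicator {h. c h = k} (hs i) = P * Fk (hs i) * \<Phi>k (x, others i hs)"
  defines "D \<equiv> set_pmf M \<inter> {s. c (snd s i) = k}"
  shows "measure_pmf.expectation M (\<lambda>s. indicator {h. c h = k} (snd s i) * X (snd s i) (fst s, others i (snd s))) =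
     P * (\<Sum>h\<in>(\<lambda>s. snd s i) ` D. \<Sum>p\<in>(\<lambda>s. (fst s, others i (snd s))) ` D. Fk h * \<Phi>k p * X h p)"
proof -
  define D1 where "D1 = (\<lambda>s. snd s i) ` D"
  define D2 where "D2 = (\<lambda>s. (fst s, others i (snd s))) ` D"
  define \<pi> where "\<pi> = (\<lambda>(h::'a, p::'x \<times> ('i \<Rightarrow> 'a)). (fst p, (snd p)(i := h)))"
  define T where "T = (\<lambda>s::'x \<times> ('i \<Rightarrow> 'a). P * Fk (snd s i) * \<Phi>k (fst s, others i (snd s)) * X (snd s i) (fst s, others i (snd s)))"
  have finD: "finite D" using fin unfolding D_def by auto
  have finD12: "finite D1" "finite D2" using finD unfolding D1_def D2_def by auto
  have D2o: "p \<in> D2 \<Longrightarrow> snd p i = undefined" for p unfolding D2_def by (auto simp: others_def)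
  have D1c: "h \<in> D1 \<Longrightarrow> c h = k" for h unfolding D1_def D_def by auto
  have pmfT: "pmf M s * indicator {h. c h = k} (snd s i) * X (snd s i) (fst s, others i (snd s)) = T s" for s
    using prod[of "fst s" "snd s"] unfolding T_def by simp
  have "measure_pmf.expectation M (\<lambda>s. indicator {h. c h = k} (snd s i) * X (snd s i) (fst s, others i (snd s))) =
      (\<Sum>s\<in>D. indicator {h. c h = k} (snd s i) * X (snd s i) (fst s, others i (snd s)) * pmf M s)"
    by (rule integral_measure_pmf_real[OF finD]) (auto simp: D_def indicator_def)
  also have "\<dots> = (\<Sum>s\<in>D. T s)"
    by (intro sum.cong refl) (metis (no_types, lifting) mult.commute mult.left_commute pmfT)
  also have "\<dots> = (\<Sum>s\<in>\<pi> ` (D1 \<times> D2). T s)"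
  proof (rule sum.mono_neutral_left)
    show "finite (\<pi> ` (D1 \<times> D2))" using finD12 by auto
    show "D \<subseteq> \<pi> ` (D1 \<times> D2)"
    proof
      fix s assume s: "s \<in> D"
      have "s = \<pi> (snd s i, (fst s, others i (snd s)))" unfolding \<pi>_def by (simp add: upd_others)
      moreover have "(snd s i, (fst s, others i (snd s))) \<in> D1 \<times> D2" using s unfolding D1_def D2_def by auto
      ultimately show "s \<in> \<pi> ` (D1 \<times> D2)" by blast
    qed
    show "\<forall>s\<in>\<pi> ` (D1 \<times> D2) - D. T s = 0"
    proof
      fix s assume s: "s \<in> \<pi> ` (D1 \<times> D2) - D"
      then obtain h p where hp: "h \<in> D1" "p \<in> D2" "s = \<pi> (h, p)" by auto
      have ck: "c (snd s i) = k" using hp D1c unfolding \<pi>_def by auto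
      then have "s \<notin> set_pmf M" using s unfolding D_def by auto
      then have "pmf M s = 0" by (simp add: set_pmf_iff)
      then show "T s = 0" using pmfT[of s] by simp
    qed
  qed
  also have "\<dots> = (\<Sum>q\<in>D1 \<times> D2. T (\<pi> q))"
  proof (rule sum.reindex[unfolded comp_def])
    show "inj_on \<pi> (D1 \<times> D2)"
    proof (rule inj_onI)
      fix a b assume a: "a \<in> D1 \<times> D2" and b: "b \<in> D1 \<times> D2" and e: "\<pi> a = \<pi> b"
      obtain h p h' p' where ab: "a = (h,p)" "b = (h',p')" by (cases a, cases b) auto
      have "snd p i = undefined" "snd p' i = undefined" using a b ab D2o by auto
      then show "a = b" using e ab unfolding \<pi>_def
        by (auto simp: fun_eq_iff prod_eq_iff) (metis fun_upd_same, metis fun_upd_other fun_upd_same)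
    qed
  qed
  also have "\<dots> = (\<Sum>(h,p)\<in>D1 \<times> D2. P * (Fk h * \<Phi>k p * X h p))"
  proof (intro sum.cong refl)
    fix q assume q: "q \<in> D1 \<times> D2"
    then obtain h p where hp: "q = (h,p)" "snd p i = undefined" using D2o by (cases q) auto
    then have "others i ((snd p)(i := h)) = snd p" by (simp add: others_upd_self)
    then show "T (\<pi> q) = (case q of (h, p) \<Rightarrow> P * (Fk h * \<Phi>k p * X h p))"
      unfolding T_def \<pi>_def hp by simp
  qed
  also have "\<dots> = (\<Sum>h\<in>D1. \<Sum>p\<in>D2. P * (Fk h * \<Phi>k p * X h p))"
    by (rule sum.cartesian_product[symmetric])
  also have "\<dots> = P * (\<Sum>h\<in>D1. \<Sum>p\<in>D2. Fk h * \<Phi>k p * X h p)"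
    by (simp add: sum_distrib_left)
  finally show ?thesis unfolding D1_def D2_def .
qed

lemma IND_abstract:
  fixes M :: "('x \<times> ('i \<Rightarrow> 'a)) pmf" and c :: "'a \<Rightarrow> 'k"
    and A :: "'a \<Rightarrow> real" and B :: "'x \<times> ('i \<Rightarrow> 'a) \<Rightarrow> real"
  assumes fin: "finite (set_pmf M)"
    and prod: "\<And>x hs. pmf M (x,hs) * indicator {h. c h = k} (hs i) = P * Fk (hs i) * \<Phi>k (x, others i hs)"
  shows "measure_pmf.expectation M (\<lambda>s. indicator {h. c h = k} (snd s i) * A (snd s i) * B (fst s, others i (snd s))) *
         measure_pmf.expectation M (\<lambda>s. indicator {h. c h = k} (snd s i)) =
         measure_pmf.expectation M (\<lambda>s. indicator {h. c h = k} (snd s i) * A (snd s i)) *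
         measure_pmf.expectation M (\<lambda>s. indicator {h. c h = k} (snd s i) * B (fst s, others i (snd s)))"
proof -
  define D where "D = set_pmf M \<inter> {s. c (snd s i) = k}"
  define D1 where "D1 = (\<lambda>s. snd s i) ` D"
  define D2 where "D2 = (\<lambda>s. (fst s, others i (snd s))) ` D"
  note I = IND_sum[OF fin prod, folded D_def, folded D1_def D2_def]
  have e1: "measure_pmf.expectation M (\<lambda>s. indicator {h. c h = k} (snd s i) * A (snd s i) * B (fst s, others i (snd s)))
     = P * ((\<Sum>h\<in>D1. Fk h * A h) * (\<Sum>p\<in>D2. \<Phi>k p * B p))"
  proof -
    have "(\<lambda>s. indicator {h. c h = k} (snd s i) * A (snd s i) * B (fst s, others i (snd s))) =
      (\<lambda>s. indicator {h. c h = k} (snd s i) * (\<lambda>h p. A h * B p) (snd s i) (fst s, others i (snd s)))"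
      by (simp add: mult.assoc)
    then have "measure_pmf.expectation M (\<lambda>s. indicator {h. c h = k} (snd s i) * A (snd s i) * B (fst s, others i (snd s)))
      = P * (\<Sum>h\<in>D1. \<Sum>p\<in>D2. Fk h * \<Phi>k p * (A h * B p))" using I[of "\<lambda>h p. A h * B p"] by simp
    then show ?thesis unfolding sum_product by (simp add: mult_ac)
  qed
  have e2: "measure_pmf.expectation M (\<lambda>s. indicator {h. c h = k} (snd s i))
     = P * ((\<Sum>h\<in>D1. Fk h) * (\<Sum>p\<in>D2. \<Phi>k p))"
  proof -
    show ?thesis using I[of "\<lambda>h p. 1"] unfolding sum_product by (simp add: mult_ac)
  qed
  have e3: "measure_pmf.expectation M (\<lambda>s. indicator {h. c h = k} (snd s i) * A (snd s i))
     = P * ((\<Sum>h\<in>D1. Fk h * A h) * (\<Sum>p\<in>D2. \<Phi>k p))"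
  proof -
    show ?thesis using I[of "\<lambda>h p. A h"] unfolding sum_product by (simp add: mult_ac)
  qed
  have e4: "measure_pmf.expectation M (\<lambda>s. indicator {h. c h = k} (snd s i) * B (fst s, others i (snd s)))
     = P * ((\<Sum>h\<in>D1. Fk h) * (\<Sum>p\<in>D2. \<Phi>k p * B p))"
  proof -
    show ?thesis using I[of "\<lambda>h p. B p"] unfolding sum_product by (simp add: mult_ac)
  qed
  show ?thesis unfolding e1 e2 e3 e4 by (simp add: mult_ac)
qed

lemma prob_as_E: "measure_pmf.prob M A = measure_pmf.expectation M (indicator A)"
  by simp

definition PrH where "PrH G g \<tau> j h = measure_pmf.prob (S G g \<tau>) {s. snd s j = h}"

definition BR where
  "BR G g \<tau> i x o' a = measure_pmf.expectation
     (pair_pmf (Pi_pmf (UNIV - {i}) undefined (\<lambda>j. g j \<tau> (o' j))) (gm_W G \<tau>))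
     (\<lambda>(v,w). snd (snd (gm_f G \<tau> x (v(i:=a)) w)) i)"

definition BZ where
  "BZ G g \<tau> i x o' a z = measure_pmf.expectation
     (pair_pmf (Pi_pmf (UNIV - {i}) undefined (\<lambda>j. g j \<tau> (o' j))) (gm_W G \<tau>))
     (\<lambda>(v,w). indicator {z} (fst (snd (gm_f G \<tau> x (v(i:=a)) w)) i))"

lemma BR_others: "BR G g \<tau> i x (others i o') a = BR G g \<tau> i x o' a"
  unfolding BR_def by (subst Pi_pmf_cong[where f'="\<lambda>j. g j \<tau> (o' j)"]) (auto simp: others_def)

lemma BZ_others: "BZ G g \<tau> i x (others i o') a z = BZ G g \<tau> i x o' a z"
  unfolding BZ_def by (subst Pi_pmf_cong[where f'="\<lambda>j. g j \<tau> (o' j)"]) (auto simp: others_def)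

lemma BR_cong: "(\<And>j. j \<noteq> i \<Longrightarrow> g' j \<tau> = g j \<tau>) \<Longrightarrow> BR G g' \<tau> i x o' a = BR G g \<tau> i x o' a"
  unfolding BR_def by (subst Pi_pmf_cong[where f'="\<lambda>j. g j \<tau> (o' j)"]) auto

lemma BZ_cong: "(\<And>j. j \<noteq> i \<Longrightarrow> g' j \<tau> = g j \<tau>) \<Longrightarrow> BZ G g' \<tau> i x o' a z = BZ G g \<tau> i x o' a z"
  unfolding BZ_def by (subst Pi_pmf_cong[where f'="\<lambda>j. g j \<tau> (o' j)"]) auto

context
  fixes G :: "('i::finite,'x::finite,'u::finite,'z::finite,'w::finite,'h::finite,'m) game_scheme"
begin

lemma E_run_entry:
  fixes F :: "_ \<Rightarrow> real"
  assumes "1 \<le> t" "t \<le> gm_T G"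
  shows "measure_pmf.expectation (run G g) (\<lambda>tr. F (tr ! (t - 1))) =
    measure_pmf.expectation (S G g t) (\<lambda>s. measure_pmf.expectation
       (pair_pmf (Pi_pmf UNIV undefined (\<lambda>j. g j t (snd s j))) (gm_W G t))
       (\<lambda>(u,w). F (fst s, snd s, u, snd (snd (gm_f G t (fst s) u w)))))"
proof -
  have "measure_pmf.expectation (run G g) (\<lambda>tr. F (tr ! (t - 1))) =
     measure_pmf.expectation (map_pmf (\<lambda>tr. tr ! (t - 1)) (run G g)) F" by simp
  also have "\<dots> = measure_pmf.expectation (bind_pmf (S G g t) (ent G g t)) F"
    using snapshot[OF assms] by simp
  also have "\<dots> = measure_pmf.expectation (S G g t) (\<lambda>s. measure_pmf.expectation (ent G g t s) F)"
    by (rule integral_bind_pmf_fin) (auto intro: finite_S finite_ent)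
  finally show ?thesis by (simp add: ent_alt case_prod_unfold)
qed

lemma E_S_Suc:
  fixes F :: "_ \<Rightarrow> real"
  assumes "1 \<le> t"
  shows "measure_pmf.expectation (S G g (Suc t)) F =
    measure_pmf.expectation (S G g t) (\<lambda>s. measure_pmf.expectation
       (pair_pmf (Pi_pmf UNIV undefined (\<lambda>j. g j t (snd s j))) (gm_W G t))
       (\<lambda>(u,w). F (fst (gm_f G t (fst s) u w),
            \<lambda>j. (fst (snd s j), snd (snd s j) @ [fst (snd (gm_f G t (fst s) u w)) j]))))"
proof -
  have "measure_pmf.expectation (S G g (Suc t)) F = measure_pmf.expectation (bind_pmf (S G g t) (stepS G g t)) F"
    by (subst S_Suc[OF assms]) (rule refl)
  also have "\<dots> = measure_pmf.expectation (S G g t) (\<lambda>s. measure_pmf.expectation (stepS G g t s) F)"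
    by (rule integral_bind_pmf_fin) (auto intro: finite_S finite_stepS)
  finally show ?thesis by (simp add: stepS_alt case_prod_unfold)
qed

lemma E_pair_marg:
  "measure_pmf.expectation (pair_pmf (Pi_pmf UNIV undefined (p :: 'i \<Rightarrow> 'u pmf)) (W :: 'w pmf))
     (\<lambda>(u',w). indicator {u'. u' j = u} u') = pmf (p j) u"
  using E_Pi_split[where d=undefined and p=p and i=j and u=u and W=W and \<phi>="\<lambda>_ _. 1"] by (simp add: case_prod_unfold)

lemma Pev_eq:
  assumes "1 \<le> \<tau>" "\<tau> \<le> gm_T G"
  shows "Pr G g {tr. rvH tr \<tau> j = h \<and> rvU tr \<tau> j = u} = PrH G g \<tau> j h * pmf (g j \<tau> h) u"
proof -
  have "Pr G g {tr. rvH tr \<tau> j = h \<and> rvU tr \<tau> j = u} =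
     measure_pmf.expectation (run G g) (\<lambda>tr. (\<lambda>e. indicator {e. fst (snd e) j = h} e * indicator {e. fst (snd (snd e)) j = u} e) (tr ! (\<tau> - 1)))"
    unfolding Pr_def prob_as_E by (intro Bochner_Integration.integral_cong refl) (auto simp: indicator_def rvH_def rvU_def)
  also have "\<dots> = measure_pmf.expectation (S G g \<tau>) (\<lambda>s. measure_pmf.expectation
       (pair_pmf (Pi_pmf UNIV undefined (\<lambda>j. g j \<tau> (snd s j))) (gm_W G \<tau>))
       (\<lambda>(u',w). (\<lambda>e. indicator {e. fst (snd e) j = h} e * indicator {e. fst (snd (snd e)) j = u} e)
           (fst s, snd s, u', snd (snd (gm_f G \<tau> (fst s) u' w)))))"
    by (rule E_run_entry[OF assms])
  also have "\<dots> = measure_pmf.expectation (S G g \<tau>) (\<lambda>s. indicator {s. snd s j = h} s *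
      measure_pmf.expectation (pair_pmf (Pi_pmf UNIV undefined (\<lambda>j. g j \<tau> (snd s j))) (gm_W G \<tau>))
       (\<lambda>(u',w). indicator {u'. u' j = u} u'))"
    by (intro Bochner_Integration.integral_cong refl) (auto simp: indicator_def case_prod_unfold)
  also have "\<dots> = measure_pmf.expectation (S G g \<tau>) (\<lambda>s. indicator {s. snd s j = h} s * pmf (g j \<tau> h) u)"
    unfolding E_pair_marg by (intro Bochner_Integration.integral_cong refl) (auto simp: indicator_def)
  also have "\<dots> = PrH G g \<tau> j h * pmf (g j \<tau> h) u"
    unfolding PrH_def by simp
  finally show ?thesis .
qed

lemma R_num:
  assumes "1 \<le> \<tau>" "\<tau> \<le> gm_T G"
  shows "measure_pmf.expectation (run G g) (\<lambda>tr. indicator {tr. rvH tr \<tau> i = h \<and> rvU tr \<tau> i = u} tr * rvR tr \<tau> i) =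
    pmf (g i \<tau> h) u * measure_pmf.expectation (S G g \<tau>) (\<lambda>s. indicator {s. snd s i = h} s * BR G g \<tau> i (fst s) (snd s) u)"
proof -
  have "measure_pmf.expectation (run G g) (\<lambda>tr. indicator {tr. rvH tr \<tau> i = h \<and> rvU tr \<tau> i = u} tr * rvR tr \<tau> i) =
     measure_pmf.expectation (run G g) (\<lambda>tr. (\<lambda>e. indicator {e. fst (snd e) i = h} e * (indicator {e. fst (snd (snd e)) i = u} e * snd (snd (snd e)) i)) (tr ! (\<tau> - 1)))"
    by (intro Bochner_Integration.integral_cong refl) (auto simp: indicator_def rvH_def rvU_def rvR_def)
  also have "\<dots> = measure_pmf.expectation (S G g \<tau>) (\<lambda>s. measure_pmf.expectation
       (pair_pmf (Pi_pmf UNIV undefined (\<lambda>j. g j \<tau> (snd s j))) (gm_W G \<tau>))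
       (\<lambda>(u',w). (\<lambda>e. indicator {e. fst (snd e) i = h} e * (indicator {e. fst (snd (snd e)) i = u} e * snd (snd (snd e)) i))
           (fst s, snd s, u', snd (snd (gm_f G \<tau> (fst s) u' w)))))"
    by (rule E_run_entry[OF assms])
  also have "\<dots> = measure_pmf.expectation (S G g \<tau>) (\<lambda>s. indicator {s. snd s i = h} s *
      measure_pmf.expectation (pair_pmf (Pi_pmf UNIV undefined (\<lambda>j. g j \<tau> (snd s j))) (gm_W G \<tau>))
       (\<lambda>(u',w). indicator {u'. u' i = u} u' * snd (snd (gm_f G \<tau> (fst s) u' w)) i))"
    by (intro Bochner_Integration.integral_cong refl) (auto simp: indicator_def case_prod_unfold)
  also have "\<dots> = measure_pmf.expectation (S G g \<tau>) (\<lambda>s. indicator {s. snd s i = h} s * (pmf (g i \<tau> (snd s i)) u * BR G g \<tau> i (fst s) (snd s) u))"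
  proof (intro Bochner_Integration.integral_cong refl)
    fix s :: "'x \<times> ('i \<Rightarrow> ('h,'z) hist)"
    show "indicator {s. snd s i = h} s *
      measure_pmf.expectation (pair_pmf (Pi_pmf UNIV undefined (\<lambda>j. g j \<tau> (snd s j))) (gm_W G \<tau>))
       (\<lambda>(u',w). indicator {u'. u' i = u} u' * snd (snd (gm_f G \<tau> (fst s) u' w)) i) =
      indicator {s. snd s i = h} s * (pmf (g i \<tau> (snd s i)) u * BR G g \<tau> i (fst s) (snd s) u)"
      using E_Pi_split[where i=i and u=u and p="\<lambda>j. g j \<tau> (snd s j)" and W="gm_W G \<tau>" and d=undefined
          and \<phi>="\<lambda>u' w. snd (snd (gm_f G \<tau> (fst s) u' w)) i"]
      unfolding BR_def by simp
  qed
  also have "\<dots> = measure_pmf.expectation (S G g \<tau>) (\<lambda>s. pmf (g i \<tau> h) u * (indicator {s. snd s i = h} s * BR G g \<tau> i (fst s) (snd s) u))"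
    by (intro Bochner_Integration.integral_cong refl) (auto simp: indicator_def)
  finally show ?thesis by simp
qed

end

lemma integral_cong_pmf:
  fixes f g :: "'a \<Rightarrow> real"
  shows "(\<And>x. x \<in> set_pmf M \<Longrightarrow> f x = g x) \<Longrightarrow> measure_pmf.expectation M f = measure_pmf.expectation M g"
  by (intro integral_cong_AE) (auto simp: AE_measure_pmf_iff)

context
  fixes G :: "('i::finite,'x::finite,'u::finite,'z::finite,'w::finite,'h::finite,'m) game_scheme"
begin

lemma pair_support_valid:
  assumes wf: "wf_game G" and vp: "valid_profile G g" and s: "s \<in> set_pmf (S G g \<tau>)"
    and t: "1 \<le> \<tau>" "\<tau> \<le> gm_T G"
    and uw: "(u', w) \<in> set_pmf (pair_pmf (Pi_pmf UNIV undefined (\<lambda>j. g j \<tau> (snd s j))) (gm_W G \<tau>))"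
  shows "\<forall>j. gm_act G \<tau> j (fst (snd (gm_f G \<tau> (fst s) u' w)) j) = u' j"
proof -
  have "\<forall>j. u' j \<in> gm_U G \<tau> j"
  proof
    fix j
    have "u' j \<in> set_pmf (g j \<tau> (snd s j))" using uw by (auto simp: set_Pi_UNIV)
    moreover have "wf_hist \<tau> (snd s j)" using S_support_wf[OF s] t by auto
    ultimately show "u' j \<in> gm_U G \<tau> j" using vp t unfolding valid_profile_def by (meson atLeastAtMost_iff subsetD)
  qed
  then have "case gm_f G \<tau> (fst s) u' w of (x', z, r) \<Rightarrow> (\<forall>j. gm_act G \<tau> j (z j) = u' j \<and> -1 \<le> r j \<and> r j \<le> 1)"
    using wf t unfolding wf_game_def by auto
  then show ?thesis by (cases "gm_f G \<tau> (fst s) u' w") auto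
qed

lemma Z_lemma:
  assumes wf: "wf_game G" and vp: "valid_profile G g" and t: "1 \<le> \<tau>" "\<tau> < gm_T G"
  shows "PrH G g (Suc \<tau>) i (fst h, snd h @ [z]) = pmf (g i \<tau> h) (gm_act G \<tau> i z) *
     measure_pmf.expectation (S G g \<tau>) (\<lambda>s. indicator {s. snd s i = h} s * BZ G g \<tau> i (fst s) (snd s) (gm_act G \<tau> i z) z)"
proof -
  let ?a = "gm_act G \<tau> i z"
  have "PrH G g (Suc \<tau>) i (fst h, snd h @ [z]) = measure_pmf.expectation (S G g (Suc \<tau>)) (indicator {s. snd s i = (fst h, snd h @ [z])})"
    unfolding PrH_def by simp
  also have "\<dots> = measure_pmf.expectation (S G g \<tau>) (\<lambda>s. measure_pmf.expectation
       (pair_pmf (Pi_pmf UNIV undefined (\<lambda>j. g j \<tau> (snd s j))) (gm_W G \<tau>))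
       (\<lambda>(u,w). indicator {s. snd s i = (fst h, snd h @ [z])} (fst (gm_f G \<tau> (fst s) u w),
            \<lambda>j. (fst (snd s j), snd (snd s j) @ [fst (snd (gm_f G \<tau> (fst s) u w)) j]))))"
    by (rule E_S_Suc) (use t in auto)
  also have "\<dots> = measure_pmf.expectation (S G g \<tau>) (\<lambda>s. indicator {s. snd s i = h} s * (pmf (g i \<tau> (snd s i)) ?a * BZ G g \<tau> i (fst s) (snd s) ?a z))"
  proof (intro integral_cong_AE)
    show "AE s in measure_pmf (S G g \<tau>). measure_pmf.expectation
       (pair_pmf (Pi_pmf UNIV undefined (\<lambda>j. g j \<tau> (snd s j))) (gm_W G \<tau>))
       (\<lambda>(u,w). indicator {s. snd s i = (fst h, snd h @ [z])} (fst (gm_f G \<tau> (fst s) u w),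
            \<lambda>j. (fst (snd s j), snd (snd s j) @ [fst (snd (gm_f G \<tau> (fst s) u w)) j]))) =
       indicator {s. snd s i = h} s * (pmf (g i \<tau> (snd s i)) ?a * BZ G g \<tau> i (fst s) (snd s) ?a z)"
      unfolding AE_measure_pmf_iff
    proof
      fix s assume s: "s \<in> set_pmf (S G g \<tau>)"
      let ?P = "pair_pmf (Pi_pmf UNIV undefined (\<lambda>j. g j \<tau> (snd s j))) (gm_W G \<tau>)"
      have "measure_pmf.expectation ?P
         (\<lambda>(u,w). (indicator :: _ \<Rightarrow> _ \<Rightarrow> real) {s. snd s i = (fst h, snd h @ [z])} (fst (gm_f G \<tau> (fst s) u w),
            \<lambda>j. (fst (snd s j), snd (snd s j) @ [fst (snd (gm_f G \<tau> (fst s) u w)) j]))) =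
         measure_pmf.expectation ?P (\<lambda>(u',w). indicator {s. snd s i = h} s * (indicator {u'. u' i = ?a} u' *
             indicator {z} (fst (snd (gm_f G \<tau> (fst s) u' w)) i)))"
      proof (rule integral_cong_pmf, goal_cases)
        case (1 uw)
        obtain u' w where uw': "uw = (u', w)" by (cases uw)
        have act: "gm_act G \<tau> i (fst (snd (gm_f G \<tau> (fst s) u' w)) i) = u' i"
          using pair_support_valid[OF wf vp s _ _ 1[unfolded uw']] t by auto
        then show ?case unfolding uw' by (auto simp: indicator_def prod_eq_iff)
      qed
      also have "\<dots> = indicator {s. snd s i = h} s * measure_pmf.expectation ?P (\<lambda>(u',w). indicator {u'. u' i = ?a} u' *
             indicator {z} (fst (snd (gm_f G \<tau> (fst s) u' w)) i))"
        by (simp add: case_prod_unfold)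
      also have "\<dots> = indicator {s. snd s i = h} s * (pmf (g i \<tau> (snd s i)) ?a * BZ G g \<tau> i (fst s) (snd s) ?a z)"
        using E_Pi_split[where i=i and u="?a" and p="\<lambda>j. g j \<tau> (snd s j)" and W="gm_W G \<tau>" and d=undefined
          and \<phi>="\<lambda>u' w. indicator {z} (fst (snd (gm_f G \<tau> (fst s) u' w)) i)"]
        unfolding BZ_def by simp
      finally show "measure_pmf.expectation ?P
         (\<lambda>(u,w). indicator {s. snd s i = (fst h, snd h @ [z])} (fst (gm_f G \<tau> (fst s) u w),
            \<lambda>j. (fst (snd s j), snd (snd s j) @ [fst (snd (gm_f G \<tau> (fst s) u w)) j]))) =
         indicator {s. snd s i = h} s * (pmf (g i \<tau> (snd s i)) ?a * BZ G g \<tau> i (fst s) (snd s) ?a z)" .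
    qed
  qed simp_all
  also have "\<dots> = measure_pmf.expectation (S G g \<tau>) (\<lambda>s. pmf (g i \<tau> h) ?a * (indicator {s. snd s i = h} s * BZ G g \<tau> i (fst s) (snd s) ?a z))"
    by (intro Bochner_Integration.integral_cong refl) (auto simp: indicator_def)
  finally show ?thesis by simp
qed

lemma Pr_state:
  assumes "1 \<le> t" "t \<le> gm_T G"
  shows "Pr G g {tr. P (rvX tr t) (rvH tr t)} = measure_pmf.prob (S G g t) {s. P (fst s) (snd s)}"
proof -
  have "Pr G g {tr. P (rvX tr t) (rvH tr t)} = measure_pmf.prob (map_pmf (\<lambda>tr. (rvX tr t, rvH tr t)) (run G g)) {s. P (fst s) (snd s)}"
    unfolding Pr_def by (simp add: vimage_def)
  then show ?thesis using snapshot_state[OF assms] by simp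
qed

lemma USI_prod:
  assumes "USI G \<iota>1 \<iota> i"
  shows "\<exists>F \<Phi>. \<forall>g. valid_profile G g \<longrightarrow> (\<forall>t\<in>{1..gm_T G}. \<forall>k x hs.
     pmf (S G g t) (x,hs) * indicator {h. compress \<iota>1 \<iota> i h = k} (hs i) =
     measure_pmf.prob (S G g t) {s. compress \<iota>1 \<iota> i (snd s i) = k} * pmf (F (g i) t k) (hs i) * pmf (\<Phi> (others i g) t k) (x, others i hs))"
proof -
  obtain F \<Phi> where FP: "\<forall>g. valid_profile G g \<longrightarrow>
       (\<forall>t\<in>{1..gm_T G}. \<forall>k.
          Pr G g {tr. compress \<iota>1 \<iota> i (rvH tr t i) = k} > 0 \<longrightarrow>
          (\<forall>x hs. cond_Pr G g {tr. rvX tr t = x \<and> rvH tr t = hs}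
                               {tr. compress \<iota>1 \<iota> i (rvH tr t i) = k}
                 = pmf (F (g i) t k) (hs i) * pmf (\<Phi> (others i g) t k) (x, others i hs)))"
    using assms unfolding USI_def by blast
  show ?thesis
  proof (intro exI allI impI ballI)
    fix g :: "('i,'h,'z,'u) profile" and t k x hs assume vp: "valid_profile G g" and t: "t \<in> {1..gm_T G}"
    let ?P = "measure_pmf.prob (S G g t) {s. compress \<iota>1 \<iota> i (snd s i) = k}"
    have PK: "Pr G g {tr. compress \<iota>1 \<iota> i (rvH tr t i) = k} = ?P"
      using Pr_state[where t=t and g=g and P="\<lambda>x hs. compress \<iota>1 \<iota> i (hs i) = k"] t by auto
    have PAB: "Pr G g ({tr. rvX tr t = x \<and> rvH tr t = hs} \<inter> {tr. compress \<iota>1 \<iota> i (rvH tr t i) = k}) =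
       pmf (S G g t) (x,hs) * indicator {h. compress \<iota>1 \<iota> i h = k} (hs i)"
    proof -
      have "Pr G g ({tr. rvX tr t = x \<and> rvH tr t = hs} \<inter> {tr. compress \<iota>1 \<iota> i (rvH tr t i) = k}) =
         measure_pmf.prob (S G g t) {s. fst s = x \<and> snd s = hs \<and> compress \<iota>1 \<iota> i (snd s i) = k}"
        using Pr_state[where t=t and g=g and P="\<lambda>x' hs'. x' = x \<and> hs' = hs \<and> compress \<iota>1 \<iota> i (hs' i) = k"] t
        by (auto simp: Int_def)
      also have "{s. fst s = x \<and> snd s = hs \<and> compress \<iota>1 \<iota> i (snd s i) = k} =
         (if compress \<iota>1 \<iota> i (hs i) = k then {(x,hs)} else {})" by auto
      finally show ?thesis by (auto simp: measure_pmf_single)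
    qed
    show "pmf (S G g t) (x,hs) * indicator {h. compress \<iota>1 \<iota> i h = k} (hs i) =
     ?P * pmf (F (g i) t k) (hs i) * pmf (\<Phi> (others i g) t k) (x, others i hs)"
    proof (cases "?P > 0")
      case True
      then have "cond_Pr G g {tr. rvX tr t = x \<and> rvH tr t = hs} {tr. compress \<iota>1 \<iota> i (rvH tr t i) = k}
                 = pmf (F (g i) t k) (hs i) * pmf (\<Phi> (others i g) t k) (x, others i hs)"
        using FP vp t PK by auto
      then show ?thesis using True unfolding cond_Pr_def PAB PK by (simp add: field_simps)
    next
      case False
      then have P0: "?P = 0" by (simp add: measure_nonneg order.strict_iff_order)
      have "Pr G g ({tr. rvX tr t = x \<and> rvH tr t = hs} \<inter> {tr. compress \<iota>1 \<iota> i (rvH tr t i) = k}) \<le>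
          Pr G g {tr. compress \<iota>1 \<iota> i (rvH tr t i) = k}"
        unfolding Pr_def by (intro measure_pmf.finite_measure_mono) auto
      then have "pmf (S G g t) (x,hs) * indicator {h. compress \<iota>1 \<iota> i h = k} (hs i) \<le> ?P"
        unfolding PAB PK .
      moreover have "pmf (S G g t) (x,hs) * indicator {h. compress \<iota>1 \<iota> i h = k} (hs i) \<ge> 0" by simp
      ultimately show ?thesis using P0 by simp
    qed
  qed
qed

lemma IND_S:
  assumes prodS: "\<forall>t\<in>{1..gm_T G}. \<forall>k x hs.
     pmf (S G g t) (x,hs) * indicator {h. compress \<iota>1 \<iota> i h = k} (hs i) =
     measure_pmf.prob (S G g t) {s. compress \<iota>1 \<iota> i (snd s i) = k} * Fk t k (hs i) * \<Phi>k t k (x, others i hs)"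
    and t: "t \<in> {1..gm_T G}"
  fixes A :: "('h,'z) hist \<Rightarrow> real" and B :: "'x \<times> ('i \<Rightarrow> ('h,'z) hist) \<Rightarrow> real"
  shows "measure_pmf.expectation (S G g t) (\<lambda>s. indicator {h. compress \<iota>1 \<iota> i h = k} (snd s i) * A (snd s i) * B (fst s, others i (snd s))) *
         measure_pmf.expectation (S G g t) (\<lambda>s. indicator {h. compress \<iota>1 \<iota> i h = k} (snd s i)) =
         measure_pmf.expectation (S G g t) (\<lambda>s. indicator {h. compress \<iota>1 \<iota> i h = k} (snd s i) * A (snd s i)) *
         measure_pmf.expectation (S G g t) (\<lambda>s. indicator {h. compress \<iota>1 \<iota> i h = k} (snd s i) * B (fst s, others i (snd s)))"
proof -
  have p: "\<And>x hs. pmf (S G g t) (x,hs) * indicator {h. compress \<iota>1 \<iota> i h = k} (hs i) =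
     measure_pmf.prob (S G g t) {s. compress \<iota>1 \<iota> i (snd s i) = k} * Fk t k (hs i) * \<Phi>k t k (x, others i hs)"
    using prodS t by blast
  show ?thesis by (rule IND_abstract[OF finite_S p])
qed

end

lemma pmf_map_Pair: "pmf (map_pmf (\<lambda>a. (q, a)) N) (p, b) = (if q = p then pmf N b else 0)"
proof (cases "q = p")
  case True
  have "inj (\<lambda>a. (q, a))" by (auto intro: injI)
  then show ?thesis using True pmf_map_inj'[of "\<lambda>a. (q, a)" N b] by simp
next
  case False
  then have nin: "(p, b) \<notin> set_pmf (map_pmf (\<lambda>a. (q, a)) N)" by auto
  have "pmf (map_pmf (\<lambda>a. (q, a)) N) (p, b) = 0" using nin pmf_eq_0_set_pmf by metis
  then show ?thesis using False by simp
qed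

lemma pair_Pi_split:
  fixes p :: "'i::finite \<Rightarrow> 'u pmf"
  shows "pair_pmf (Pi_pmf UNIV d p) W = bind_pmf (p i) (\<lambda>a. map_pmf (\<lambda>(v,w). (v(i:=a), w)) (pair_pmf (Pi_pmf (UNIV - {i}) d p) W))"
  unfolding Pi_split[where i=i] pair_pmf_def map_pmf_def
  by (simp add: bind_assoc_pmf bind_return_pmf case_prod_unfold)

lemma compress_snoc:
  assumes "length (snd h) = t - 1" "1 \<le> t"
  shows "compress \<iota>1 \<iota> j (fst h, snd h @ [z]) = \<iota> (Suc t) j (compress \<iota>1 \<iota> j h) z"
proof -
  have u: "[2..<length (snd h @ [z]) + 2] = [2..<length (snd h) + 2] @ [length (snd h) + 2]"
    by simp
  have "zip ([2..<length (snd h) + 2] @ [length (snd h) + 2]) (snd h @ [z]) = zip [2..<length (snd h) + 2] (snd h) @ zip [length (snd h) + 2] [z]"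
    by (rule zip_append) (simp del: upt_Suc)
  then have Z: "zip [2..<length (snd (fst h, snd h @ [z])) + 2] (snd (fst h, snd h @ [z])) = zip [2..<length (snd h) + 2] (snd h) @ [(Suc t, z)]"
    unfolding u snd_conv using assms by (simp del: upt_Suc)
  show ?thesis unfolding compress_def fst_conv Z foldl_append by (simp del: upt_Suc)
qed

definition proj where "proj \<iota>1 \<iota> i s = (fst s, others i (snd s), compress \<iota>1 \<iota> i (snd s i))"

definition nextO where "nextO i o' z = others i (\<lambda>j. (fst (o' j), snd (o' j) @ [z j]))"

definition NX where
  "NX G g \<iota> i t p a = map_pmf (\<lambda>(v,w). (fst (gm_f G t (fst p) (v(i:=a)) w),
      nextO i (fst (snd p)) (fst (snd (gm_f G t (fst p) (v(i:=a)) w))),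
      \<iota> (Suc t) i (snd (snd p)) (fst (snd (gm_f G t (fst p) (v(i:=a)) w)) i)))
    (pair_pmf (Pi_pmf (UNIV - {i}) undefined (\<lambda>j. g j t (fst (snd p) j))) (gm_W G t))"

definition EN where
  "EN G g i t p a = map_pmf (\<lambda>(v,w). (fst p, fst (snd p), v(i:=a), snd (snd (gm_f G t (fst p) (v(i:=a)) w))))
    (pair_pmf (Pi_pmf (UNIV - {i}) undefined (\<lambda>j. g j t (fst (snd p) j))) (gm_W G t))"

definition pe where "pe i e = (fst e, others i (fst (snd e)), fst (snd (snd e)), snd (snd (snd e)))"

lemma Pi_others: "Pi_pmf (UNIV - {i}) d (\<lambda>j. g j t (others i hs j)) = Pi_pmf (UNIV - {i}) d (\<lambda>j. g j t (hs j))"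
  by (rule Pi_pmf_cong) (auto simp: others_def)

lemma stepS_proj:
  fixes g :: "('i::finite,'h,'z,'u) profile"
  assumes "wf_hist t (snd s i)" "1 \<le> t"
  shows "map_pmf (proj \<iota>1 \<iota> i) (stepS G g t s) = bind_pmf (g i t (snd s i)) (NX G g \<iota> i t (proj \<iota>1 \<iota> i s))"
proof -
  have c: "compress \<iota>1 \<iota> i (fst (snd s i), snd (snd s i) @ [zz]) = \<iota> (Suc t) i (compress \<iota>1 \<iota> i (snd s i)) zz" for zz
    using compress_snoc[of "snd s i" t] assms by (simp add: wf_hist_def)
  have o: "others i (\<lambda>j. (fst (snd s j), snd (snd s j) @ [zz j])) = nextO i (others i (snd s)) zz" for zz
    unfolding nextO_def by (auto simp: others_def)
  show ?thesis
    unfolding stepS_alt pair_Pi_split[where i=i] map_bind_pmf NX_def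
    by (intro bind_pmf_cong refl)
       (simp add: pmf.map_comp o_def case_prod_unfold proj_def c o Pi_others)
qed

lemma ent_proj:
  fixes g :: "('i::finite,'h,'z,'u) profile"
  shows "map_pmf (pe i) (ent G g t s) = bind_pmf (g i t (snd s i)) (EN G g i t (proj \<iota>1 \<iota> i s))"
  unfolding ent_alt pair_Pi_split[where i=i] map_bind_pmf EN_def
  by (intro bind_pmf_cong refl)
     (simp add: pmf.map_comp o_def case_prod_unfold proj_def pe_def Pi_others)

definition PK where "PK G g \<iota>1 \<iota> i t k = measure_pmf.prob (S G g t) {s. compress \<iota>1 \<iota> i (snd s i) = k}"

definition EKU where "EKU G g \<iota>1 \<iota> i t k a =
  measure_pmf.expectation (S G g t) (\<lambda>s. indicator {h. compress \<iota>1 \<iota> i h = k} (snd s i) * pmf (g i t (snd s i)) a)"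

definition prodS where "prodS G g \<iota>1 \<iota> i \<longleftrightarrow> (\<exists>Fk \<Phi>k. \<forall>t\<in>{1..gm_T G}. \<forall>k x hs.
     pmf (S G g t) (x,hs) * indicator {h. compress \<iota>1 \<iota> i h = k} (hs i) =
     measure_pmf.prob (S G g t) {s. compress \<iota>1 \<iota> i (snd s i) = k} * Fk t k (hs i) * \<Phi>k t k (x, others i hs))"

definition consis where "consis G g \<iota>1 \<iota> i \<rho> \<longleftrightarrow> (\<forall>t\<in>{1..gm_T G}. \<forall>k. PK G g \<iota>1 \<iota> i t k > 0 \<longrightarrow>
   (\<forall>a. pmf (\<rho> t k) a * PK G g \<iota>1 \<iota> i t k = EKU G g \<iota>1 \<iota> i t k a))"

lemma NX_cong: "(\<And>j. j \<noteq> i \<Longrightarrow> g' j = g j) \<Longrightarrow> NX G g' \<iota> i t p a = NX G g \<iota> i t p a"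
  unfolding NX_def by (subst Pi_pmf_cong[where f'="\<lambda>j. g j t (fst (snd p) j)"]) auto

lemma EN_cong: "(\<And>j. j \<noteq> i \<Longrightarrow> g' j = g j) \<Longrightarrow> EN G g' i t p a = EN G g i t p a"
  unfolding EN_def by (subst Pi_pmf_cong[where f'="\<lambda>j. g j t (fst (snd p) j)"]) auto

lemma not_in_support_if_zero:
  "measure_pmf.prob M {s. c s = k} = 0 \<Longrightarrow> s \<in> set_pmf M \<Longrightarrow> c s \<noteq> k"
  using measure_pmf_posI[of s M "{s. c s = k}"] by auto

context
  fixes G :: "('i::finite,'x::finite,'u::finite,'z::finite,'w::finite,'h::finite,'m) game_scheme"
    and \<iota>1 :: "'i \<Rightarrow> 'h \<Rightarrow> 'k" and \<iota> :: "nat \<Rightarrow> 'i \<Rightarrow> 'k \<Rightarrow> 'z \<Rightarrow> 'k" and i :: 'i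
begin

lemma KI:
  fixes g :: "('i,'h,'z,'u) profile"
  assumes pS: "prodS G g \<iota>1 \<iota> i" and cons: "consis G g \<iota>1 \<iota> i \<rho>" and t: "t \<in> {1..gm_T G}"
  shows "bind_pmf (S G g t) (\<lambda>s. map_pmf (\<lambda>a. (proj \<iota>1 \<iota> i s, a)) (g i t (snd s i))) =
         bind_pmf (map_pmf (proj \<iota>1 \<iota> i) (S G g t)) (\<lambda>p. map_pmf (\<lambda>a. (p, a)) (\<rho> t (snd (snd p))))"
proof (rule pmf_eqI)
  fix pa :: "('x \<times> ('i \<Rightarrow> ('h,'z) hist) \<times> 'k) \<times> 'u"
  obtain x0 o0 k0 a0 where pa: "pa = ((x0, o0, k0), a0)" by (cases pa) auto
  obtain Fk \<Phi>k where FP: "\<forall>t\<in>{1..gm_T G}. \<forall>k x hs.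
     pmf (S G g t) (x,hs) * indicator {h. compress \<iota>1 \<iota> i h = k} (hs i) =
     measure_pmf.prob (S G g t) {s. compress \<iota>1 \<iota> i (snd s i) = k} * Fk t k (hs i) * \<Phi>k t k (x, others i hs)"
    using pS unfolding prodS_def by blast
  define Af where "Af = (\<lambda>h. pmf (g i t h) a0)"
  define Bf where "Bf = (\<lambda>p :: 'x \<times> ('i \<Rightarrow> ('h,'z) hist). indicator {(x0, o0)} p :: real)"
  let ?ik = "\<lambda>s::'x \<times> ('i \<Rightarrow> ('h,'z) hist). indicator {h. compress \<iota>1 \<iota> i h = k0} (snd s i) :: real"
  have L: "pmf (bind_pmf (S G g t) (\<lambda>s. map_pmf (\<lambda>a. (proj \<iota>1 \<iota> i s, a)) (g i t (snd s i)))) pa =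
      measure_pmf.expectation (S G g t) (\<lambda>s. ?ik s * Af (snd s i) * Bf (fst s, others i (snd s)))"
    unfolding pmf_bind pa pmf_map_Pair
    by (intro Bochner_Integration.integral_cong refl) (auto simp: proj_def Af_def Bf_def indicator_def)
  have R: "pmf (bind_pmf (map_pmf (proj \<iota>1 \<iota> i) (S G g t)) (\<lambda>p. map_pmf (\<lambda>a. (p, a)) (\<rho> t (snd (snd p))))) pa =
      pmf (\<rho> t k0) a0 * measure_pmf.expectation (S G g t) (\<lambda>s. ?ik s * Bf (fst s, others i (snd s)))"
  proof -
    have "pmf (bind_pmf (map_pmf (proj \<iota>1 \<iota> i) (S G g t)) (\<lambda>p. map_pmf (\<lambda>a. (p, a)) (\<rho> t (snd (snd p))))) pa =
       measure_pmf.expectation (S G g t) (\<lambda>s. pmf (\<rho> t k0) a0 * (?ik s * Bf (fst s, others i (snd s))))"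
      unfolding pmf_bind pa pmf_map_Pair integral_map_pmf
      by (intro Bochner_Integration.integral_cong refl) (auto simp: proj_def Bf_def indicator_def)
    then show ?thesis by simp
  qed
  have IND: "measure_pmf.expectation (S G g t) (\<lambda>s. ?ik s * Af (snd s i) * Bf (fst s, others i (snd s))) *
         measure_pmf.expectation (S G g t) ?ik =
         measure_pmf.expectation (S G g t) (\<lambda>s. ?ik s * Af (snd s i)) *
         measure_pmf.expectation (S G g t) (\<lambda>s. ?ik s * Bf (fst s, others i (snd s)))"
    by (rule IND_S[OF FP t])
  have Pk: "measure_pmf.expectation (S G g t) ?ik = PK G g \<iota>1 \<iota> i t k0"
  proof -
    have "?ik = indicator {s. compress \<iota>1 \<iota> i (snd s i) = k0}" by (auto simp: indicator_def fun_eq_iff)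
    then show ?thesis unfolding PK_def by simp
  qed
  have E1: "measure_pmf.expectation (S G g t) (\<lambda>s. ?ik s * Af (snd s i)) = EKU G g \<iota>1 \<iota> i t k0 a0"
    unfolding EKU_def Af_def ..
  show "pmf (bind_pmf (S G g t) (\<lambda>s. map_pmf (\<lambda>a. (proj \<iota>1 \<iota> i s, a)) (g i t (snd s i)))) pa =
        pmf (bind_pmf (map_pmf (proj \<iota>1 \<iota> i) (S G g t)) (\<lambda>p. map_pmf (\<lambda>a. (p, a)) (\<rho> t (snd (snd p))))) pa"
  proof (cases "PK G g \<iota>1 \<iota> i t k0 > 0")
    case True
    have c: "pmf (\<rho> t k0) a0 * PK G g \<iota>1 \<iota> i t k0 = EKU G g \<iota>1 \<iota> i t k0 a0"
      using cons t True unfolding consis_def by blast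
    define L0 where "L0 = measure_pmf.expectation (S G g t) (\<lambda>s. ?ik s * Af (snd s i) * Bf (fst s, others i (snd s)))"
    define EB where "EB = measure_pmf.expectation (S G g t) (\<lambda>s. ?ik s * Bf (fst s, others i (snd s)))"
    have "L0 * PK G g \<iota>1 \<iota> i t k0 = (pmf (\<rho> t k0) a0 * EB) * PK G g \<iota>1 \<iota> i t k0"
      using IND unfolding Pk E1 L0_def[symmetric] EB_def[symmetric] c[symmetric] by (simp add: mult_ac)
    then have "L0 = pmf (\<rho> t k0) a0 * EB" using True by simp
    then show ?thesis unfolding L R L0_def EB_def .
  next
    case False
    then have P0: "PK G g \<iota>1 \<iota> i t k0 = 0" unfolding PK_def by (simp add: order.strict_iff_order)
    have z: "s \<in> set_pmf (S G g t) \<Longrightarrow> ?ik s = 0" for s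
      using not_in_support_if_zero[OF P0[unfolded PK_def]] by (auto simp: indicator_def)
    have "measure_pmf.expectation (S G g t) (\<lambda>s. ?ik s * Af (snd s i) * Bf (fst s, others i (snd s))) = 0"
      by (subst integral_cong_pmf[where g="\<lambda>_. 0"]) (auto simp: z)
    moreover have "measure_pmf.expectation (S G g t) (\<lambda>s. ?ik s * Bf (fst s, others i (snd s))) = 0"
      by (subst integral_cong_pmf[where g="\<lambda>_. 0"]) (auto simp: z)
    ultimately show ?thesis unfolding L R by simp
  qed
qed

end

context
  fixes G :: "('i::finite,'x::finite,'u::finite,'z::finite,'w::finite,'h::finite,'m) game_scheme"
    and \<iota>1 :: "'i \<Rightarrow> 'h \<Rightarrow> 'k" and \<iota> :: "nat \<Rightarrow> 'i \<Rightarrow> 'k \<Rightarrow> 'z \<Rightarrow> 'k" and i :: 'i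
begin

lemma PROJ:
  fixes g :: "('i,'h,'z,'u) profile" and \<rho> :: "nat \<Rightarrow> 'k \<Rightarrow> 'u pmf"
  assumes pS: "prodS G g \<iota>1 \<iota> i" and cons: "consis G g \<iota>1 \<iota> i \<rho>"
  defines "g' \<equiv> g(i := Kbased \<iota>1 \<iota> i \<rho>)"
  shows "1 \<le> t \<Longrightarrow> t \<le> gm_T G \<Longrightarrow> map_pmf (proj \<iota>1 \<iota> i) (S G g t) = map_pmf (proj \<iota>1 \<iota> i) (S G g' t)"
proof (induction t rule: nat_induct_at_least)
  case base
  show ?case using S_1[of G g] S_1[of G g'] by simp
next
  case (Suc t)
  have t: "t \<in> {1..gm_T G}" using Suc by auto
  have oth: "\<And>j. j \<noteq> i \<Longrightarrow> g' j = g j" unfolding g'_def by simp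
  have gi: "g' i t h = \<rho> t (compress \<iota>1 \<iota> i h)" for h unfolding g'_def Kbased_def by simp
  have "map_pmf (proj \<iota>1 \<iota> i) (S G g (Suc t)) = bind_pmf (S G g t) (\<lambda>s. map_pmf (proj \<iota>1 \<iota> i) (stepS G g t s))"
    using Suc by (simp add: S_Suc map_bind_pmf)
  also have "\<dots> = bind_pmf (S G g t) (\<lambda>s. bind_pmf (g i t (snd s i)) (NX G g \<iota> i t (proj \<iota>1 \<iota> i s)))"
    by (intro bind_pmf_cong refl stepS_proj S_support_wf) (use Suc in auto)
  also have "\<dots> = bind_pmf (bind_pmf (S G g t) (\<lambda>s. map_pmf (\<lambda>a. (proj \<iota>1 \<iota> i s, a)) (g i t (snd s i))))
                  (\<lambda>pa. NX G g \<iota> i t (fst pa) (snd pa))"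
    by (simp add: bind_assoc_pmf bind_map_pmf)
  also have "\<dots> = bind_pmf (bind_pmf (map_pmf (proj \<iota>1 \<iota> i) (S G g t)) (\<lambda>p. map_pmf (\<lambda>a. (p, a)) (\<rho> t (snd (snd p)))))
                  (\<lambda>pa. NX G g \<iota> i t (fst pa) (snd pa))"
    by (simp only: KI[OF pS cons t])
  also have "\<dots> = bind_pmf (map_pmf (proj \<iota>1 \<iota> i) (S G g t)) (\<lambda>p. bind_pmf (\<rho> t (snd (snd p))) (NX G g \<iota> i t p))"
    by (simp add: bind_assoc_pmf bind_map_pmf)
  also have "\<dots> = bind_pmf (map_pmf (proj \<iota>1 \<iota> i) (S G g' t)) (\<lambda>p. bind_pmf (\<rho> t (snd (snd p))) (NX G g \<iota> i t p))"
    using Suc by simp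
  also have "\<dots> = bind_pmf (S G g' t) (\<lambda>s. bind_pmf (g' i t (snd s i)) (NX G g' \<iota> i t (proj \<iota>1 \<iota> i s)))"
  proof -
    have nx: "NX G g' \<iota> i t = NX G g \<iota> i t" by (intro ext NX_cong oth)
    show ?thesis by (simp add: bind_map_pmf gi nx proj_def)
  qed
  also have "\<dots> = bind_pmf (S G g' t) (\<lambda>s. map_pmf (proj \<iota>1 \<iota> i) (stepS G g' t s))"
    by (intro bind_pmf_cong refl stepS_proj[symmetric] S_support_wf) (use Suc in auto)
  also have "\<dots> = map_pmf (proj \<iota>1 \<iota> i) (S G g' (Suc t))"
    using Suc by (simp add: S_Suc map_bind_pmf)
  finally show ?case .
qed

lemma PE:
  fixes g :: "('i,'h,'z,'u) profile" and \<rho> :: "nat \<Rightarrow> 'k \<Rightarrow> 'u pmf"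
  assumes pS: "prodS G g \<iota>1 \<iota> i" and cons: "consis G g \<iota>1 \<iota> i \<rho>"
  defines "g' \<equiv> g(i := Kbased \<iota>1 \<iota> i \<rho>)"
  assumes t: "1 \<le> t" "t \<le> gm_T G"
  shows "map_pmf (pe i) (map_pmf (\<lambda>tr. tr ! (t - 1)) (run G g)) = map_pmf (pe i) (map_pmf (\<lambda>tr. tr ! (t - 1)) (run G g'))"
proof -
  have t': "t \<in> {1..gm_T G}" using t by auto
  have oth: "\<And>j. j \<noteq> i \<Longrightarrow> g' j = g j" unfolding g'_def by simp
  have gi: "g' i t h = \<rho> t (compress \<iota>1 \<iota> i h)" for h unfolding g'_def Kbased_def by simp
  have "map_pmf (pe i) (map_pmf (\<lambda>tr. tr ! (t - 1)) (run G g)) = bind_pmf (S G g t) (\<lambda>s. map_pmf (pe i) (ent G g t s))"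
    by (simp only: snapshot[OF t] map_bind_pmf)
  also have "\<dots> = bind_pmf (S G g t) (\<lambda>s. bind_pmf (g i t (snd s i)) (EN G g i t (proj \<iota>1 \<iota> i s)))"
    by (intro bind_pmf_cong refl ent_proj)
  also have "\<dots> = bind_pmf (bind_pmf (S G g t) (\<lambda>s. map_pmf (\<lambda>a. (proj \<iota>1 \<iota> i s, a)) (g i t (snd s i))))
                  (\<lambda>pa. EN G g i t (fst pa) (snd pa))"
    by (simp add: bind_assoc_pmf bind_map_pmf)
  also have "\<dots> = bind_pmf (bind_pmf (map_pmf (proj \<iota>1 \<iota> i) (S G g t)) (\<lambda>p. map_pmf (\<lambda>a. (p, a)) (\<rho> t (snd (snd p)))))
                  (\<lambda>pa. EN G g i t (fst pa) (snd pa))"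
    by (simp only: KI[OF pS cons t'])
  also have "\<dots> = bind_pmf (map_pmf (proj \<iota>1 \<iota> i) (S G g t)) (\<lambda>p. bind_pmf (\<rho> t (snd (snd p))) (EN G g i t p))"
    by (simp add: bind_assoc_pmf bind_map_pmf)
  also have "\<dots> = bind_pmf (map_pmf (proj \<iota>1 \<iota> i) (S G g' t)) (\<lambda>p. bind_pmf (\<rho> t (snd (snd p))) (EN G g i t p))"
    using PROJ[OF pS cons t] unfolding g'_def by simp
  also have "\<dots> = bind_pmf (S G g' t) (\<lambda>s. bind_pmf (g' i t (snd s i)) (EN G g' i t (proj \<iota>1 \<iota> i s)))"
  proof -
    have en: "EN G g' i t = EN G g i t" by (intro ext EN_cong oth)
    show ?thesis by (simp add: bind_map_pmf gi en proj_def)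
  qed
  also have "\<dots> = bind_pmf (S G g' t) (\<lambda>s. map_pmf (pe i) (ent G g' t s))"
    by (intro bind_pmf_cong refl ent_proj[symmetric])
  also have "\<dots> = map_pmf (pe i) (map_pmf (\<lambda>tr. tr ! (t - 1)) (run G g'))"
    by (simp only: snapshot[OF t] map_bind_pmf)
  finally show ?thesis .
qed

end

definition psi where
  "psi G j \<tau> h u t q = (if fst (fst (snd q) j) = fst h \<and> take (\<tau> - 1) (snd (fst (snd q) j)) = snd h \<and>
       (if t = \<tau> then fst (snd (snd q)) j = u else gm_act G \<tau> j (snd (fst (snd q) j) ! (\<tau> - 1)) = u)
     then snd (snd (snd q)) j else (0::real))"

definition Qc where
  "Qc G g j \<tau> h u = cond_E G g (\<lambda>tr. \<Sum>t\<in>{\<tau>..gm_T G}. rvR tr t j) {tr. rvH tr \<tau> j = h \<and> rvU tr \<tau> j = u}"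

context
  fixes G :: "('i::finite,'x::finite,'u::finite,'z::finite,'w::finite,'h::finite,'m) game_scheme"
    and \<iota>1 :: "'i \<Rightarrow> 'h \<Rightarrow> 'k" and \<iota> :: "nat \<Rightarrow> 'i \<Rightarrow> 'k \<Rightarrow> 'z \<Rightarrow> 'k" and i :: 'i
begin

lemma integrable_run: "integrable (measure_pmf (run G g)) (f :: _ \<Rightarrow> real)"
  by (rule integrable_measure_pmf_finite[OF finite_run])

lemma J_sum: "J G g j = (\<Sum>t\<in>{1..gm_T G}. measure_pmf.expectation (run G g) (\<lambda>tr. rvR tr t j))"
  unfolding J_def by (rule Bochner_Integration.integral_sum) (rule integrable_run)

lemma E_nth:
  fixes F :: "_ \<Rightarrow> real"
  shows "measure_pmf.expectation (run G g) (\<lambda>tr. F (pe i (tr ! (t - 1)))) =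
    measure_pmf.expectation (map_pmf (pe i) (map_pmf (\<lambda>tr. tr ! (t - 1)) (run G g))) F"
  by simp

lemma J_eq:
  fixes g :: "('i,'h,'z,'u) profile" and \<rho> :: "nat \<Rightarrow> 'k \<Rightarrow> 'u pmf"
  assumes pS: "prodS G g \<iota>1 \<iota> i" and cons: "consis G g \<iota>1 \<iota> i \<rho>"
  shows "J G (g(i := Kbased \<iota>1 \<iota> i \<rho>)) j = J G g j"
proof -
  have "measure_pmf.expectation (run G g) (\<lambda>tr. rvR tr t j) =
        measure_pmf.expectation (run G (g(i := Kbased \<iota>1 \<iota> i \<rho>))) (\<lambda>tr. rvR tr t j)"
    if t: "t \<in> {1..gm_T G}" for t
  proof -
    have "measure_pmf.expectation (run G g) (\<lambda>tr. rvR tr t j) =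
       measure_pmf.expectation (run G g) (\<lambda>tr. (\<lambda>q. snd (snd (snd q)) j) (pe i (tr ! (t - 1))))"
      by (simp add: rvR_def pe_def)
    also have "\<dots> = measure_pmf.expectation (map_pmf (pe i) (map_pmf (\<lambda>tr. tr ! (t - 1)) (run G g))) (\<lambda>q. snd (snd (snd q)) j)"
      by (rule E_nth)
    also have "\<dots> = measure_pmf.expectation (map_pmf (pe i) (map_pmf (\<lambda>tr. tr ! (t - 1)) (run G (g(i := Kbased \<iota>1 \<iota> i \<rho>))))) (\<lambda>q. snd (snd (snd q)) j)"
      using PE[OF pS cons] t by simp
    also have "\<dots> = measure_pmf.expectation (run G (g(i := Kbased \<iota>1 \<iota> i \<rho>))) (\<lambda>tr. rvR tr t j)"
      by (simp add: rvR_def pe_def)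
    finally show ?thesis .
  qed
  then show ?thesis unfolding J_sum by simp
qed

lemma num_other:
  fixes g :: "('i,'h,'z,'u) profile"
  assumes wf: "wf_game G" and vp: "valid_profile G g" and ji: "j \<noteq> i"
    and \<tau>: "1 \<le> \<tau>" "\<tau> \<le> gm_T G" and t: "\<tau> \<le> t" "t \<le> gm_T G"
  shows "measure_pmf.expectation (run G g) (\<lambda>tr. indicator {tr. rvH tr \<tau> j = h \<and> rvU tr \<tau> j = u} tr * rvR tr t j) =
         measure_pmf.expectation (map_pmf (pe i) (map_pmf (\<lambda>tr. tr ! (t - 1)) (run G g))) (psi G j \<tau> h u t)"
proof -
  have "measure_pmf.expectation (run G g) (\<lambda>tr. indicator {tr. rvH tr \<tau> j = h \<and> rvU tr \<tau> j = u} tr * rvR tr t j) =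
        measure_pmf.expectation (run G g) (\<lambda>tr. psi G j \<tau> h u t (pe i (tr ! (t - 1))))"
  proof (rule integral_cong_pmf)
    fix tr assume tr: "tr \<in> set_pmf (run G g)"
    have pr: "rvH tr \<tau> j = (fst (rvH tr t j), take (\<tau> - 1) (snd (rvH tr t j)))"
      by (rule perfect_recall[OF wf vp tr]) (use \<tau> t in auto)
    have ar: "t \<noteq> \<tau> \<Longrightarrow> rvU tr \<tau> j = gm_act G \<tau> j (snd (rvH tr t j) ! (\<tau> - 1))"
      by (rule act_recall[OF wf vp tr]) (use \<tau> t in auto)
    have o: "others i (fst (snd (tr ! (t - 1)))) j = rvH tr t j" using ji by (simp add: others_def rvH_def)
    show "indicator {tr. rvH tr \<tau> j = h \<and> rvU tr \<tau> j = u} tr * rvR tr t j = psi G j \<tau> h u t (pe i (tr ! (t - 1)))"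
      unfolding psi_def pe_def fst_conv snd_conv o
      using pr ar by (cases "t = \<tau>") (auto simp: indicator_def rvU_def rvR_def prod_eq_iff)
  qed
  then show ?thesis by simp
qed

lemma Pr_other:
  fixes g :: "('i,'h,'z,'u) profile" and \<rho> :: "nat \<Rightarrow> 'k \<Rightarrow> 'u pmf"
  assumes pS: "prodS G g \<iota>1 \<iota> i" and cons: "consis G g \<iota>1 \<iota> i \<rho>" and ji: "j \<noteq> i"
    and \<tau>: "1 \<le> \<tau>" "\<tau> \<le> gm_T G"
  shows "Pr G (g(i := Kbased \<iota>1 \<iota> i \<rho>)) {tr. rvH tr \<tau> j = h \<and> rvU tr \<tau> j = u} = Pr G g {tr. rvH tr \<tau> j = h \<and> rvU tr \<tau> j = u}"
proof -
  have "PrH G g' \<tau> j h = PrH G g \<tau> j h" if "g' = g(i := Kbased \<iota>1 \<iota> i \<rho>)" for g'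
  proof -
    have "PrH G g \<tau> j h = measure_pmf.prob (map_pmf (proj \<iota>1 \<iota> i) (S G g \<tau>)) {p. fst (snd p) j = h}"
      unfolding PrH_def using ji by (simp add: proj_def others_def vimage_def)
    also have "\<dots> = measure_pmf.prob (map_pmf (proj \<iota>1 \<iota> i) (S G g' \<tau>)) {p. fst (snd p) j = h}"
      using PROJ[OF pS cons] \<tau> that by simp
    also have "\<dots> = PrH G g' \<tau> j h"
      unfolding PrH_def using ji by (simp add: proj_def others_def vimage_def)
    finally show ?thesis ..
  qed
  then show ?thesis using ji \<tau> by (simp add: Pev_eq)
qed

lemma Qc_other:
  fixes g :: "('i,'h,'z,'u) profile" and \<rho> :: "nat \<Rightarrow> 'k \<Rightarrow> 'u pmf"
  assumes wf: "wf_game G" and vp: "valid_profile G g" and vp': "valid_profile G (g(i := Kbased \<iota>1 \<iota> i \<rho>))"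
    and pS: "prodS G g \<iota>1 \<iota> i" and cons: "consis G g \<iota>1 \<iota> i \<rho>" and ji: "j \<noteq> i"
    and \<tau>: "1 \<le> \<tau>" "\<tau> \<le> gm_T G"
  shows "Qc G (g(i := Kbased \<iota>1 \<iota> i \<rho>)) j \<tau> h u = Qc G g j \<tau> h u"
proof -
  let ?g' = "g(i := Kbased \<iota>1 \<iota> i \<rho>)"
  have num: "measure_pmf.expectation (run G gg) (\<lambda>tr. indicator {tr. rvH tr \<tau> j = h \<and> rvU tr \<tau> j = u} tr * (\<Sum>t\<in>{\<tau>..gm_T G}. rvR tr t j)) =
     (\<Sum>t\<in>{\<tau>..gm_T G}. measure_pmf.expectation (map_pmf (pe i) (map_pmf (\<lambda>tr. tr ! (t - 1)) (run G gg))) (psi G j \<tau> h u t))"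
    if "valid_profile G gg" for gg
  proof -
    have "measure_pmf.expectation (run G gg) (\<lambda>tr. indicator {tr. rvH tr \<tau> j = h \<and> rvU tr \<tau> j = u} tr * (\<Sum>t\<in>{\<tau>..gm_T G}. rvR tr t j)) =
       measure_pmf.expectation (run G gg) (\<lambda>tr. \<Sum>t\<in>{\<tau>..gm_T G}. indicator {tr. rvH tr \<tau> j = h \<and> rvU tr \<tau> j = u} tr * rvR tr t j)"
      by (simp add: sum_distrib_left)
    also have "\<dots> = (\<Sum>t\<in>{\<tau>..gm_T G}. measure_pmf.expectation (run G gg) (\<lambda>tr. indicator {tr. rvH tr \<tau> j = h \<and> rvU tr \<tau> j = u} tr * rvR tr t j))"
      by (rule Bochner_Integration.integral_sum) (rule integrable_run)
    also have "\<dots> = (\<Sum>t\<in>{\<tau>..gm_T G}. measure_pmf.expectation (map_pmf (pe i) (map_pmf (\<lambda>tr. tr ! (t - 1)) (run G gg))) (psi G j \<tau> h u t))"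
      by (intro sum.cong refl num_other[OF wf that ji \<tau>]) auto
    finally show ?thesis .
  qed
  have "(\<Sum>t\<in>{\<tau>..gm_T G}. measure_pmf.expectation (map_pmf (pe i) (map_pmf (\<lambda>tr. tr ! (t - 1)) (run G g))) (psi G j \<tau> h u t)) =
        (\<Sum>t\<in>{\<tau>..gm_T G}. measure_pmf.expectation (map_pmf (pe i) (map_pmf (\<lambda>tr. tr ! (t - 1)) (run G ?g'))) (psi G j \<tau> h u t))"
    by (intro sum.cong refl) (use PE[OF pS cons] \<tau> in auto)
  then show ?thesis
    unfolding Qc_def cond_E_def num[OF vp] num[OF vp'] Pr_other[OF pS cons ji \<tau>] by simp
qed

end

definition XiR where
  "XiR G g \<iota>1 \<iota> i \<tau> k u = measure_pmf.expectation (S G g \<tau>)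
     (\<lambda>s. indicator {h. compress \<iota>1 \<iota> i h = k} (snd s i) * BR G g \<tau> i (fst s) (others i (snd s)) u) / PK G g \<iota>1 \<iota> i \<tau> k"

definition XiZ where
  "XiZ G g \<iota>1 \<iota> i \<tau> k z = measure_pmf.expectation (S G g \<tau>)
     (\<lambda>s. indicator {h. compress \<iota>1 \<iota> i h = k} (snd s i) * BZ G g \<tau> i (fst s) (others i (snd s)) (gm_act G \<tau> i z) z) / PK G g \<iota>1 \<iota> i \<tau> k"

context
  fixes G :: "('i::finite,'x::finite,'u::finite,'z::finite,'w::finite,'h::finite,'m) game_scheme"
    and \<iota>1 :: "'i \<Rightarrow> 'h \<Rightarrow> 'k" and \<iota> :: "nat \<Rightarrow> 'i \<Rightarrow> 'k \<Rightarrow> 'z \<Rightarrow> 'k" and i :: 'i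
begin

lemma fac:
  fixes g :: "('i,'h,'z,'u) profile" and B :: "'x \<times> ('i \<Rightarrow> ('h,'z) hist) \<Rightarrow> real"
  assumes pS: "prodS G g \<iota>1 \<iota> i" and t: "t \<in> {1..gm_T G}"
  shows "measure_pmf.expectation (S G g t) (\<lambda>s. indicator {s. snd s i = h} s * B (fst s, others i (snd s))) =
    PrH G g t i h * (measure_pmf.expectation (S G g t) (\<lambda>s. indicator {h'. compress \<iota>1 \<iota> i h' = compress \<iota>1 \<iota> i h} (snd s i) * B (fst s, others i (snd s)))
       / PK G g \<iota>1 \<iota> i t (compress \<iota>1 \<iota> i h))"
proof -
  define k where "k = compress \<iota>1 \<iota> i h"
  obtain Fk \<Phi>k where FP: "\<forall>t\<in>{1..gm_T G}. \<forall>k x hs.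
     pmf (S G g t) (x,hs) * indicator {h. compress \<iota>1 \<iota> i h = k} (hs i) =
     measure_pmf.prob (S G g t) {s. compress \<iota>1 \<iota> i (snd s i) = k} * Fk t k (hs i) * \<Phi>k t k (x, others i hs)"
    using pS unfolding prodS_def by blast
  let ?ik = "\<lambda>s::'x \<times> ('i \<Rightarrow> ('h,'z) hist). indicator {h'. compress \<iota>1 \<iota> i h' = k} (snd s i) :: real"
  let ?ih = "\<lambda>h'. indicator {h} h' :: real"
  have IND: "measure_pmf.expectation (S G g t) (\<lambda>s. ?ik s * ?ih (snd s i) * B (fst s, others i (snd s))) *
         measure_pmf.expectation (S G g t) ?ik =
         measure_pmf.expectation (S G g t) (\<lambda>s. ?ik s * ?ih (snd s i)) *
         measure_pmf.expectation (S G g t) (\<lambda>s. ?ik s * B (fst s, others i (snd s)))"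
    by (rule IND_S[OF FP t])
  have e1: "(\<lambda>s. ?ik s * ?ih (snd s i) * B (fst s, others i (snd s))) = (\<lambda>s. indicator {s. snd s i = h} s * B (fst s, others i (snd s)))"
    by (auto simp: indicator_def k_def fun_eq_iff)
  have e2: "measure_pmf.expectation (S G g t) (\<lambda>s. ?ik s * ?ih (snd s i)) = PrH G g t i h"
  proof -
    have "(\<lambda>s. ?ik s * ?ih (snd s i)) = indicator {s. snd s i = h}" by (auto simp: indicator_def k_def fun_eq_iff)
    then show ?thesis unfolding PrH_def by simp
  qed
  have e3: "measure_pmf.expectation (S G g t) ?ik = PK G g \<iota>1 \<iota> i t k"
  proof -
    have "?ik = indicator {s. compress \<iota>1 \<iota> i (snd s i) = k}" by (auto simp: indicator_def fun_eq_iff)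
    then show ?thesis unfolding PK_def by simp
  qed
  show ?thesis
  proof (cases "PK G g \<iota>1 \<iota> i t k = 0")
    case True
    have z: "s \<in> set_pmf (S G g t) \<Longrightarrow> compress \<iota>1 \<iota> i (snd s i) \<noteq> k" for s
      using not_in_support_if_zero[OF True[unfolded PK_def]] by auto
    have "measure_pmf.expectation (S G g t) (\<lambda>s. indicator {s. snd s i = h} s * B (fst s, others i (snd s))) = 0"
      by (subst integral_cong_pmf[where g="\<lambda>_. 0"]) (auto simp: indicator_def k_def dest: z)
    then show ?thesis using True unfolding k_def by simp
  next
    case False
    then show ?thesis using IND unfolding e1 e2 e3 k_def[symmetric] by (simp add: field_simps)
  qed
qed

lemma R_fac:
  fixes g :: "('i,'h,'z,'u) profile"
  assumes pS: "prodS G g \<iota>1 \<iota> i" and t: "1 \<le> \<tau>" "\<tau> \<le> gm_T G"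
  shows "measure_pmf.expectation (run G g) (\<lambda>tr. indicator {tr. rvH tr \<tau> i = h \<and> rvU tr \<tau> i = u} tr * rvR tr \<tau> i) =
    pmf (g i \<tau> h) u * PrH G g \<tau> i h * XiR G g \<iota>1 \<iota> i \<tau> (compress \<iota>1 \<iota> i h) u"
proof -
  have "measure_pmf.expectation (S G g \<tau>) (\<lambda>s. indicator {s. snd s i = h} s * BR G g \<tau> i (fst s) (snd s) u) =
        measure_pmf.expectation (S G g \<tau>) (\<lambda>s. indicator {s. snd s i = h} s * (\<lambda>p. BR G g \<tau> i (fst p) (snd p) u) (fst s, others i (snd s)))"
    by (simp add: BR_others)
  also have "\<dots> = PrH G g \<tau> i h * XiR G g \<iota>1 \<iota> i \<tau> (compress \<iota>1 \<iota> i h) u"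
    using fac[OF pS, where t=\<tau> and h=h and B="\<lambda>p. BR G g \<tau> i (fst p) (snd p) u"] t unfolding XiR_def by simp
  finally show ?thesis unfolding R_num[OF t] by simp
qed

lemma Z_fac:
  fixes g :: "('i,'h,'z,'u) profile"
  assumes wf: "wf_game G" and vp: "valid_profile G g" and pS: "prodS G g \<iota>1 \<iota> i" and t: "1 \<le> \<tau>" "\<tau> < gm_T G"
  shows "PrH G g (Suc \<tau>) i (fst h, snd h @ [z]) =
    pmf (g i \<tau> h) (gm_act G \<tau> i z) * PrH G g \<tau> i h * XiZ G g \<iota>1 \<iota> i \<tau> (compress \<iota>1 \<iota> i h) z"
proof -
  have "measure_pmf.expectation (S G g \<tau>) (\<lambda>s. indicator {s. snd s i = h} s * BZ G g \<tau> i (fst s) (snd s) (gm_act G \<tau> i z) z) =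
        measure_pmf.expectation (S G g \<tau>) (\<lambda>s. indicator {s. snd s i = h} s * (\<lambda>p. BZ G g \<tau> i (fst p) (snd p) (gm_act G \<tau> i z) z) (fst s, others i (snd s)))"
    by (simp add: BZ_others)
  also have "\<dots> = PrH G g \<tau> i h * XiZ G g \<iota>1 \<iota> i \<tau> (compress \<iota>1 \<iota> i h) z"
    using fac[OF pS, where t=\<tau> and h=h and B="\<lambda>p. BZ G g \<tau> i (fst p) (snd p) (gm_act G \<tau> i z) z"] t unfolding XiZ_def by simp
  finally show ?thesis unfolding Z_lemma[OF wf vp t] by simp
qed

lemma Xi_inv:
  fixes g :: "('i,'h,'z,'u) profile" and \<rho> :: "nat \<Rightarrow> 'k \<Rightarrow> 'u pmf"
  assumes pS: "prodS G g \<iota>1 \<iota> i" and cons: "consis G g \<iota>1 \<iota> i \<rho>" and t: "1 \<le> \<tau>" "\<tau> \<le> gm_T G"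
  shows "XiR G (g(i := Kbased \<iota>1 \<iota> i \<rho>)) \<iota>1 \<iota> i \<tau> k u = XiR G g \<iota>1 \<iota> i \<tau> k u"
    and "XiZ G (g(i := Kbased \<iota>1 \<iota> i \<rho>)) \<iota>1 \<iota> i \<tau> k z = XiZ G g \<iota>1 \<iota> i \<tau> k z"
    and "PK G (g(i := Kbased \<iota>1 \<iota> i \<rho>)) \<iota>1 \<iota> i \<tau> k = PK G g \<iota>1 \<iota> i \<tau> k"
proof -
  let ?g' = "g(i := Kbased \<iota>1 \<iota> i \<rho>)"
  have P: "map_pmf (proj \<iota>1 \<iota> i) (S G g \<tau>) = map_pmf (proj \<iota>1 \<iota> i) (S G ?g' \<tau>)"
    using PROJ[OF pS cons] t by simp
  have oth: "\<And>j. j \<noteq> i \<Longrightarrow> ?g' j \<tau> = g j \<tau>" by simp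
  have gen: "measure_pmf.expectation (S G gg \<tau>) (\<lambda>s. indicator {h. compress \<iota>1 \<iota> i h = k} (snd s i) * F (fst s) (others i (snd s))) =
     measure_pmf.expectation (map_pmf (proj \<iota>1 \<iota> i) (S G gg \<tau>)) (\<lambda>p. indicator {k} (snd (snd p)) * F (fst p) (fst (snd p)))"
    for gg :: "('i,'h,'z,'u) profile" and F :: "'x \<Rightarrow> ('i \<Rightarrow> ('h,'z) hist) \<Rightarrow> real"
    by (simp add: proj_def indicator_def)
  have genP: "PK G gg \<iota>1 \<iota> i \<tau> k = measure_pmf.prob (map_pmf (proj \<iota>1 \<iota> i) (S G gg \<tau>)) {p. snd (snd p) = k}"
    for gg :: "('i,'h,'z,'u) profile"
    unfolding PK_def by (simp add: proj_def vimage_def)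
  show "PK G ?g' \<iota>1 \<iota> i \<tau> k = PK G g \<iota>1 \<iota> i \<tau> k" unfolding genP P ..
  have br: "BR G ?g' \<tau> i x o' a = BR G g \<tau> i x o' a" for x o' a by (rule BR_cong) simp
  have bz: "BZ G ?g' \<tau> i x o' a z' = BZ G g \<tau> i x o' a z'" for x o' a z' by (rule BZ_cong) simp
  show "XiR G ?g' \<iota>1 \<iota> i \<tau> k u = XiR G g \<iota>1 \<iota> i \<tau> k u"
    unfolding XiR_def br gen[where gg="?g'" and F="\<lambda>x o'. BR G g \<tau> i x o' u"] gen[where gg=g and F="\<lambda>x o'. BR G g \<tau> i x o' u"] genP P ..
  show "XiZ G ?g' \<iota>1 \<iota> i \<tau> k z = XiZ G g \<iota>1 \<iota> i \<tau> k z"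
    unfolding XiZ_def bz gen[where gg="?g'" and F="\<lambda>x o'. BZ G g \<tau> i x o' (gm_act G \<tau> i z) z"] gen[where gg=g and F="\<lambda>x o'. BZ G g \<tau> i x o' (gm_act G \<tau> i z) z"] genP P ..
qed

end

definition NumE where
  "NumE G g j \<tau> h u = measure_pmf.expectation (run G g)
     (\<lambda>tr. indicator {tr. rvH tr \<tau> j = h \<and> rvU tr \<tau> j = u} tr * (\<Sum>t\<in>{\<tau>..gm_T G}. rvR tr t j))"

lemma Qc_NumE: "Qc G g j \<tau> h u = NumE G g j \<tau> h u / Pr G g {tr. rvH tr \<tau> j = h \<and> rvU tr \<tau> j = u}"
  unfolding Qc_def NumE_def cond_E_def ..

lemma zero_ind:
  fixes Y :: "_ \<Rightarrow> real"
  assumes "Pr G g B = 0"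
  shows "measure_pmf.expectation (run G g) (\<lambda>tr. indicator B tr * Y tr) = 0"
proof -
  have "tr \<in> set_pmf (run G g) \<Longrightarrow> tr \<notin> B" for tr
    using measure_pmf_posI[of tr "run G g" B] assms unfolding Pr_def by auto
  then show ?thesis by (subst integral_cong_pmf[where g="\<lambda>_. 0"]) auto
qed

lemma NumE_Qc: "NumE G g j \<tau> h u = Pr G g {tr. rvH tr \<tau> j = h \<and> rvU tr \<tau> j = u} * Qc G g j \<tau> h u"
proof (cases "Pr G g {tr. rvH tr \<tau> j = h \<and> rvU tr \<tau> j = u} = 0")
  case True
  then show ?thesis unfolding NumE_def using zero_ind[OF True] by simp
qed (simp add: Qc_NumE)

context
  fixes G :: "('i::finite,'x::finite,'u::finite,'z::finite,'w::finite,'h::finite,'m) game_scheme"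
    and \<iota>1 :: "'i \<Rightarrow> 'h \<Rightarrow> 'k" and \<iota> :: "nat \<Rightarrow> 'i \<Rightarrow> 'k \<Rightarrow> 'z \<Rightarrow> 'k" and i :: 'i
begin

lemma ind_split:
  fixes g :: "('i,'h,'z,'u) profile"
  assumes wf: "wf_game G" and vp: "valid_profile G g" and tr: "tr \<in> set_pmf (run G g)"
    and t: "1 \<le> \<tau>" "\<tau> < gm_T G"
  shows "indicator {tr. rvH tr \<tau> i = h \<and> rvU tr \<tau> i = u} tr =
    (\<Sum>z\<in>{z. gm_act G \<tau> i z = u}. \<Sum>u'\<in>UNIV. indicator {tr. rvH tr (Suc \<tau>) i = (fst h, snd h @ [z]) \<and> rvU tr (Suc \<tau>) i = u'} tr :: real)"
proof -
  obtain z0 where z0: "gm_act G \<tau> i z0 = rvU tr \<tau> i" "rvH tr (Suc \<tau>) i = (fst (rvH tr \<tau> i), snd (rvH tr \<tau> i) @ [z0])"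
    using next_hist[OF wf vp tr t, of i] by blast
  have inner: "(\<Sum>u'\<in>UNIV. indicator {tr. rvH tr (Suc \<tau>) i = hh \<and> rvU tr (Suc \<tau>) i = u'} tr :: real) =
      (if rvH tr (Suc \<tau>) i = hh then 1 else 0)" for hh
  proof -
    have "(\<Sum>u'\<in>UNIV. indicator {tr. rvH tr (Suc \<tau>) i = hh \<and> rvU tr (Suc \<tau>) i = u'} tr :: real) =
        (\<Sum>u'\<in>UNIV. if u' = rvU tr (Suc \<tau>) i then (if rvH tr (Suc \<tau>) i = hh then 1 else 0) else 0)"
      by (intro sum.cong refl) (auto simp: indicator_def)
    also have "\<dots> = (if rvH tr (Suc \<tau>) i = hh then 1 else 0)" by (subst sum.delta) auto
    finally show ?thesis .
  qed
  have "(\<Sum>z\<in>{z. gm_act G \<tau> i z = u}. \<Sum>u'\<in>UNIV. indicator {tr. rvH tr (Suc \<tau>) i = (fst h, snd h @ [z]) \<and> rvU tr (Suc \<tau>) i = u'} tr :: real)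
      = (\<Sum>z\<in>{z. gm_act G \<tau> i z = u}. if z = z0 then (if rvH tr \<tau> i = h then 1 else 0) else 0)"
    unfolding inner z0 by (intro sum.cong refl) (auto simp: prod_eq_iff)
  also have "\<dots> = (if z0 \<in> {z. gm_act G \<tau> i z = u} then (if rvH tr \<tau> i = h then 1 else 0) else 0)"
    by (subst sum.delta) auto
  also have "\<dots> = indicator {tr. rvH tr \<tau> i = h \<and> rvU tr \<tau> i = u} tr"
    using z0 by (auto simp: indicator_def)
  finally show ?thesis ..
qed

lemma DP_T:
  fixes g :: "('i,'h,'z,'u) profile"
  assumes pS: "prodS G g \<iota>1 \<iota> i" and T: "1 \<le> gm_T G"
    and pos: "Pr G g {tr. rvH tr (gm_T G) i = h \<and> rvU tr (gm_T G) i = u} > 0"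
  shows "Qc G g i (gm_T G) h u = XiR G g \<iota>1 \<iota> i (gm_T G) (compress \<iota>1 \<iota> i h) u"
proof -
  have "NumE G g i (gm_T G) h u = pmf (g i (gm_T G) h) u * PrH G g (gm_T G) i h * XiR G g \<iota>1 \<iota> i (gm_T G) (compress \<iota>1 \<iota> i h) u"
    unfolding NumE_def using R_fac[OF pS T order.refl, of h u] by simp
  moreover have "Pr G g {tr. rvH tr (gm_T G) i = h \<and> rvU tr (gm_T G) i = u} = PrH G g (gm_T G) i h * pmf (g i (gm_T G) h) u"
    using Pev_eq[OF T order.refl] by simp
  ultimately show ?thesis unfolding Qc_NumE using pos by (auto simp: field_simps)
qed

lemma DP_step:
  fixes g :: "('i,'h,'z,'u) profile"
  assumes wf: "wf_game G" and vp: "valid_profile G g" and pS: "prodS G g \<iota>1 \<iota> i"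
    and t: "1 \<le> \<tau>" "\<tau> < gm_T G"
    and pos: "Pr G g {tr. rvH tr \<tau> i = h \<and> rvU tr \<tau> i = u} > 0"
  shows "Qc G g i \<tau> h u = XiR G g \<iota>1 \<iota> i \<tau> (compress \<iota>1 \<iota> i h) u +
     (\<Sum>z\<in>{z. gm_act G \<tau> i z = u}. XiZ G g \<iota>1 \<iota> i \<tau> (compress \<iota>1 \<iota> i h) z *
        (\<Sum>u'\<in>UNIV. pmf (g i (Suc \<tau>) (fst h, snd h @ [z])) u' * Qc G g i (Suc \<tau>) (fst h, snd h @ [z]) u'))"
proof -
  let ?P = "Pr G g {tr. rvH tr \<tau> i = h \<and> rvU tr \<tau> i = u}"
  let ?k = "compress \<iota>1 \<iota> i h"
  let ?B = "\<lambda>z u'. {tr. rvH tr (Suc \<tau>) i = (fst h, snd h @ [z]) \<and> rvU tr (Suc \<tau>) i = u'}"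
  have Pev: "?P = PrH G g \<tau> i h * pmf (g i \<tau> h) u" using Pev_eq[of \<tau> G g i h u] t by simp
  have split: "{\<tau>..gm_T G} = insert \<tau> {Suc \<tau>..gm_T G}" using t by auto
  have "NumE G g i \<tau> h u = measure_pmf.expectation (run G g)
     (\<lambda>tr. indicator {tr. rvH tr \<tau> i = h \<and> rvU tr \<tau> i = u} tr * rvR tr \<tau> i +
           indicator {tr. rvH tr \<tau> i = h \<and> rvU tr \<tau> i = u} tr * (\<Sum>t\<in>{Suc \<tau>..gm_T G}. rvR tr t i))"
    unfolding NumE_def split by (simp add: distrib_left)
  also have "\<dots> = measure_pmf.expectation (run G g) (\<lambda>tr. indicator {tr. rvH tr \<tau> i = h \<and> rvU tr \<tau> i = u} tr * rvR tr \<tau> i) +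
     measure_pmf.expectation (run G g) (\<lambda>tr. indicator {tr. rvH tr \<tau> i = h \<and> rvU tr \<tau> i = u} tr * (\<Sum>t\<in>{Suc \<tau>..gm_T G}. rvR tr t i))"
    by (rule Bochner_Integration.integral_add) (rule integrable_run)+
  also have "measure_pmf.expectation (run G g) (\<lambda>tr. indicator {tr. rvH tr \<tau> i = h \<and> rvU tr \<tau> i = u} tr * (\<Sum>t\<in>{Suc \<tau>..gm_T G}. rvR tr t i))
     = measure_pmf.expectation (run G g) (\<lambda>tr. \<Sum>z\<in>{z. gm_act G \<tau> i z = u}. \<Sum>u'\<in>UNIV. indicator (?B z u') tr * (\<Sum>t\<in>{Suc \<tau>..gm_T G}. rvR tr t i))"
    by (rule integral_cong_pmf) (simp add: ind_split[OF wf vp _ t] sum_distrib_right)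
  also have "\<dots> = (\<Sum>z\<in>{z. gm_act G \<tau> i z = u}. \<Sum>u'\<in>UNIV. NumE G g i (Suc \<tau>) (fst h, snd h @ [z]) u')"
    unfolding NumE_def
    by (subst Bochner_Integration.integral_sum, rule integrable_run, intro sum.cong refl,
        subst Bochner_Integration.integral_sum, rule integrable_run, simp)
  also have "\<dots> = (\<Sum>z\<in>{z. gm_act G \<tau> i z = u}. \<Sum>u'\<in>UNIV. ?P * XiZ G g \<iota>1 \<iota> i \<tau> ?k z *
        pmf (g i (Suc \<tau>) (fst h, snd h @ [z])) u' * Qc G g i (Suc \<tau>) (fst h, snd h @ [z]) u')"
  proof (intro sum.cong refl)
    fix z u' assume z: "z \<in> {z. gm_act G \<tau> i z = u}"
    have "Pr G g (?B z u') = PrH G g (Suc \<tau>) i (fst h, snd h @ [z]) * pmf (g i (Suc \<tau>) (fst h, snd h @ [z])) u'"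
      using Pev_eq[of "Suc \<tau>" G g i "(fst h, snd h @ [z])" u'] t by simp
    also have "\<dots> = ?P * XiZ G g \<iota>1 \<iota> i \<tau> ?k z * pmf (g i (Suc \<tau>) (fst h, snd h @ [z])) u'"
      unfolding Z_fac[OF wf vp pS t] Pev using z by simp
    finally show "NumE G g i (Suc \<tau>) (fst h, snd h @ [z]) u' = ?P * XiZ G g \<iota>1 \<iota> i \<tau> ?k z *
        pmf (g i (Suc \<tau>) (fst h, snd h @ [z])) u' * Qc G g i (Suc \<tau>) (fst h, snd h @ [z]) u'"
      unfolding NumE_Qc by simp
  qed
  finally have N: "NumE G g i \<tau> h u = pmf (g i \<tau> h) u * PrH G g \<tau> i h * XiR G g \<iota>1 \<iota> i \<tau> ?k u +
     (\<Sum>z\<in>{z. gm_act G \<tau> i z = u}. \<Sum>u'\<in>UNIV. ?P * XiZ G g \<iota>1 \<iota> i \<tau> ?k z *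
        pmf (g i (Suc \<tau>) (fst h, snd h @ [z])) u' * Qc G g i (Suc \<tau>) (fst h, snd h @ [z]) u')"
    unfolding R_fac[OF pS t(1) less_imp_le[OF t(2)]] .
  have "NumE G g i \<tau> h u = ?P * (XiR G g \<iota>1 \<iota> i \<tau> ?k u +
     (\<Sum>z\<in>{z. gm_act G \<tau> i z = u}. XiZ G g \<iota>1 \<iota> i \<tau> ?k z *
        (\<Sum>u'\<in>UNIV. pmf (g i (Suc \<tau>) (fst h, snd h @ [z])) u' * Qc G g i (Suc \<tau>) (fst h, snd h @ [z]) u')))"
    unfolding N Pev by (simp add: algebra_simps sum_distrib_left)
  then show ?thesis unfolding Qc_NumE using pos by simp
qed

end

lemma stepS_supp_mono:
  assumes "\<forall>j. set_pmf (g j t (snd s j)) \<subseteq> set_pmf (g0 j t (snd s j))"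
  shows "set_pmf (stepS G g t s) \<subseteq> set_pmf (stepS G g0 t s)"
  unfolding stepS_alt set_map_pmf set_pair_pmf set_Pi_UNIV using assms by (intro image_mono Sigma_mono) auto

lemma pmf_Pi_UNIV: "pmf (Pi_pmf (UNIV :: 'a::finite set) d p) u = (\<Prod>j\<in>UNIV. pmf (p j) (u j))"
  by (simp add: pmf_Pi)

lemma pmf_stepS:
  fixes G :: "('i::finite,'x::finite,'u::finite,'z::finite,'w::finite,'h::finite,'m) game_scheme"
  shows "pmf (stepS G g t s) s' = (\<Sum>u\<in>UNIV. \<Sum>w\<in>UNIV. (\<Prod>j\<in>UNIV. pmf (g j t (snd s j)) (u j)) * pmf (gm_W G t) w *
     indicator {s'} (fst (gm_f G t (fst s) u w), \<lambda>j. (fst (snd s j), snd (snd s j) @ [fst (snd (gm_f G t (fst s) u w)) j])))"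
proof -
  define F where "F = (\<lambda>(u,w). (fst (gm_f G t (fst s) u w), \<lambda>j. (fst (snd s j), snd (snd s j) @ [fst (snd (gm_f G t (fst s) u w)) j])))"
  let ?P = "pair_pmf (Pi_pmf UNIV undefined (\<lambda>j. g j t (snd s j))) (gm_W G t)"
  have "pmf (stepS G g t s) s' = measure_pmf.prob ?P (F -` {s'})"
    unfolding stepS_alt pmf_map F_def ..
  also have "\<dots> = measure_pmf.expectation ?P (indicator (F -` {s'}))" by simp
  also have "\<dots> = (\<Sum>uw\<in>UNIV. indicator (F -` {s'}) uw * pmf ?P uw)"
    by (rule integral_measure_pmf_real) simp_all
  also have "\<dots> = (\<Sum>uw\<in>UNIV \<times> UNIV. indicator (F -` {s'}) uw * pmf ?P uw)"
    by (simp only: UNIV_Times_UNIV)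
  also have "\<dots> = (\<Sum>(u,w)\<in>UNIV \<times> UNIV. (\<Prod>j\<in>UNIV. pmf (g j t (snd s j)) (u j)) * pmf (gm_W G t) w * indicator {s'} (F (u,w)))"
    by (intro sum.cong refl) (auto simp: pmf_pair pmf_Pi_UNIV indicator_def)
  also have "\<dots> = (\<Sum>u\<in>UNIV. \<Sum>w\<in>UNIV. (\<Prod>j\<in>UNIV. pmf (g j t (snd s j)) (u j)) * pmf (gm_W G t) w * indicator {s'} (F (u,w)))"
    by (rule sum.cartesian_product[symmetric])
  finally show ?thesis unfolding F_def by simp
qed

context
  fixes G :: "('i::finite,'x::finite,'u::finite,'z::finite,'w::finite,'h::finite,'m) game_scheme"
    and \<iota>1 :: "'i \<Rightarrow> 'h \<Rightarrow> 'k" and \<iota> :: "nat \<Rightarrow> 'i \<Rightarrow> 'k \<Rightarrow> 'z \<Rightarrow> 'k" and i :: 'i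
begin

lemma fm_valid: "fully_mixed G g \<Longrightarrow> valid_profile G g"
  unfolding fully_mixed_def valid_profile_def by auto

lemma S_supp_mono:
  fixes g g0 :: "('i,'h,'z,'u) profile"
  assumes fm0: "fully_mixed G g0" and vg: "valid_profile G g"
  shows "1 \<le> t \<Longrightarrow> t \<le> gm_T G \<Longrightarrow> set_pmf (S G g t) \<subseteq> set_pmf (S G g0 t)"
proof (induction t rule: nat_induct_at_least)
  case base then show ?case using S_1[of G g] S_1[of G g0] by simp
next
  case (Suc t)
  have "set_pmf (stepS G g t s) \<subseteq> set_pmf (stepS G g0 t s)" if s: "s \<in> set_pmf (S G g t)" for s
  proof (rule stepS_supp_mono, rule allI)
    fix j
    have w: "wf_hist t (snd s j)" using S_support_wf[OF s] Suc by auto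
    then show "set_pmf (g j t (snd s j)) \<subseteq> set_pmf (g0 j t (snd s j))"
    proof -
      have tt: "t \<in> {1..gm_T G}" using Suc by auto
      then have a: "set_pmf (g j t (snd s j)) \<subseteq> gm_U G t j" using vg w unfolding valid_profile_def by blast
      have b: "set_pmf (g0 j t (snd s j)) = gm_U G t j" using fm0 w tt unfolding fully_mixed_def by blast
      from a b show ?thesis by simp
    qed
  qed
  then show ?case using Suc by (simp add: S_Suc) blast
qed

lemma S_supp_eq:
  fixes g g0 :: "('i,'h,'z,'u) profile"
  assumes "fully_mixed G g0" "fully_mixed G g" "1 \<le> t" "t \<le> gm_T G"
  shows "set_pmf (S G g t) = set_pmf (S G g0 t)"
  using S_supp_mono[OF assms(1) fm_valid[OF assms(2)]] S_supp_mono[OF assms(2) fm_valid[OF assms(1)]] assms(3,4)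
  by blast

lemma S_conv:
  fixes g g0 :: "('i,'h,'z,'u) profile" and gs :: "nat \<Rightarrow> ('i,'h,'z,'u) profile"
  assumes fm0: "fully_mixed G g0" and vg: "valid_profile G g" and vgs: "\<And>n. valid_profile G (gs n)"
    and conv: "\<And>j t h u. t \<in> {1..gm_T G} \<Longrightarrow> wf_hist t h \<Longrightarrow> (\<lambda>n. pmf (gs n j t h) u) \<longlonglongrightarrow> pmf (g j t h) u"
  shows "1 \<le> t \<Longrightarrow> t \<le> gm_T G \<Longrightarrow> (\<lambda>n. pmf (S G (gs n) t) s) \<longlonglongrightarrow> pmf (S G g t) s"
proof (induction t arbitrary: s rule: nat_induct_at_least)
  case base then show ?case using S_1[of G g] S_1[of G "gs _"] by simp
next
  case (Suc t s')
  define R where "R = set_pmf (S G g0 t)"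
  have fR: "finite R" unfolding R_def by (rule finite_S)
  have expand: "pmf (S G gg (Suc t)) s' = (\<Sum>s\<in>R. pmf (stepS G gg t s) s' * pmf (S G gg t) s)"
    if "valid_profile G gg" for gg
  proof -
    have "pmf (S G gg (Suc t)) s' = measure_pmf.expectation (S G gg t) (\<lambda>s. pmf (stepS G gg t s) s')"
      using Suc by (simp add: S_Suc pmf_bind)
    also have "\<dots> = (\<Sum>s\<in>R. pmf (stepS G gg t s) s' * pmf (S G gg t) s)"
      by (rule integral_measure_pmf_real[OF fR]) (use S_supp_mono[OF fm0 that, of t] Suc in \<open>auto simp: R_def\<close>)
    finally show ?thesis .
  qed
  have wfR: "s \<in> R \<Longrightarrow> wf_hist t (snd s j)" for s j using S_support_wf[where s=s and G=G and g=g0 and t=t and j=j] Suc unfolding R_def by auto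
  have t: "t \<in> {1..gm_T G}" using Suc by auto
  show ?case
    unfolding expand[OF vgs] expand[OF vg] pmf_stepS
    by (intro tendsto_intros Suc.IH conv[OF t] wfR) (use Suc in auto)
qed

definition rhoC where
  "rhoC g t k = (if PK G g \<iota>1 \<iota> i t k > 0
     then bind_pmf (cond_pmf (S G g t) {s. compress \<iota>1 \<iota> i (snd s i) = k}) (\<lambda>s. g i t (snd s i))
     else pmf_of_set (gm_U G t i))"

lemma PK_nonempty: "PK G g \<iota>1 \<iota> i t k > 0 \<Longrightarrow> set_pmf (S G g t) \<inter> {s. compress \<iota>1 \<iota> i (snd s i) = k} \<noteq> {}"
  unfolding PK_def using measure_measure_pmf_not_zero
  using measure_pmf_zero_iff[of "S G g t" "{s. compress \<iota>1 \<iota> i (snd s i) = k}"] by fastforce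

lemma rhoC_pmf:
  fixes g :: "('i,'h,'z,'u) profile"
  assumes P: "PK G g \<iota>1 \<iota> i t k > 0"
  shows "pmf (rhoC g t k) a * PK G g \<iota>1 \<iota> i t k = EKU G g \<iota>1 \<iota> i t k a"
proof -
  let ?A = "{s. compress \<iota>1 \<iota> i (snd s i) = k}"
  have ne: "set_pmf (S G g t) \<inter> ?A \<noteq> {}" by (rule PK_nonempty[OF P])
  have "pmf (rhoC g t k) a = measure_pmf.expectation (cond_pmf (S G g t) ?A) (\<lambda>s. pmf (g i t (snd s i)) a)"
    unfolding rhoC_def using P by (simp add: pmf_bind)
  also have "\<dots> = (\<Sum>s\<in>set_pmf (S G g t). pmf (g i t (snd s i)) a * pmf (cond_pmf (S G g t) ?A) s)"
    by (rule integral_measure_pmf_real[OF finite_S]) (use ne in auto)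
  also have "\<dots> = (\<Sum>s\<in>set_pmf (S G g t). pmf (g i t (snd s i)) a * (indicator ?A s * pmf (S G g t) s) / PK G g \<iota>1 \<iota> i t k)"
    by (intro sum.cong refl) (simp add: pmf_cond[OF ne] PK_def indicator_def)
  also have "\<dots> = (\<Sum>s\<in>set_pmf (S G g t). pmf (g i t (snd s i)) a * (indicator ?A s * pmf (S G g t) s)) / PK G g \<iota>1 \<iota> i t k"
    by (simp add: sum_divide_distrib)
  also have "(\<Sum>s\<in>set_pmf (S G g t). pmf (g i t (snd s i)) a * (indicator ?A s * pmf (S G g t) s)) =
     (\<Sum>s\<in>set_pmf (S G g t). (indicator {h. compress \<iota>1 \<iota> i h = k} (snd s i) * pmf (g i t (snd s i)) a) * pmf (S G g t) s)"
    by (intro sum.cong refl) (simp add: indicator_def)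
  also have "\<dots> = EKU G g \<iota>1 \<iota> i t k a"
    unfolding EKU_def by (rule integral_measure_pmf_real[OF finite_S, symmetric]) auto
  finally show ?thesis using P by simp
qed

lemma rhoC_consis: "consis G g \<iota>1 \<iota> i (rhoC g)"
  unfolding consis_def using rhoC_pmf by blast

lemma rhoC_set:
  fixes g :: "('i,'h,'z,'u) profile"
  assumes wf: "wf_game G" and fm: "fully_mixed G g" and t: "t \<in> {1..gm_T G}"
  shows "set_pmf (rhoC g t k) = gm_U G t i"
proof (cases "PK G g \<iota>1 \<iota> i t k > 0")
  case True
  let ?A = "{s. compress \<iota>1 \<iota> i (snd s i) = k}"
  have ne: "set_pmf (S G g t) \<inter> ?A \<noteq> {}" by (rule PK_nonempty[OF True])
  have "set_pmf (g i t (snd s i)) = gm_U G t i" if "s \<in> set_pmf (S G g t)" for s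
  proof -
    have "wf_hist t (snd s i)" using S_support_wf[OF that] t by auto
    then show ?thesis using fm t unfolding fully_mixed_def by blast
  qed
  then show ?thesis unfolding rhoC_def using True ne by auto
next
  case False
  have "gm_U G t i \<noteq> {}" using wf t unfolding wf_game_def by auto
  then show ?thesis unfolding rhoC_def using False by (simp add: set_pmf_of_set)
qed

lemma fm_rhoC:
  fixes g :: "('i,'h,'z,'u) profile"
  assumes wf: "wf_game G" and fm: "fully_mixed G g"
  shows "fully_mixed G (g(i := Kbased \<iota>1 \<iota> i (rhoC g)))"
  using fm rhoC_set[OF wf fm] unfolding fully_mixed_def Kbased_def by auto

end

lemma finite_subseq:
  fixes f :: "nat \<Rightarrow> 'a \<Rightarrow> real"
  assumes fin: "finite I" and bnd: "\<And>n a. a \<in> I \<Longrightarrow> \<bar>f n a\<bar> \<le> B"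
  shows "\<exists>\<phi>. strict_mono \<phi> \<and> (\<forall>a\<in>I. convergent (\<lambda>n. f (\<phi> n) a))"
  using fin bnd
proof (induction I rule: finite_induct)
  case empty
  show ?case by (intro exI[of _ id]) (auto simp: strict_mono_def)
next
  case (insert x F)
  then obtain \<phi> where \<phi>: "strict_mono \<phi>" "\<forall>a\<in>F. convergent (\<lambda>n. f (\<phi> n) a)" by auto
  have "bounded (range (\<lambda>n. f (\<phi> n) x))"
    unfolding bounded_iff using insert.prems by (intro exI[of _ B]) auto
  then obtain l r where r: "strict_mono r" "((\<lambda>n. f (\<phi> n) x) \<circ> r) \<longlonglongrightarrow> l"
    using bounded_imp_convergent_subsequence by blast
  show ?case
  proof (intro exI conjI ballI)
    show "strict_mono (\<phi> \<circ> r)" using \<phi>(1) r(1) by (rule strict_mono_o)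
    fix a assume a: "a \<in> insert x F"
    show "convergent (\<lambda>n. f ((\<phi> \<circ> r) n) a)"
    proof (cases "a = x")
      case True then show ?thesis using r(2) by (auto simp: convergent_def o_def)
    next
      case False
      then have "convergent (\<lambda>n. f (\<phi> n) a)" using a \<phi>(2) by auto
      then obtain L where "(\<lambda>n. f (\<phi> n) a) \<longlonglongrightarrow> L" by (auto simp: convergent_def)
      then have "((\<lambda>n. f (\<phi> n) a) \<circ> r) \<longlonglongrightarrow> L" using r(1) by (rule LIMSEQ_subseq_LIMSEQ)
      then show ?thesis by (auto simp: convergent_def o_def)
    qed
  qed
qed

lemma limit_pmf:
  fixes p :: "nat \<Rightarrow> 'a::finite pmf"
  assumes c: "\<And>a. convergent (\<lambda>n. pmf (p n) a)"
  shows "\<exists>q. \<forall>a. (\<lambda>n. pmf (p n) a) \<longlonglongrightarrow> pmf q a"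
proof -
  define L where "L a = lim (\<lambda>n. pmf (p n) a)" for a
  have LL: "(\<lambda>n. pmf (p n) a) \<longlonglongrightarrow> L a" for a using c unfolding L_def by (simp add: convergent_LIMSEQ_iff)
  have nn: "0 \<le> L a" for a by (rule LIMSEQ_le_const[OF LL]) auto
  have "(\<lambda>n. \<Sum>a\<in>UNIV. pmf (p n) a) \<longlonglongrightarrow> (\<Sum>a\<in>UNIV. L a)" by (intro tendsto_sum LL)
  moreover have "(\<Sum>a\<in>UNIV. pmf (p n) a) = 1" for n by (rule sum_pmf_eq_1) auto
  ultimately have s1: "(\<Sum>a\<in>UNIV. L a) = 1" by (simp add: LIMSEQ_const_iff)
  have prob: "(\<integral>\<^sup>+x. ennreal (L x) \<partial>count_space UNIV) = 1"
    by (simp add: nn_integral_count_space_finite sum_ennreal nn s1)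
  have "pmf (embed_pmf L) a = L a" for a by (rule pmf_embed_pmf[OF nn prob])
  then show ?thesis using LL by (intro exI[of _ "embed_pmf L"]) auto
qed

lemma opt_sum:
  fixes p :: "'u::finite pmf" and Qf :: "'u \<Rightarrow> real"
  assumes "set_pmf p \<subseteq> {u \<in> U. \<forall>u'\<in>U. Qf u' \<le> Qf u}" and "u0 \<in> {u \<in> U. \<forall>u'\<in>U. Qf u' \<le> Qf u}"
  shows "(\<Sum>u\<in>UNIV. pmf p u * Qf u) = Qf u0"
proof -
  have "(\<Sum>u\<in>UNIV. pmf p u * Qf u) = (\<Sum>u\<in>UNIV. pmf p u * Qf u0)"
  proof (intro sum.cong refl)
    fix u
    show "pmf p u * Qf u = pmf p u * Qf u0"
    proof (cases "u \<in> set_pmf p")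
      case True
      then have A: "u \<in> U" "\<forall>u'\<in>U. Qf u' \<le> Qf u" using assms(1) by auto
      have B: "u0 \<in> U" "\<forall>u'\<in>U. Qf u' \<le> Qf u0" using assms(2) by auto
      have "Qf u0 \<le> Qf u" using A(2) B(1) by blast
      moreover have "Qf u \<le> Qf u0" using B(2) A(1) by blast
      ultimately have "Qf u = Qf u0" by linarith
      then show ?thesis by simp
    next
      case False then show ?thesis by (simp add: set_pmf_iff)
    qed
  qed
  also have "\<dots> = Qf u0" by (simp add: sum_distrib_right[symmetric] sum_pmf_eq_1)
  finally show ?thesis .
qed

lemma bounded_mult_null:
  fixes a b :: "nat \<Rightarrow> real"
  assumes "\<And>n. \<bar>a n\<bar> \<le> 1" "b \<longlonglongrightarrow> 0"
  shows "(\<lambda>n. a n * b n) \<longlonglongrightarrow> 0"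
proof -
  have ab: "\<bar>a n * b n\<bar> \<le> \<bar>b n\<bar>" for n
  proof -
    have "\<bar>a n\<bar> * \<bar>b n\<bar> \<le> 1 * \<bar>b n\<bar>" by (rule mult_right_mono[OF assms(1)]) simp
    then show ?thesis by (simp add: abs_mult)
  qed
  have ab': "- \<bar>b n\<bar> \<le> a n * b n \<and> a n * b n \<le> \<bar>b n\<bar>" for n using ab[of n] unfolding abs_le_iff by linarith
  show ?thesis
  proof (rule tendsto_sandwich[of "\<lambda>n. - \<bar>b n\<bar>" _ _ "\<lambda>n. \<bar>b n\<bar>"])
    show "\<forall>\<^sub>F n in sequentially. - \<bar>b n\<bar> \<le> a n * b n"
      using ab' by (intro always_eventually allI) blast
    show "\<forall>\<^sub>F n in sequentially. a n * b n \<le> \<bar>b n\<bar>"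
      using ab' by (intro always_eventually allI) blast
    show "(\<lambda>n. - \<bar>b n\<bar>) \<longlonglongrightarrow> 0" using assms(2) tendsto_rabs_zero tendsto_minus by fastforce
    show "(\<lambda>n. \<bar>b n\<bar>) \<longlonglongrightarrow> 0" using assms(2) by (rule tendsto_rabs_zero)
  qed
qed

lemma BZ_bounds: "0 \<le> (BZ G g \<tau> i x o' a z :: real)" "(BZ G g \<tau> i x o' a z :: real) \<le> 1"
proof -
  let ?P = "pair_pmf (Pi_pmf (UNIV - {i}) undefined (\<lambda>j. g j \<tau> (o' j))) (gm_W G \<tau>)"
  have eq: "(BZ G g \<tau> i x o' a z :: real) = measure_pmf.prob ?P {(v,w). fst (snd (gm_f G \<tau> x (v(i:=a)) w)) i = z}"
    unfolding BZ_def prob_as_E by (intro Bochner_Integration.integral_cong refl) (auto simp: indicator_def)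
  show "0 \<le> (BZ G g \<tau> i x o' a z :: real)" unfolding eq by (rule measure_nonneg)
  show "(BZ G g \<tau> i x o' a z :: real) \<le> 1" unfolding eq by (rule measure_pmf.prob_le_1)
qed

definition gmod where "gmod G \<iota>1 \<iota> i gg = gg(i := Kbased \<iota>1 \<iota> i (rhoC G \<iota>1 \<iota> i gg))"

definition Vf where "Vf G gg i t h' = (\<Sum>u'\<in>UNIV. pmf (gg i t h') u' * Qc G gg i t h' u')"

locale SEloc =
  fixes G :: "('i::finite,'x::finite,'u::finite,'z::finite,'w::finite,'h::finite,'m) game_scheme"
    and \<iota>1 :: "'i \<Rightarrow> 'h \<Rightarrow> 'k" and \<iota> :: "nat \<Rightarrow> 'i \<Rightarrow> 'k \<Rightarrow> 'z \<Rightarrow> 'k" and i :: 'i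
    and g :: "('i,'h,'z,'u) profile" and Q :: "'i \<Rightarrow> nat \<Rightarrow> ('h,'z) hist \<Rightarrow> 'u \<Rightarrow> real"
    and gs :: "nat \<Rightarrow> ('i,'h,'z,'u) profile" and Qs :: "nat \<Rightarrow> 'i \<Rightarrow> nat \<Rightarrow> ('h,'z) hist \<Rightarrow> 'u \<Rightarrow> real"
    and \<phi> :: "nat \<Rightarrow> nat" and \<rho> :: "nat \<Rightarrow> 'k \<Rightarrow> 'u pmf"
  assumes wf: "wf_game G"
    and pSall: "\<And>gg. valid_profile G gg \<Longrightarrow> prodS G gg \<iota>1 \<iota> i"
    and fm: "\<And>n. fully_mixed G (gs n)"
    and qof: "\<And>n. Q_of G (gs n) (Qs n)"
    and cvg: "\<And>j t h u. t \<in> {1..gm_T G} \<Longrightarrow> wf_hist t h \<Longrightarrow> (\<lambda>n. pmf (gs n j t h) u) \<longlonglongrightarrow> pmf (g j t h) u"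
    and cvQ: "\<And>j t h u. t \<in> {1..gm_T G} \<Longrightarrow> wf_hist t h \<Longrightarrow> u \<in> gm_U G t j \<Longrightarrow> (\<lambda>n. Qs n j t h u) \<longlonglongrightarrow> Q j t h u"
    and sr: "seq_rational G g Q"
    and sm: "strict_mono \<phi>"
    and cv\<rho>: "\<And>t k a. t \<in> {1..gm_T G} \<Longrightarrow> (\<lambda>n. pmf (rhoC G \<iota>1 \<iota> i (gs (\<phi> n)) t k) a) \<longlonglongrightarrow> pmf (\<rho> t k) a"
begin

abbreviation "reach \<tau> j h \<equiv> PrH G (gs 0) \<tau> j h > 0"

lemma vg: "valid_profile G g"
  using sr unfolding seq_rational_def valid_profile_def by blast

lemma vgs: "valid_profile G (gs n)" by (rule fm_valid[OF fm])

lemma fm_mod: "fully_mixed G (gmod G \<iota>1 \<iota> i (gs n))"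
  unfolding gmod_def by (rule fm_rhoC[OF wf fm])

lemma vmod: "valid_profile G (gmod G \<iota>1 \<iota> i (gs n))" by (rule fm_valid[OF fm_mod])

lemma reach_iff:
  assumes "fully_mixed G gg" "\<tau> \<in> {1..gm_T G}"
  shows "PrH G gg \<tau> j h > 0 \<longleftrightarrow> reach \<tau> j h"
proof -
  have e: "set_pmf (S G gg \<tau>) = set_pmf (S G (gs 0) \<tau>)" using S_supp_eq[OF fm assms(1)] assms(2) by auto
  have "PrH G gg \<tau> j h > 0 \<longleftrightarrow> set_pmf (S G gg \<tau>) \<inter> {s. snd s j = h} \<noteq> {}"
    unfolding PrH_def using measure_pmf_zero_iff[of "S G gg \<tau>" "{s. snd s j = h}"]
    by (metis measure_nonneg order_less_le)
  also have "\<dots> \<longleftrightarrow> set_pmf (S G (gs 0) \<tau>) \<inter> {s. snd s j = h} \<noteq> {}" unfolding e ..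
  also have "\<dots> \<longleftrightarrow> reach \<tau> j h"
    unfolding PrH_def using measure_pmf_zero_iff[of "S G (gs 0) \<tau>" "{s. snd s j = h}"]
    by (metis measure_nonneg order_less_le)
  finally show ?thesis .
qed

lemma reach_wf: "reach \<tau> j h \<Longrightarrow> 1 \<le> \<tau> \<Longrightarrow> wf_hist \<tau> h"
  unfolding PrH_def using measure_pmf_zero_iff[of "S G (gs 0) \<tau>" "{s. snd s j = h}"] S_support_wf
  by (metis (mono_tags, lifting) disjoint_iff mem_Collect_eq order_less_irrefl)

lemma Pev_pos:
  assumes "fully_mixed G gg" "\<tau> \<in> {1..gm_T G}" "reach \<tau> j h" "u \<in> gm_U G \<tau> j"
  shows "Pr G gg {tr. rvH tr \<tau> j = h \<and> rvU tr \<tau> j = u} > 0"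
proof -
  have w: "wf_hist \<tau> h" using reach_wf assms by auto
  have "u \<in> set_pmf (gg j \<tau> h)" using assms(1,2,4) w unfolding fully_mixed_def by blast
  then have "pmf (gg j \<tau> h) u > 0" by (simp add: pmf_positive)
  moreover have "PrH G gg \<tau> j h > 0" using reach_iff assms by blast
  moreover have "Pr G gg {tr. rvH tr \<tau> j = h \<and> rvU tr \<tau> j = u} = PrH G gg \<tau> j h * pmf (gg j \<tau> h) u"
    using Pev_eq[where G=G and g=gg and \<tau>=\<tau> and j=j and h=h and u=u] assms(2) by auto
  ultimately show ?thesis by simp
qed

lemma Qc_unreach:
  assumes "fully_mixed G gg" "\<tau> \<in> {1..gm_T G}" "\<not> reach \<tau> j h"
  shows "Qc G gg j \<tau> h u = 0"
proof -
  have "PrH G gg \<tau> j h = 0" using reach_iff[OF assms(1,2)] assms(3) unfolding PrH_def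
    by (simp add: order_less_le)
  then have "Pr G gg {tr. rvH tr \<tau> j = h \<and> rvU tr \<tau> j = u} = 0"
    using Pev_eq[where G=G and g=gg and \<tau>=\<tau> and j=j and h=h and u=u] assms(2) by auto
  then show ?thesis unfolding Qc_NumE by simp
qed

lemma Qs_Qc:
  assumes "\<tau> \<in> {1..gm_T G}" "reach \<tau> j h" "u \<in> gm_U G \<tau> j"
  shows "Qs n j \<tau> h u = Qc G (gs n) j \<tau> h u"
  using qof[of n] Pev_pos[OF fm assms] assms(1) unfolding Q_of_def Qc_def by blast

lemma Qc_conv:
  assumes "\<tau> \<in> {1..gm_T G}" "reach \<tau> j h" "u \<in> gm_U G \<tau> j"
  shows "(\<lambda>n. Qc G (gs (\<phi> n)) j \<tau> h u) \<longlonglongrightarrow> Q j \<tau> h u"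
proof -
  have "(\<lambda>n. Qs n j \<tau> h u) \<longlonglongrightarrow> Q j \<tau> h u" using cvQ assms reach_wf by auto
  then have "(\<lambda>n. Qs (\<phi> n) j \<tau> h u) \<longlonglongrightarrow> Q j \<tau> h u" using LIMSEQ_subseq_LIMSEQ[OF _ sm] by (auto simp: o_def)
  then show ?thesis using Qs_Qc[OF assms] by simp
qed

lemma pmf_gs_outside:
  assumes "t \<in> {1..gm_T G}" "wf_hist t h" "u \<notin> gm_U G t j" shows "pmf (gs n j t h) u = 0"
proof -
  have "set_pmf (gs n j t h) = gm_U G t j" using fm[of n] assms unfolding fully_mixed_def by blast
  then show ?thesis using assms(3) unfolding pmf_eq_0_set_pmf by simp
qed

lemma pmf_g_outside: "t \<in> {1..gm_T G} \<Longrightarrow> wf_hist t h \<Longrightarrow> u \<notin> gm_U G t j \<Longrightarrow> pmf (g j t h) u = 0"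
  using vg unfolding valid_profile_def by (meson set_pmf_iff subsetD)

lemma pmf_rhoC_outside:
  assumes "t \<in> {1..gm_T G}" "u \<notin> gm_U G t i" shows "pmf (rhoC G \<iota>1 \<iota> i (gs n) t k) u = 0"
proof -
  have "set_pmf (rhoC G \<iota>1 \<iota> i (gs n) t k) = gm_U G t i" by (rule rhoC_set[OF wf fm assms(1)])
  then show ?thesis using assms(2) unfolding pmf_eq_0_set_pmf by simp
qed

lemma pmf_rho_outside: 
  assumes "t \<in> {1..gm_T G}" "u \<notin> gm_U G t i" shows "pmf (\<rho> t k) u = 0"
proof -
  have "(\<lambda>n. pmf (rhoC G \<iota>1 \<iota> i (gs (\<phi> n)) t k) u) \<longlonglongrightarrow> 0" using pmf_rhoC_outside[OF assms] by simp
  then show ?thesis using cv\<rho>[OF assms(1)] LIMSEQ_unique by blast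
qed

end

definition Wf where "Wf p Qf = (\<Sum>u'\<in>UNIV. pmf p u' * Qf u')"

context SEloc begin

lemma XiZ_bound: "\<bar>XiZ G gg \<iota>1 \<iota> i \<tau> k z\<bar> \<le> 1"
proof -
  let ?ik = "\<lambda>s. indicator {h. compress \<iota>1 \<iota> i h = k} (snd s i) :: real"
  let ?N = "measure_pmf.expectation (S G gg \<tau>) (\<lambda>s. ?ik s * BZ G gg \<tau> i (fst s) (others i (snd s)) (gm_act G \<tau> i z) z)"
  have P: "measure_pmf.expectation (S G gg \<tau>) ?ik = PK G gg \<iota>1 \<iota> i \<tau> k"
  proof -
    show ?thesis unfolding PK_def prob_as_E by (intro Bochner_Integration.integral_cong refl) (auto simp: indicator_def)
  qed
  have int: "integrable (measure_pmf (S G gg \<tau>)) (f :: _ \<Rightarrow> real)" for f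
    by (rule integrable_measure_pmf_finite[OF finite_S])
  have n0: "0 \<le> ?N" by (intro Bochner_Integration.integral_nonneg) (simp add: BZ_bounds)
  have n1: "?N \<le> measure_pmf.expectation (S G gg \<tau>) ?ik"
    by (intro Bochner_Integration.integral_mono int) (simp add: BZ_bounds indicator_def)
  show ?thesis
  proof (cases "PK G gg \<iota>1 \<iota> i \<tau> k = 0")
    case True then show ?thesis unfolding XiZ_def by simp
  next
    case False
    then have "PK G gg \<iota>1 \<iota> i \<tau> k > 0" unfolding PK_def by (simp add: order_less_le)
    then show ?thesis using n0 n1 P unfolding XiZ_def by (simp add: abs_le_iff divide_le_eq_1)
  qed
qed

lemma XiZ_zero:
  assumes t: "1 \<le> \<tau>" "\<tau> < gm_T G" and r: "reach \<tau> i h" and az: "gm_act G \<tau> i z \<in> gm_U G \<tau> i"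
    and nr: "\<not> reach (Suc \<tau>) i (fst h, snd h @ [z])"
  shows "XiZ G (gs n) \<iota>1 \<iota> i \<tau> (compress \<iota>1 \<iota> i h) z = 0"
proof -
  have t1: "\<tau> \<in> {1..gm_T G}" "Suc \<tau> \<in> {1..gm_T G}" using t by auto
  have "\<not> PrH G (gs n) (Suc \<tau>) i (fst h, snd h @ [z]) > 0"
    using reach_iff[OF fm t1(2)] nr by blast
  moreover have "PrH G (gs n) (Suc \<tau>) i (fst h, snd h @ [z]) \<ge> 0" unfolding PrH_def by simp
  ultimately have "PrH G (gs n) (Suc \<tau>) i (fst h, snd h @ [z]) = 0" by linarith
  moreover have "PrH G (gs n) \<tau> i h > 0" using reach_iff[OF fm t1(1)] r by blast
  moreover have "pmf (gs n i \<tau> h) (gm_act G \<tau> i z) > 0"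
  proof -
    have w: "wf_hist \<tau> h" using reach_wf r t by auto
    have "gm_act G \<tau> i z \<in> set_pmf (gs n i \<tau> h)" using fm[of n] t1(1) w az unfolding fully_mixed_def by blast
    then show ?thesis by (simp add: pmf_positive)
  qed
  ultimately show ?thesis using Z_fac[OF wf vgs[of n] pSall[OF vgs[of n]] t, where h=h and z=z] by simp
qed

lemma Vconv_gs:
  assumes t: "t \<in> {1..gm_T G}" and r: "reach t i h'"
  shows "(\<lambda>n. Vf G (gs (\<phi> n)) i t h') \<longlonglongrightarrow> Wf (g i t h') (Q i t h')"
  unfolding Vf_def Wf_def
proof (intro tendsto_sum)
  fix u' :: 'u
  have w: "wf_hist t h'" using reach_wf r t by auto
  show "(\<lambda>n. pmf (gs (\<phi> n) i t h') u' * Qc G (gs (\<phi> n)) i t h' u') \<longlonglongrightarrow> pmf (g i t h') u' * Q i t h' u'"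
  proof (cases "u' \<in> gm_U G t i")
    case True
    have "(\<lambda>n. pmf (gs (\<phi> n) i t h') u') \<longlonglongrightarrow> pmf (g i t h') u'"
      using LIMSEQ_subseq_LIMSEQ[OF cvg[OF t w] sm] by (simp add: o_def)
    then show ?thesis using Qc_conv[OF t r True] by (intro tendsto_mult)
  next
    case False
    then show ?thesis using pmf_gs_outside[OF t w False] pmf_g_outside[OF t w False] by simp
  qed
qed

lemma Vconv_mod:
  assumes t: "t \<in> {1..gm_T G}" and r: "reach t i h'"
    and qc: "\<And>u. u \<in> gm_U G t i \<Longrightarrow> (\<lambda>n. Qc G (gmod G \<iota>1 \<iota> i (gs (\<phi> n))) i t h' u) \<longlonglongrightarrow> Q i t h' u"
  shows "(\<lambda>n. Vf G (gmod G \<iota>1 \<iota> i (gs (\<phi> n))) i t h') \<longlonglongrightarrow> Wf (\<rho> t (compress \<iota>1 \<iota> i h')) (Q i t h')"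
  unfolding Vf_def Wf_def
proof (intro tendsto_sum)
  fix u' :: 'u
  have gm: "gmod G \<iota>1 \<iota> i gg i t h' = rhoC G \<iota>1 \<iota> i gg t (compress \<iota>1 \<iota> i h')" for gg
    unfolding gmod_def Kbased_def by simp
  show "(\<lambda>n. pmf (gmod G \<iota>1 \<iota> i (gs (\<phi> n)) i t h') u' * Qc G (gmod G \<iota>1 \<iota> i (gs (\<phi> n))) i t h' u') \<longlonglongrightarrow>
        pmf (\<rho> t (compress \<iota>1 \<iota> i h')) u' * Q i t h' u'"
  proof (cases "u' \<in> gm_U G t i")
    case True
    show ?thesis unfolding gm using cv\<rho>[OF t] qc[OF True] by (intro tendsto_mult)
  next
    case False
    then show ?thesis unfolding gm using pmf_rhoC_outside[OF t False] pmf_rho_outside[OF t False] by simp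
  qed
qed

end

context SEloc begin

lemma rho_zero:
  assumes t: "\<tau> \<in> {1..gm_T G}" and r: "reach \<tau> i h"
   and same: "\<And>h' u. wf_hist \<tau> h' \<Longrightarrow> reach \<tau> i h' \<Longrightarrow> compress \<iota>1 \<iota> i h' = compress \<iota>1 \<iota> i h \<Longrightarrow> u \<in> gm_U G \<tau> i \<Longrightarrow> Q i \<tau> h' u = Q i \<tau> h u"
   and nopt: "u \<notin> {u \<in> gm_U G \<tau> i. \<forall>u'\<in>gm_U G \<tau> i. Q i \<tau> h u' \<le> Q i \<tau> h u}"
  shows "pmf (\<rho> \<tau> (compress \<iota>1 \<iota> i h)) u = 0"
proof (cases "u \<in> gm_U G \<tau> i")
  case False
  then show ?thesis using pmf_rho_outside[OF t] by blast
next
  case uU: True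
  define k where "k = compress \<iota>1 \<iota> i h"
  define R where "R = set_pmf (S G (gs 0) \<tau>)"
  define H where "H = (\<lambda>s. snd s i) ` (R \<inter> {s. compress \<iota>1 \<iota> i (snd s i) = k})"
  have fR: "finite R" unfolding R_def by (rule finite_S)
  have fH: "finite H" unfolding H_def using fR by auto
  have Rn: "set_pmf (S G (gs n) \<tau>) = R" for n unfolding R_def using S_supp_eq[OF fm fm] t by auto
  have c1: "pmf (g i \<tau> h') u = 0" if h': "h' \<in> H" for h'
  proof -
    obtain s where s: "s \<in> R" "compress \<iota>1 \<iota> i (snd s i) = k" "h' = snd s i" using h' unfolding H_def by auto
    have w: "wf_hist \<tau> h'" using S_support_wf[of s G "gs 0" \<tau> i] s t unfolding R_def by auto
    have rh: "reach \<tau> i h'" unfolding PrH_def using s measure_pmf_posI[of s "S G (gs 0) \<tau>" "{s. snd s i = h'}"]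
      unfolding R_def by auto
    have eqQ: "\<And>u. u \<in> gm_U G \<tau> i \<Longrightarrow> Q i \<tau> h' u = Q i \<tau> h u"
      using same[OF w rh] s(2,3) unfolding k_def by auto
    have "set_pmf (g i \<tau> h') \<subseteq> {u \<in> gm_U G \<tau> i. \<forall>u'\<in>gm_U G \<tau> i. Q i \<tau> h' u' \<le> Q i \<tau> h' u}"
      using sr t w unfolding seq_rational_def by blast
    also have "\<dots> = {u \<in> gm_U G \<tau> i. \<forall>u'\<in>gm_U G \<tau> i. Q i \<tau> h u' \<le> Q i \<tau> h u}" using eqQ by auto
    finally have "u \<notin> set_pmf (g i \<tau> h')" using nopt by blast
    then show ?thesis unfolding pmf_eq_0_set_pmf .
  qed
  define \<sigma> where "\<sigma> n = (\<Sum>h'\<in>H. pmf (gs n i \<tau> h') u)" for n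
  have c2: "pmf (rhoC G \<iota>1 \<iota> i (gs n) \<tau> k) u \<le> \<sigma> n" for n
  proof -
    let ?ik = "\<lambda>s::'x \<times> ('i \<Rightarrow> ('h,'z) hist). indicator {h. compress \<iota>1 \<iota> i h = k} (snd s i) :: real"
    have PKs: "PK G (gs n) \<iota>1 \<iota> i \<tau> k = (\<Sum>s\<in>R. ?ik s * pmf (S G (gs n) \<tau>) s)"
      unfolding PK_def prob_as_E by (subst integral_measure_pmf_real[OF fR]) (auto simp: Rn indicator_def intro!: sum.cong)
    have EKUs: "EKU G (gs n) \<iota>1 \<iota> i \<tau> k u = (\<Sum>s\<in>R. (?ik s * pmf (gs n i \<tau> (snd s i)) u) * pmf (S G (gs n) \<tau>) s)"
      unfolding EKU_def by (rule integral_measure_pmf_real[OF fR]) (auto simp: Rn)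
    have le: "(?ik s * pmf (gs n i \<tau> (snd s i)) u) * pmf (S G (gs n) \<tau>) s \<le> (?ik s * \<sigma> n) * pmf (S G (gs n) \<tau>) s"
      if "s \<in> R" for s
    proof (cases "compress \<iota>1 \<iota> i (snd s i) = k")
      case True
      then have "snd s i \<in> H" using that unfolding H_def by auto
      then have "pmf (gs n i \<tau> (snd s i)) u \<le> \<sigma> n" unfolding \<sigma>_def by (rule member_le_sum[OF _ _ fH]) auto
      then show ?thesis by (intro mult_right_mono) (auto simp: indicator_def)
    qed (simp add: indicator_def)
    have "EKU G (gs n) \<iota>1 \<iota> i \<tau> k u \<le> \<sigma> n * PK G (gs n) \<iota>1 \<iota> i \<tau> k"
      unfolding EKUs PKs sum_distrib_left using le by (auto intro!: sum_mono simp: mult_ac)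
    moreover have pos: "PK G (gs n) \<iota>1 \<iota> i \<tau> k > 0"
    proof -
      have "PrH G (gs n) \<tau> i h > 0" using reach_iff[OF fm t] r by blast
      moreover have "PrH G (gs n) \<tau> i h \<le> PK G (gs n) \<iota>1 \<iota> i \<tau> k"
        unfolding PrH_def PK_def k_def by (intro measure_pmf.finite_measure_mono) auto
      ultimately show ?thesis by linarith
    qed
    ultimately have "PK G (gs n) \<iota>1 \<iota> i \<tau> k * pmf (rhoC G \<iota>1 \<iota> i (gs n) \<tau> k) u \<le> PK G (gs n) \<iota>1 \<iota> i \<tau> k * \<sigma> n"
      using rhoC_pmf[OF pos, of u] by (simp add: mult.commute)
    then show ?thesis using pos by (simp add: mult_le_cancel_left_pos)
  qed
  have c3: "(\<lambda>n. \<sigma> (\<phi> n)) \<longlonglongrightarrow> 0"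
  proof -
    have "(\<lambda>n. \<Sum>h'\<in>H. pmf (gs (\<phi> n) i \<tau> h') u) \<longlonglongrightarrow> (\<Sum>h'\<in>H. pmf (g i \<tau> h') u)"
    proof (intro tendsto_sum)
      fix h' assume "h' \<in> H"
      then obtain s where s: "s \<in> R" "h' = snd s i" unfolding H_def by auto
      have w: "wf_hist \<tau> h'" using S_support_wf[of s G "gs 0" \<tau> i] s t unfolding R_def by auto
      show "(\<lambda>n. pmf (gs (\<phi> n) i \<tau> h') u) \<longlonglongrightarrow> pmf (g i \<tau> h') u"
        using LIMSEQ_subseq_LIMSEQ[OF cvg[OF t w] sm] by (simp add: o_def)
    qed
    then show ?thesis unfolding \<sigma>_def using c1 by simp
  qed
  have "(\<lambda>n. pmf (rhoC G \<iota>1 \<iota> i (gs (\<phi> n)) \<tau> k) u) \<longlonglongrightarrow> 0"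
    by (rule tendsto_sandwich[OF _ _ tendsto_const c3]) (auto intro!: always_eventually c2)
  then show ?thesis using cv\<rho>[OF t, of k u] LIMSEQ_unique unfolding k_def by blast
qed

lemma rho_set:
  assumes t: "\<tau> \<in> {1..gm_T G}" and r: "reach \<tau> i h"
   and same: "\<And>h' u. wf_hist \<tau> h' \<Longrightarrow> reach \<tau> i h' \<Longrightarrow> compress \<iota>1 \<iota> i h' = compress \<iota>1 \<iota> i h \<Longrightarrow> u \<in> gm_U G \<tau> i \<Longrightarrow> Q i \<tau> h' u = Q i \<tau> h u"
  shows "set_pmf (\<rho> \<tau> (compress \<iota>1 \<iota> i h)) \<subseteq> {u \<in> gm_U G \<tau> i. \<forall>u'\<in>gm_U G \<tau> i. Q i \<tau> h u' \<le> Q i \<tau> h u}"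
proof
  fix u assume "u \<in> set_pmf (\<rho> \<tau> (compress \<iota>1 \<iota> i h))"
  then have "pmf (\<rho> \<tau> (compress \<iota>1 \<iota> i h)) u \<noteq> 0" by (simp add: set_pmf_iff)
  then show "u \<in> {u \<in> gm_U G \<tau> i. \<forall>u'\<in>gm_U G \<tau> i. Q i \<tau> h u' \<le> Q i \<tau> h u}"
    using rho_zero[OF t r same] by blast
qed

end

context SEloc begin

definition CL where "CL \<tau> \<longleftrightarrow> (\<forall>h. wf_hist \<tau> h \<longrightarrow> reach \<tau> i h \<longrightarrow>
   (\<forall>u\<in>gm_U G \<tau> i. (\<lambda>n. Qc G (gmod G \<iota>1 \<iota> i (gs (\<phi> n))) i \<tau> h u) \<longlonglongrightarrow> Q i \<tau> h u) \<and>
   (\<forall>h'. wf_hist \<tau> h' \<longrightarrow> reach \<tau> i h' \<longrightarrow> compress \<iota>1 \<iota> i h' = compress \<iota>1 \<iota> i h \<longrightarrow>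
        (\<forall>u\<in>gm_U G \<tau> i. Q i \<tau> h' u = Q i \<tau> h u)))"

lemma gmod_alt: "gmod G \<iota>1 \<iota> i gg = gg(i := Kbased \<iota>1 \<iota> i (rhoC G \<iota>1 \<iota> i gg))"
  unfolding gmod_def ..

lemma consis_n: "consis G (gs n) \<iota>1 \<iota> i (rhoC G \<iota>1 \<iota> i (gs n))" by (rule rhoC_consis)

lemma XiR_mod: "1 \<le> \<tau> \<Longrightarrow> \<tau> \<le> gm_T G \<Longrightarrow> XiR G (gmod G \<iota>1 \<iota> i (gs n)) \<iota>1 \<iota> i \<tau> k u = XiR G (gs n) \<iota>1 \<iota> i \<tau> k u"
  unfolding gmod_alt by (rule Xi_inv(1)[OF pSall[OF vgs] consis_n])

lemma XiZ_mod: "1 \<le> \<tau> \<Longrightarrow> \<tau> \<le> gm_T G \<Longrightarrow> XiZ G (gmod G \<iota>1 \<iota> i (gs n)) \<iota>1 \<iota> i \<tau> k z = XiZ G (gs n) \<iota>1 \<iota> i \<tau> k z"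
  unfolding gmod_alt by (rule Xi_inv(2)[OF pSall[OF vgs] consis_n])

lemma CL_T: assumes T: "1 \<le> gm_T G" shows "CL (gm_T G)"
  unfolding CL_def
proof (intro allI impI conjI ballI)
  fix h u assume w: "wf_hist (gm_T G) h" and r: "reach (gm_T G) i h" and u: "u \<in> gm_U G (gm_T G) i"
  have t: "gm_T G \<in> {1..gm_T G}" using T by auto
  have eq: "Qc G (gmod G \<iota>1 \<iota> i (gs n)) i (gm_T G) h u = Qc G (gs n) i (gm_T G) h u" for n
  proof -
    have "Qc G (gmod G \<iota>1 \<iota> i (gs n)) i (gm_T G) h u = XiR G (gmod G \<iota>1 \<iota> i (gs n)) \<iota>1 \<iota> i (gm_T G) (compress \<iota>1 \<iota> i h) u"
      by (rule DP_T[OF pSall[OF vmod] T Pev_pos[OF fm_mod t r u]])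
    also have "\<dots> = XiR G (gs n) \<iota>1 \<iota> i (gm_T G) (compress \<iota>1 \<iota> i h) u" using XiR_mod T by simp
    also have "\<dots> = Qc G (gs n) i (gm_T G) h u"
      by (rule DP_T[OF pSall[OF vgs] T Pev_pos[OF fm t r u], symmetric])
    finally show ?thesis .
  qed
  show "(\<lambda>n. Qc G (gmod G \<iota>1 \<iota> i (gs (\<phi> n))) i (gm_T G) h u) \<longlonglongrightarrow> Q i (gm_T G) h u"
    unfolding eq by (rule Qc_conv[OF t r u])
next
  fix h h' u assume w: "wf_hist (gm_T G) h" and r: "reach (gm_T G) i h"
    and w': "wf_hist (gm_T G) h'" and r': "reach (gm_T G) i h'" and c: "compress \<iota>1 \<iota> i h' = compress \<iota>1 \<iota> i h"
    and u: "u \<in> gm_U G (gm_T G) i"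
  have t: "gm_T G \<in> {1..gm_T G}" using T by auto
  have "Qc G (gs n) i (gm_T G) h' u = Qc G (gs n) i (gm_T G) h u" for n
    using DP_T[OF pSall[OF vgs] T Pev_pos[OF fm t r u]] DP_T[OF pSall[OF vgs] T Pev_pos[OF fm t r' u]] c by simp
  then have "(\<lambda>n. Qc G (gs (\<phi> n)) i (gm_T G) h' u) \<longlonglongrightarrow> Q i (gm_T G) h u" using Qc_conv[OF t r u] by simp
  then show "Q i (gm_T G) h' u = Q i (gm_T G) h u" using Qc_conv[OF t r' u] LIMSEQ_unique by blast
qed

lemma W_eq:
  assumes t: "t \<in> {1..gm_T G}" and w: "wf_hist t h'" and r: "reach t i h'" and CLt: "CL t"
  shows "Wf (\<rho> t (compress \<iota>1 \<iota> i h')) (Q i t h') = Wf (g i t h') (Q i t h')"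
proof -
  let ?A = "{u \<in> gm_U G t i. \<forall>u'\<in>gm_U G t i. Q i t h' u' \<le> Q i t h' u}"
  have sg: "set_pmf (g i t h') \<subseteq> ?A" using sr t w unfolding seq_rational_def by blast
  obtain u0 where u0: "u0 \<in> set_pmf (g i t h')" using set_pmf_not_empty[of "g i t h'"] by blast
  have same: "\<And>h'' u. wf_hist t h'' \<Longrightarrow> reach t i h'' \<Longrightarrow> compress \<iota>1 \<iota> i h'' = compress \<iota>1 \<iota> i h' \<Longrightarrow> u \<in> gm_U G t i \<Longrightarrow> Q i t h'' u = Q i t h' u"
    using CLt w r unfolding CL_def by blast
  have sr': "set_pmf (\<rho> t (compress \<iota>1 \<iota> i h')) \<subseteq> ?A" by (rule rho_set[OF t r same])
  show ?thesis unfolding Wf_def using opt_sum[OF sr'] opt_sum[OF sg] u0 sg by auto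
qed

lemma W_same:
  assumes t: "t \<in> {1..gm_T G}" and w: "wf_hist t h1" and r: "reach t i h1" and w2: "wf_hist t h2" and r2: "reach t i h2"
    and c: "compress \<iota>1 \<iota> i h2 = compress \<iota>1 \<iota> i h1" and CLt: "CL t"
  shows "Wf (g i t h2) (Q i t h2) = Wf (g i t h1) (Q i t h1)"
proof -
  let ?A = "{u \<in> gm_U G t i. \<forall>u'\<in>gm_U G t i. Q i t h1 u' \<le> Q i t h1 u}"
  have eqQ: "\<And>u. u \<in> gm_U G t i \<Longrightarrow> Q i t h2 u = Q i t h1 u" using CLt w r w2 r2 c unfolding CL_def by blast
  have sg1: "set_pmf (g i t h1) \<subseteq> ?A" using sr t w unfolding seq_rational_def by blast
  have "set_pmf (g i t h2) \<subseteq> {u \<in> gm_U G t i. \<forall>u'\<in>gm_U G t i. Q i t h2 u' \<le> Q i t h2 u}"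
    using sr t w2 unfolding seq_rational_def by blast
  also have "\<dots> = ?A" using eqQ by auto
  finally have sg2: "set_pmf (g i t h2) \<subseteq> ?A" .
  obtain u0 where u0: "u0 \<in> set_pmf (g i t h1)" using set_pmf_not_empty[of "g i t h1"] by blast
  have "Wf (g i t h2) (Q i t h2) = Wf (g i t h2) (Q i t h1)"
    unfolding Wf_def
  proof (intro sum.cong refl)
    fix u
    show "pmf (g i t h2) u * Q i t h2 u = pmf (g i t h2) u * Q i t h1 u"
      by (cases "u \<in> gm_U G t i") (auto simp: eqQ pmf_g_outside[OF t w2])
  qed
  also have "\<dots> = Q i t h1 u0" unfolding Wf_def by (rule opt_sum[OF sg2]) (use u0 sg1 in auto)
  also have "\<dots> = Wf (g i t h1) (Q i t h1)" unfolding Wf_def by (rule opt_sum[OF sg1, symmetric]) (use u0 sg1 in auto)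
  finally show ?thesis .
qed

lemma CL_step:
  assumes t: "1 \<le> \<tau>" "\<tau> < gm_T G" and IH: "CL (Suc \<tau>)"
  shows "CL \<tau>"
  unfolding CL_def
proof (intro allI impI)
  fix h assume w: "wf_hist \<tau> h" and r: "reach \<tau> i h"
  have t1: "\<tau> \<in> {1..gm_T G}" and t2: "Suc \<tau> \<in> {1..gm_T G}" using t by auto
  have tle: "\<tau> \<le> gm_T G" using t by simp
  define k where "k = compress \<iota>1 \<iota> i h"
  define hz where "hz z = (fst h, snd h @ [z])" for z
  define V where "V n z = Vf G (gs (\<phi> n)) i (Suc \<tau>) (hz z)" for n z
  define V' where "V' n z = Vf G (gmod G \<iota>1 \<iota> i (gs (\<phi> n))) i (Suc \<tau>) (hz z)" for n z
  have wz: "wf_hist (Suc \<tau>) (hz z)" for z using w t unfolding hz_def wf_hist_def by simp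
  have DPg: "Qc G (gs n) i \<tau> h u = XiR G (gs n) \<iota>1 \<iota> i \<tau> k u +
     (\<Sum>z\<in>{z. gm_act G \<tau> i z = u}. XiZ G (gs n) \<iota>1 \<iota> i \<tau> k z * Vf G (gs n) i (Suc \<tau>) (hz z))"
    if u: "u \<in> gm_U G \<tau> i" for n u
    using DP_step[OF wf vgs pSall[OF vgs] t Pev_pos[OF fm t1 r u]]
    unfolding Vf_def hz_def k_def by simp
  have DPm: "Qc G (gmod G \<iota>1 \<iota> i (gs n)) i \<tau> h u = XiR G (gs n) \<iota>1 \<iota> i \<tau> k u +
     (\<Sum>z\<in>{z. gm_act G \<tau> i z = u}. XiZ G (gs n) \<iota>1 \<iota> i \<tau> k z * Vf G (gmod G \<iota>1 \<iota> i (gs n)) i (Suc \<tau>) (hz z))"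
    if u: "u \<in> gm_U G \<tau> i" for n u
    using DP_step[OF wf vmod pSall[OF vmod] t Pev_pos[OF fm_mod t1 r u]]
    unfolding Vf_def hz_def k_def XiR_mod[OF t(1) tle] XiZ_mod[OF t(1) tle] by simp
  show "(\<forall>u\<in>gm_U G \<tau> i. (\<lambda>n. Qc G (gmod G \<iota>1 \<iota> i (gs (\<phi> n))) i \<tau> h u) \<longlonglongrightarrow> Q i \<tau> h u) \<and>
   (\<forall>h'. wf_hist \<tau> h' \<longrightarrow> reach \<tau> i h' \<longrightarrow> compress \<iota>1 \<iota> i h' = compress \<iota>1 \<iota> i h \<longrightarrow>
        (\<forall>u\<in>gm_U G \<tau> i. Q i \<tau> h' u = Q i \<tau> h u))"
  proof (intro conjI ballI allI impI)
    fix u assume u: "u \<in> gm_U G \<tau> i"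
    have diff: "(\<lambda>n. Qc G (gmod G \<iota>1 \<iota> i (gs (\<phi> n))) i \<tau> h u - Qc G (gs (\<phi> n)) i \<tau> h u) \<longlonglongrightarrow> 0"
    proof -
      have "(\<lambda>n. \<Sum>z\<in>{z. gm_act G \<tau> i z = u}. XiZ G (gs (\<phi> n)) \<iota>1 \<iota> i \<tau> k z * (V' n z - V n z)) \<longlonglongrightarrow> (\<Sum>z\<in>{z. gm_act G \<tau> i z = u}. 0)"
      proof (intro tendsto_sum)
        fix z assume z: "z \<in> {z. gm_act G \<tau> i z = u}"
        show "(\<lambda>n. XiZ G (gs (\<phi> n)) \<iota>1 \<iota> i \<tau> k z * (V' n z - V n z)) \<longlonglongrightarrow> 0"
        proof (cases "reach (Suc \<tau>) i (hz z)")
          case True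
          have c1: "(\<lambda>n. V' n z) \<longlonglongrightarrow> Wf (\<rho> (Suc \<tau>) (compress \<iota>1 \<iota> i (hz z))) (Q i (Suc \<tau>) (hz z))"
          proof -
            have "\<forall>u\<in>gm_U G (Suc \<tau>) i. (\<lambda>n. Qc G (gmod G \<iota>1 \<iota> i (gs (\<phi> n))) i (Suc \<tau>) (hz z) u) \<longlonglongrightarrow> Q i (Suc \<tau>) (hz z) u"
              using IH wz[of z] True unfolding CL_def by blast
            then show ?thesis unfolding V'_def by (intro Vconv_mod[OF t2 True]) blast
          qed
          have c2: "(\<lambda>n. V n z) \<longlonglongrightarrow> Wf (g i (Suc \<tau>) (hz z)) (Q i (Suc \<tau>) (hz z))"
            unfolding V_def by (rule Vconv_gs[OF t2 True])
          have "(\<lambda>n. V' n z - V n z) \<longlonglongrightarrow> 0"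
            using tendsto_diff[OF c1 c2] W_eq[OF t2 wz True IH] by simp
          then show ?thesis by (rule bounded_mult_null[OF XiZ_bound])
        next
          case False
          have "XiZ G (gs (\<phi> n)) \<iota>1 \<iota> i \<tau> k z = 0" for n
            unfolding k_def by (rule XiZ_zero[OF t r]) (use z u False in \<open>auto simp: hz_def\<close>)
          then show ?thesis by simp
        qed
      qed
      moreover have "Qc G (gmod G \<iota>1 \<iota> i (gs (\<phi> n))) i \<tau> h u - Qc G (gs (\<phi> n)) i \<tau> h u =
          (\<Sum>z\<in>{z. gm_act G \<tau> i z = u}. XiZ G (gs (\<phi> n)) \<iota>1 \<iota> i \<tau> k z * (V' n z - V n z))" for n
        unfolding DPm[OF u] DPg[OF u] V_def V'_def by (simp add: sum_subtractf right_diff_distrib)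
      ultimately show ?thesis by simp
    qed
    have "(\<lambda>n. (Qc G (gmod G \<iota>1 \<iota> i (gs (\<phi> n))) i \<tau> h u - Qc G (gs (\<phi> n)) i \<tau> h u) + Qc G (gs (\<phi> n)) i \<tau> h u) \<longlonglongrightarrow> 0 + Q i \<tau> h u"
      by (intro tendsto_add diff Qc_conv[OF t1 r u])
    then show "(\<lambda>n. Qc G (gmod G \<iota>1 \<iota> i (gs (\<phi> n))) i \<tau> h u) \<longlonglongrightarrow> Q i \<tau> h u" by simp
  next
    fix h' u assume w': "wf_hist \<tau> h'" and r': "reach \<tau> i h'" and c: "compress \<iota>1 \<iota> i h' = compress \<iota>1 \<iota> i h"
      and u: "u \<in> gm_U G \<tau> i"
    define h'z where "h'z z = (fst h', snd h' @ [z])" for z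
    have wz': "wf_hist (Suc \<tau>) (h'z z)" for z using w' t unfolding h'z_def wf_hist_def by simp
    have cz: "compress \<iota>1 \<iota> i (h'z z) = compress \<iota>1 \<iota> i (hz z)" for z
    proof -
      have a: "compress \<iota>1 \<iota> i (h'z z) = \<iota> (Suc \<tau>) i (compress \<iota>1 \<iota> i h') z"
        unfolding h'z_def by (rule compress_snoc) (use w' t in \<open>auto simp: wf_hist_def\<close>)
      have b: "compress \<iota>1 \<iota> i (hz z) = \<iota> (Suc \<tau>) i (compress \<iota>1 \<iota> i h) z"
        unfolding hz_def by (rule compress_snoc) (use w t in \<open>auto simp: wf_hist_def\<close>)
      show ?thesis unfolding a b c ..
    qed
    have DPg': "Qc G (gs n) i \<tau> h' u = XiR G (gs n) \<iota>1 \<iota> i \<tau> k u +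
     (\<Sum>z\<in>{z. gm_act G \<tau> i z = u}. XiZ G (gs n) \<iota>1 \<iota> i \<tau> k z * Vf G (gs n) i (Suc \<tau>) (h'z z))" for n
      using DP_step[OF wf vgs pSall[OF vgs] t Pev_pos[OF fm t1 r' u]] c
      unfolding Vf_def h'z_def k_def by simp
    have diff: "(\<lambda>n. Qc G (gs (\<phi> n)) i \<tau> h' u - Qc G (gs (\<phi> n)) i \<tau> h u) \<longlonglongrightarrow> 0"
    proof -
      have "(\<lambda>n. \<Sum>z\<in>{z. gm_act G \<tau> i z = u}. XiZ G (gs (\<phi> n)) \<iota>1 \<iota> i \<tau> k z *
            (Vf G (gs (\<phi> n)) i (Suc \<tau>) (h'z z) - V n z)) \<longlonglongrightarrow> (\<Sum>z\<in>{z. gm_act G \<tau> i z = u}. 0)"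
      proof (intro tendsto_sum)
        fix z assume z: "z \<in> {z. gm_act G \<tau> i z = u}"
        show "(\<lambda>n. XiZ G (gs (\<phi> n)) \<iota>1 \<iota> i \<tau> k z * (Vf G (gs (\<phi> n)) i (Suc \<tau>) (h'z z) - V n z)) \<longlonglongrightarrow> 0"
        proof (cases "reach (Suc \<tau>) i (hz z) \<and> reach (Suc \<tau>) i (h'z z)")
          case True
          have c1: "(\<lambda>n. Vf G (gs (\<phi> n)) i (Suc \<tau>) (h'z z)) \<longlonglongrightarrow> Wf (g i (Suc \<tau>) (h'z z)) (Q i (Suc \<tau>) (h'z z))"
            using True by (intro Vconv_gs[OF t2]) auto
          have c2: "(\<lambda>n. V n z) \<longlonglongrightarrow> Wf (g i (Suc \<tau>) (hz z)) (Q i (Suc \<tau>) (hz z))"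
            unfolding V_def using True by (intro Vconv_gs[OF t2]) auto
          have "(\<lambda>n. Vf G (gs (\<phi> n)) i (Suc \<tau>) (h'z z) - V n z) \<longlonglongrightarrow> 0"
            using tendsto_diff[OF c1 c2] W_same[OF t2 wz _ wz' _ cz IH] True by simp
          then show ?thesis by (rule bounded_mult_null[OF XiZ_bound])
        next
          case False
          have "XiZ G (gs (\<phi> n)) \<iota>1 \<iota> i \<tau> k z = 0" for n
          proof (cases "reach (Suc \<tau>) i (hz z)")
            case True
            then have "\<not> reach (Suc \<tau>) i (h'z z)" using False by blast
            then show ?thesis unfolding k_def c[symmetric]
              by (intro XiZ_zero[OF t r']) (use z u in \<open>auto simp: h'z_def\<close>)
          next
            case False
            then show ?thesis unfolding k_def
              by (intro XiZ_zero[OF t r]) (use z u in \<open>auto simp: hz_def\<close>)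
          qed
          then show ?thesis by simp
        qed
      qed
      moreover have "Qc G (gs (\<phi> n)) i \<tau> h' u - Qc G (gs (\<phi> n)) i \<tau> h u =
          (\<Sum>z\<in>{z. gm_act G \<tau> i z = u}. XiZ G (gs (\<phi> n)) \<iota>1 \<iota> i \<tau> k z * (Vf G (gs (\<phi> n)) i (Suc \<tau>) (h'z z) - V n z))" for n
        unfolding DPg' DPg[OF u] V_def by (simp add: sum_subtractf right_diff_distrib)
      ultimately show ?thesis by simp
    qed
    have "(\<lambda>n. (Qc G (gs (\<phi> n)) i \<tau> h' u - Qc G (gs (\<phi> n)) i \<tau> h u) + Qc G (gs (\<phi> n)) i \<tau> h u) \<longlonglongrightarrow> 0 + Q i \<tau> h u"
      by (intro tendsto_add diff Qc_conv[OF t1 r u])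
    then have "(\<lambda>n. Qc G (gs (\<phi> n)) i \<tau> h' u) \<longlonglongrightarrow> Q i \<tau> h u" by simp
    then show "Q i \<tau> h' u = Q i \<tau> h u" using Qc_conv[OF t1 r' u] LIMSEQ_unique by blast
  qed
qed

lemma CL_all: assumes "\<tau> \<in> {1..gm_T G}" shows "CL \<tau>"
proof -
  have a: "\<tau> \<le> gm_T G" "1 \<le> gm_T G" "1 \<le> \<tau>" using assms by auto
  from a(1) show ?thesis
  proof (induction \<tau> rule: inc_induct)
    case base then show ?case using CL_T a(2) by blast
  next
    case (step m)
    then have "1 \<le> m" using a(3) by simp
    then show ?case using CL_step step by auto
  qed
qed

end

context SEloc begin

lemma consis_g: "consis G g \<iota>1 \<iota> i \<rho>"
  unfolding consis_def
proof (intro ballI allI impI)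
  fix t k a assume t: "t \<in> {1..gm_T G}" and P: "PK G g \<iota>1 \<iota> i t k > 0"
  define R where "R = set_pmf (S G (gs 0) t)"
  have fR: "finite R" unfolding R_def by (rule finite_S)
  have supp: "set_pmf (S G gg t) \<subseteq> R" if "valid_profile G gg" for gg
    unfolding R_def using S_supp_mono[OF fm that] t by auto
  let ?ik = "\<lambda>s::'x \<times> ('i \<Rightarrow> ('h,'z) hist). indicator {h. compress \<iota>1 \<iota> i h = k} (snd s i) :: real"
  have PKs: "PK G gg \<iota>1 \<iota> i t k = (\<Sum>s\<in>R. ?ik s * pmf (S G gg t) s)" if "valid_profile G gg" for gg
    unfolding PK_def prob_as_E
    by (subst integral_measure_pmf_real[OF fR]) (use supp[OF that] in \<open>auto simp: indicator_def intro!: sum.cong\<close>)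
  have EKUs: "EKU G gg \<iota>1 \<iota> i t k a = (\<Sum>s\<in>R. (?ik s * pmf (gg i t (snd s i)) a) * pmf (S G gg t) s)"
    if "valid_profile G gg" for gg
    unfolding EKU_def by (rule integral_measure_pmf_real[OF fR]) (use supp[OF that] in auto)
  have Sc: "(\<lambda>n. pmf (S G (gs n) t) s) \<longlonglongrightarrow> pmf (S G g t) s" for s
    by (rule S_conv[OF fm vg vgs cvg]) (use t in auto)
  have wR: "s \<in> R \<Longrightarrow> wf_hist t (snd s i)" for s using S_support_wf[of s G "gs 0" t i] t unfolding R_def by auto
  have cPK: "(\<lambda>n. PK G (gs n) \<iota>1 \<iota> i t k) \<longlonglongrightarrow> PK G g \<iota>1 \<iota> i t k"
    unfolding PKs[OF vgs] PKs[OF vg] by (intro tendsto_intros Sc)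
  have cEKU: "(\<lambda>n. EKU G (gs n) \<iota>1 \<iota> i t k a) \<longlonglongrightarrow> EKU G g \<iota>1 \<iota> i t k a"
    unfolding EKUs[OF vgs] EKUs[OF vg] by (intro tendsto_intros Sc cvg[OF t wR]) auto
  have Pn: "PK G (gs n) \<iota>1 \<iota> i t k > 0" for n
  proof -
    have "set_pmf (S G g t) \<inter> {s. compress \<iota>1 \<iota> i (snd s i) = k} \<noteq> {}"
      using P unfolding PK_def using measure_pmf_zero_iff[of "S G g t" "{s. compress \<iota>1 \<iota> i (snd s i) = k}"] by fastforce
    then obtain s where s: "s \<in> set_pmf (S G g t)" "compress \<iota>1 \<iota> i (snd s i) = k" by blast
    have "s \<in> set_pmf (S G (gs n) t)" using s(1) S_supp_mono[OF fm vg] t by auto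
    then show ?thesis unfolding PK_def using s(2) by (intro measure_pmf_posI) auto
  qed
  have eq: "pmf (rhoC G \<iota>1 \<iota> i (gs (\<phi> n)) t k) a * PK G (gs (\<phi> n)) \<iota>1 \<iota> i t k = EKU G (gs (\<phi> n)) \<iota>1 \<iota> i t k a" for n
    by (rule rhoC_pmf[OF Pn])
  have l1: "(\<lambda>n. pmf (rhoC G \<iota>1 \<iota> i (gs (\<phi> n)) t k) a * PK G (gs (\<phi> n)) \<iota>1 \<iota> i t k) \<longlonglongrightarrow> pmf (\<rho> t k) a * PK G g \<iota>1 \<iota> i t k"
    using cv\<rho>[OF t] LIMSEQ_subseq_LIMSEQ[OF cPK sm] by (intro tendsto_mult) (auto simp: o_def)
  have l2: "(\<lambda>n. EKU G (gs (\<phi> n)) \<iota>1 \<iota> i t k a) \<longlonglongrightarrow> EKU G g \<iota>1 \<iota> i t k a"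
    using LIMSEQ_subseq_LIMSEQ[OF cEKU sm] by (simp add: o_def)
  show "pmf (\<rho> t k) a * PK G g \<iota>1 \<iota> i t k = EKU G g \<iota>1 \<iota> i t k a"
    using l1 l2 unfolding eq using LIMSEQ_unique by blast
qed

lemma Qmod_lim:
  assumes t: "\<tau> \<in> {1..gm_T G}" and w: "wf_hist \<tau> h" and u: "u \<in> gm_U G \<tau> j"
  shows "(\<lambda>n. Qc G (gmod G \<iota>1 \<iota> i (gs (\<phi> n))) j \<tau> h u) \<longlonglongrightarrow> (if reach \<tau> j h then Q j \<tau> h u else 0)"
proof (cases "reach \<tau> j h")
  case False
  then show ?thesis using Qc_unreach[OF fm_mod t False] by simp
next
  case r: True
  show ?thesis
  proof (cases "j = i")
    case True
    have "(\<lambda>n. Qc G (gmod G \<iota>1 \<iota> i (gs (\<phi> n))) i \<tau> h u) \<longlonglongrightarrow> Q i \<tau> h u"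
      using CL_all[OF t] w r u True unfolding CL_def by blast
    then show ?thesis using r True by simp
  next
    case False
    have "Qc G (gmod G \<iota>1 \<iota> i (gs n)) j \<tau> h u = Qc G (gs n) j \<tau> h u" for n
      unfolding gmod_alt
      by (rule Qc_other[OF wf vgs _ pSall[OF vgs] consis_n False]) (use vmod[of n] t in \<open>auto simp: gmod_alt\<close>)
    then show ?thesis using Qc_conv[OF t r u] r by simp
  qed
qed

end

theorem lemma11:
  fixes G :: "('i::finite, 'x::finite, 'u::finite, 'z::finite, 'w::finite, 'h::finite) game"
    and \<iota>1 :: "'i \<Rightarrow> 'h \<Rightarrow> 'k::finite"
    and \<iota> :: "nat \<Rightarrow> 'i \<Rightarrow> 'k \<Rightarrow> 'z \<Rightarrow> 'k"
    and i :: 'i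
    and g :: "('i,'h,'z,'u) profile"
    and Q :: "'i \<Rightarrow> nat \<Rightarrow> ('h,'z) hist \<Rightarrow> 'u \<Rightarrow> real"
  assumes "wf_game G"
    and "USI G \<iota>1 \<iota> i"
    and "is_SE G g Q"
  shows "\<exists>\<rho> :: nat \<Rightarrow> 'k \<Rightarrow> 'u pmf.
           (\<forall>t\<in>{1..gm_T G}. \<forall>k. set_pmf (\<rho> t k) \<subseteq> gm_U G t i) \<and>
           (\<exists>Q'. is_SE G (g(i := Kbased \<iota>1 \<iota> i \<rho>)) Q') \<and>
           (\<forall>j. J G (g(i := Kbased \<iota>1 \<iota> i \<rho>)) j = J G g j)"
proof -
  note wf = assms(1)
  have sr: "seq_rational G g Q" using assms(3) unfolding is_SE_def by blast
  obtain gs Qs where fmQ: "\<forall>n. fully_mixed G (gs n) \<and> Q_of G (gs n) (Qs n)"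
    and conv: "\<forall>j. \<forall>t\<in>{1..gm_T G}. \<forall>h u. wf_hist t h \<longrightarrow>
           (\<lambda>n. pmf (gs n j t h) u) \<longlonglongrightarrow> pmf (g j t h) u \<and>
           (u \<in> gm_U G t j \<longrightarrow> (\<lambda>n. Qs n j t h u) \<longlonglongrightarrow> Q j t h u)"
    using assms(3) unfolding is_SE_def fully_consistent_def by blast
  have pSall: "prodS G gg \<iota>1 \<iota> i" if "valid_profile G gg" for gg
  proof -
    obtain F \<Phi> where FP: "\<forall>g. valid_profile G g \<longrightarrow> (\<forall>t\<in>{1..gm_T G}. \<forall>k x hs.
     pmf (S G g t) (x,hs) * indicator {h. compress \<iota>1 \<iota> i h = k} (hs i) =
     measure_pmf.prob (S G g t) {s. compress \<iota>1 \<iota> i (snd s i) = k} * pmf (F (g i) t k) (hs i) * pmf (\<Phi> (others i g) t k) (x, others i hs))"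
      using USI_prod[OF assms(2)] by blast
    show ?thesis unfolding prodS_def
      by (intro exI[of _ "\<lambda>t k h. pmf (F (gg i) t k) h"] exI[of _ "\<lambda>t k p. pmf (\<Phi> (others i gg) t k) p"])
         (use FP that in blast)
  qed
  define f where "f n p = pmf (rhoC G \<iota>1 \<iota> i (gs n) (fst p) (fst (snd p))) (snd (snd p))" for n p
  have finI: "finite ({1..gm_T G} \<times> (UNIV :: 'k set) \<times> (UNIV :: 'u set))" by simp
  obtain \<phi> where sm: "strict_mono \<phi>" and c\<phi>: "\<forall>p\<in>{1..gm_T G} \<times> (UNIV :: 'k set) \<times> (UNIV :: 'u set). convergent (\<lambda>n. f (\<phi> n) p)"
    using finite_subseq[OF finI, of f 1] unfolding f_def by (auto simp: pmf_le_1)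
  have ex: "\<exists>q. \<forall>a. (\<lambda>n. pmf (rhoC G \<iota>1 \<iota> i (gs (\<phi> n)) t k) a) \<longlonglongrightarrow> pmf q a" if t: "t \<in> {1..gm_T G}" for t k
  proof (rule limit_pmf)
    fix a
    show "convergent (\<lambda>n. pmf (rhoC G \<iota>1 \<iota> i (gs (\<phi> n)) t k) a)" using c\<phi> t unfolding f_def by auto
  qed
  define \<rho> where "\<rho> t k = (if t \<in> {1..gm_T G} then (SOME q. \<forall>a. (\<lambda>n. pmf (rhoC G \<iota>1 \<iota> i (gs (\<phi> n)) t k) a) \<longlonglongrightarrow> pmf q a)
     else return_pmf undefined)" for t k
  have cv\<rho>: "(\<lambda>n. pmf (rhoC G \<iota>1 \<iota> i (gs (\<phi> n)) t k) a) \<longlonglongrightarrow> pmf (\<rho> t k) a" if t: "t \<in> {1..gm_T G}" for t k a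
    using someI_ex[OF ex[OF t, of k]] t unfolding \<rho>_def by auto
  interpret SE: SEloc G \<iota>1 \<iota> i g Q gs Qs \<phi> \<rho>
  proof
    show "wf_game G" by (rule wf)
    show "\<And>gg. valid_profile G gg \<Longrightarrow> prodS G gg \<iota>1 \<iota> i" by (rule pSall)
    show "\<And>n. fully_mixed G (gs n)" using fmQ by blast
    show "\<And>n. Q_of G (gs n) (Qs n)" using fmQ by blast
    show "\<And>j t h u. t \<in> {1..gm_T G} \<Longrightarrow> wf_hist t h \<Longrightarrow> (\<lambda>n. pmf (gs n j t h) u) \<longlonglongrightarrow> pmf (g j t h) u"
      using conv by blast
    show "\<And>j t h u. t \<in> {1..gm_T G} \<Longrightarrow> wf_hist t h \<Longrightarrow> u \<in> gm_U G t j \<Longrightarrow> (\<lambda>n. Qs n j t h u) \<longlonglongrightarrow> Q j t h u"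
      using conv by blast
    show "seq_rational G g Q" by (rule sr)
    show "strict_mono \<phi>" by (rule sm)
    show "\<And>t k a. t \<in> {1..gm_T G} \<Longrightarrow> (\<lambda>n. pmf (rhoC G \<iota>1 \<iota> i (gs (\<phi> n)) t k) a) \<longlonglongrightarrow> pmf (\<rho> t k) a"
      by (rule cv\<rho>)
  qed
  define Q' where "Q' j \<tau> h u = lim (\<lambda>n. Qc G (gmod G \<iota>1 \<iota> i (gs (\<phi> n))) j \<tau> h u)" for j \<tau> h u
  have Q'_lim: "(\<lambda>n. Qc G (gmod G \<iota>1 \<iota> i (gs (\<phi> n))) j \<tau> h u) \<longlonglongrightarrow> Q' j \<tau> h u"
    and Q'_eq: "Q' j \<tau> h u = (if SE.reach \<tau> j h then Q j \<tau> h u else 0)"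
    if t: "\<tau> \<in> {1..gm_T G}" and w: "wf_hist \<tau> h" and u: "u \<in> gm_U G \<tau> j" for j \<tau> h u
  proof -
    note L = SE.Qmod_lim[OF t w u]
    show "Q' j \<tau> h u = (if SE.reach \<tau> j h then Q j \<tau> h u else 0)" unfolding Q'_def using L by (rule limI)
    then show "(\<lambda>n. Qc G (gmod G \<iota>1 \<iota> i (gs (\<phi> n))) j \<tau> h u) \<longlonglongrightarrow> Q' j \<tau> h u" using L by simp
  qed
  have supp\<rho>: "\<forall>t\<in>{1..gm_T G}. \<forall>k. set_pmf (\<rho> t k) \<subseteq> gm_U G t i"
  proof (intro ballI allI subsetI)
    fix t k u assume t: "t \<in> {1..gm_T G}" and u: "u \<in> set_pmf (\<rho> t k)"
    show "u \<in> gm_U G t i"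
    proof (rule ccontr)
      assume "u \<notin> gm_U G t i"
      then have "pmf (\<rho> t k) u = 0" by (rule SE.pmf_rho_outside[OF t])
      then show False using u by (simp add: set_pmf_iff)
    qed
  qed
  let ?g' = "g(i := Kbased \<iota>1 \<iota> i \<rho>)"
  have SE': "is_SE G ?g' Q'"
    unfolding is_SE_def
  proof
    show "seq_rational G ?g' Q'"
      unfolding seq_rational_def
    proof (intro allI ballI impI)
      fix j t and h :: "('h,'z) hist" assume t: "t \<in> {1..gm_T G}" and w: "wf_hist t h"
      show "set_pmf (?g' j t h) \<subseteq> {u \<in> gm_U G t j. \<forall>u'\<in>gm_U G t j. Q' j t h u' \<le> Q' j t h u}"
      proof (cases "SE.reach t j h")
        case r: True
        have eq: "{u \<in> gm_U G t j. \<forall>u'\<in>gm_U G t j. Q' j t h u' \<le> Q' j t h u} =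
                  {u \<in> gm_U G t j. \<forall>u'\<in>gm_U G t j. Q j t h u' \<le> Q j t h u}"
          using Q'_eq[OF t w] r by auto
        show ?thesis
        proof (cases "j = i")
          case True
          have same: "\<And>h' u. wf_hist t h' \<Longrightarrow> SE.reach t i h' \<Longrightarrow> compress \<iota>1 \<iota> i h' = compress \<iota>1 \<iota> i h \<Longrightarrow> u \<in> gm_U G t i \<Longrightarrow> Q i t h' u = Q i t h u"
            using SE.CL_all[OF t] w r True unfolding SE.CL_def by blast
          have "set_pmf (\<rho> t (compress \<iota>1 \<iota> i h)) \<subseteq> {u \<in> gm_U G t i. \<forall>u'\<in>gm_U G t i. Q i t h u' \<le> Q i t h u}"
            using SE.rho_set[OF t _ same] r True by blast
          then show ?thesis unfolding eq using True by (simp add: Kbased_def)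
        next
          case False
          have "set_pmf (g j t h) \<subseteq> {u \<in> gm_U G t j. \<forall>u'\<in>gm_U G t j. Q j t h u' \<le> Q j t h u}"
            using sr t w unfolding seq_rational_def by blast
          then show ?thesis unfolding eq using False by simp
        qed
      next
        case nr: False
        have eq: "{u \<in> gm_U G t j. \<forall>u'\<in>gm_U G t j. Q' j t h u' \<le> Q' j t h u} = gm_U G t j"
          using Q'_eq[OF t w] nr by auto
        show ?thesis
        proof (cases "j = i")
          case True
          then show ?thesis unfolding eq using supp\<rho> t by (simp add: Kbased_def)
        next
          case False
          have "set_pmf (g j t h) \<subseteq> gm_U G t j" using SE.vg t w unfolding valid_profile_def by blast
          then show ?thesis unfolding eq using False by simp
        qed
      qed
    qed
    show "fully_consistent G ?g' Q'"
      unfolding fully_consistent_def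
    proof (intro exI[of _ "\<lambda>n. gmod G \<iota>1 \<iota> i (gs (\<phi> n))"] exI[of _ "\<lambda>n. Qc G (gmod G \<iota>1 \<iota> i (gs (\<phi> n)))"] conjI allI ballI impI)
      fix n
      show "fully_mixed G (gmod G \<iota>1 \<iota> i (gs (\<phi> n)))" by (rule SE.fm_mod)
      show "Q_of G (gmod G \<iota>1 \<iota> i (gs (\<phi> n))) (Qc G (gmod G \<iota>1 \<iota> i (gs (\<phi> n))))"
        unfolding Q_of_def Qc_def by blast
    next
      fix j t u and h :: "('h,'z) hist" assume t: "t \<in> {1..gm_T G}" and w: "wf_hist t h"
      show "(\<lambda>n. pmf (gmod G \<iota>1 \<iota> i (gs (\<phi> n)) j t h) u) \<longlonglongrightarrow> pmf (?g' j t h) u"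
      proof (cases "j = i")
        case True
        then show ?thesis using cv\<rho>[OF t] by (simp add: gmod_def Kbased_def)
      next
        case False
        then show ?thesis using LIMSEQ_subseq_LIMSEQ[OF SE.cvg[OF t w] sm] by (simp add: gmod_def o_def)
      qed
    next
      fix j t u and h :: "('h,'z) hist" assume t: "t \<in> {1..gm_T G}" and w: "wf_hist t h" and u: "u \<in> gm_U G t j"
      show "(\<lambda>n. Qc G (gmod G \<iota>1 \<iota> i (gs (\<phi> n))) j t h u) \<longlonglongrightarrow> Q' j t h u" by (rule Q'_lim[OF t w u])
    qed
  qed
  have J: "\<forall>j. J G ?g' j = J G g j"
    using J_eq[OF pSall[OF SE.vg] SE.consis_g] by blast
  show ?thesis using supp\<rho> SE' J by blast
qed

end
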